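(* Let $K$ be a field, $p\colon A\to B$ a morphism of cocommutative Hopf algebras over $K$, and $i\colon C\to B$ the inclusion of a Hopf subalgebra $C$ of $B$. Let $p^{-1}(C)=\{x\in A \mid (p\otimes \mathrm{id}_A)\Delta(x)-1\otimes x\in C^+\otimes A\}$, let $j\colon p^{-1}(C)\to A$ be the inclusion and $\hat p\colon p^{-1}(C)\to C$ the restriction of $p$. Then $p(p^{-1}(C))\subseteq C$ (so $\hat p$ is well defined) and the square with $i\circ \hat p = p\circ j$ is a pullback in the category $\mathsf{Hopf}_{K,coc}$ of cocommutative Hopf algebras over $K$.
   Context: For a coalgebra $C$ with counit $\epsilon$, $C^+=\{x\in C\mid \epsilon(x)=0\}$. $p^{-1}(C)$ is a Hopf subalgebra of $A$ (the h-inverse of $C$ along $p$). Morphisms in $\mathsf{Hopf}_{K,coc}$ are linear maps that are algebra and coalgebra morphisms. *)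

theory Defs
  imports Main
begin

text \<open>An element of a tensor product V \<otimes> W is represented by a finite list of pairs
  (a sum of pure tensors); two such lists denote the same tensor iff every
  K-valued bilinear form gives the same value on them (over a field this is
  exactly equality in V \<otimes> W, by the universal property with target K).\<close>

record ('k,'a) hopf_alg =
  hcarrier :: "'a set"
  hadd :: "'a \<Rightarrow> 'a \<Rightarrow> 'a"
  hzero :: "'a"
  hscale :: "'k \<Rightarrow> 'a \<Rightarrow> 'a"
  hmult :: "'a \<Rightarrow> 'a \<Rightarrow> 'a"
  hone :: "'a"
  hcomult :: "'a \<Rightarrow> ('a \<times> 'a) list"
  hcounit :: "'a \<Rightarrow> 'k"
  hantipode :: "'a \<Rightarrow> 'a"

definition vspace :: "('k::field,'a) hopf_alg \<Rightarrow> bool" where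
  "vspace V \<longleftrightarrow>
     hzero V \<in> hcarrier V \<and>
     (\<forall>x\<in>hcarrier V. \<forall>y\<in>hcarrier V. hadd V x y \<in> hcarrier V) \<and>
     (\<forall>c. \<forall>x\<in>hcarrier V. hscale V c x \<in> hcarrier V) \<and>
     (\<forall>x\<in>hcarrier V. \<forall>y\<in>hcarrier V. \<forall>z\<in>hcarrier V.
        hadd V (hadd V x y) z = hadd V x (hadd V y z)) \<and>
     (\<forall>x\<in>hcarrier V. \<forall>y\<in>hcarrier V. hadd V x y = hadd V y x) \<and>
     (\<forall>x\<in>hcarrier V. hadd V (hzero V) x = x) \<and>
     (\<forall>x\<in>hcarrier V. \<exists>y\<in>hcarrier V. hadd V x y = hzero V) \<and>
     (\<forall>c. \<forall>x\<in>hcarrier V. \<forall>y\<in>hcarrier V.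
        hscale V c (hadd V x y) = hadd V (hscale V c x) (hscale V c y)) \<and>
     (\<forall>c d. \<forall>x\<in>hcarrier V. hscale V (c + d) x = hadd V (hscale V c x) (hscale V d x)) \<and>
     (\<forall>c d. \<forall>x\<in>hcarrier V. hscale V (c * d) x = hscale V c (hscale V d x)) \<and>
     (\<forall>x\<in>hcarrier V. hscale V 1 x = x)"

definition vsum :: "('k,'a) hopf_alg \<Rightarrow> 'a list \<Rightarrow> 'a" where
  "vsum V xs = foldr (hadd V) xs (hzero V)"

definition linear_map :: "('k::field,'a) hopf_alg \<Rightarrow> ('k,'b) hopf_alg \<Rightarrow> ('a \<Rightarrow> 'b) \<Rightarrow> bool" where
  "linear_map V W f \<longleftrightarrow> f ` hcarrier V \<subseteq> hcarrier W \<and>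
     (\<forall>x\<in>hcarrier V. \<forall>y\<in>hcarrier V. f (hadd V x y) = hadd W (f x) (f y)) \<and>
     (\<forall>c. \<forall>x\<in>hcarrier V. f (hscale V c x) = hscale W c (f x))"

definition bilinear_form :: "('k::field,'a) hopf_alg \<Rightarrow> ('k,'b) hopf_alg \<Rightarrow> ('a \<Rightarrow> 'b \<Rightarrow> 'k) \<Rightarrow> bool" where
  "bilinear_form V W \<beta> \<longleftrightarrow>
     (\<forall>x\<in>hcarrier V. \<forall>x'\<in>hcarrier V. \<forall>y\<in>hcarrier W. \<beta> (hadd V x x') y = \<beta> x y + \<beta> x' y) \<and>
     (\<forall>c. \<forall>x\<in>hcarrier V. \<forall>y\<in>hcarrier W. \<beta> (hscale V c x) y = c * \<beta> x y) \<and>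
     (\<forall>x\<in>hcarrier V. \<forall>y\<in>hcarrier W. \<forall>y'\<in>hcarrier W. \<beta> x (hadd W y y') = \<beta> x y + \<beta> x y') \<and>
     (\<forall>c. \<forall>x\<in>hcarrier V. \<forall>y\<in>hcarrier W. \<beta> x (hscale W c y) = c * \<beta> x y)"

definition trilinear_form :: "('k::field,'a) hopf_alg \<Rightarrow> ('a \<Rightarrow> 'a \<Rightarrow> 'a \<Rightarrow> 'k) \<Rightarrow> bool" where
  "trilinear_form V \<tau> \<longleftrightarrow>
     (\<forall>x\<in>hcarrier V. \<forall>y\<in>hcarrier V. bilinear_form V V (\<lambda>a b. \<tau> a b x)
        \<and> bilinear_form V V (\<lambda>a b. \<tau> a y b) \<and> bilinear_form V V (\<lambda>a b. \<tau> x a b))"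

definition tensor_eq :: "('k::field,'a) hopf_alg \<Rightarrow> ('k,'b) hopf_alg \<Rightarrow>
    ('a \<times> 'b) list \<Rightarrow> ('a \<times> 'b) list \<Rightarrow> bool" where
  "tensor_eq V W xs ys \<longleftrightarrow>
     set xs \<subseteq> hcarrier V \<times> hcarrier W \<and> set ys \<subseteq> hcarrier V \<times> hcarrier W \<and>
     (\<forall>\<beta>. bilinear_form V W \<beta> \<longrightarrow>
        sum_list (map (\<lambda>(a,b). \<beta> a b) xs) = sum_list (map (\<lambda>(a,b). \<beta> a b) ys))"

definition tensor3_eq :: "('k::field,'a) hopf_alg \<Rightarrow>
    ('a \<times> 'a \<times> 'a) list \<Rightarrow> ('a \<times> 'a \<times> 'a) list \<Rightarrow> bool" where
  "tensor3_eq V xs ys \<longleftrightarrow>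
     set xs \<subseteq> hcarrier V \<times> hcarrier V \<times> hcarrier V \<and>
     set ys \<subseteq> hcarrier V \<times> hcarrier V \<times> hcarrier V \<and>
     (\<forall>\<tau>. trilinear_form V \<tau> \<longrightarrow>
        sum_list (map (\<lambda>(a,b,c). \<tau> a b c) xs) = sum_list (map (\<lambda>(a,b,c). \<tau> a b c) ys))"

definition k_algebra :: "('k::field,'a) hopf_alg \<Rightarrow> bool" where
  "k_algebra H \<longleftrightarrow> vspace H \<and>
     hone H \<in> hcarrier H \<and>
     (\<forall>x\<in>hcarrier H. \<forall>y\<in>hcarrier H. hmult H x y \<in> hcarrier H) \<and>
     (\<forall>x\<in>hcarrier H. \<forall>y\<in>hcarrier H. \<forall>z\<in>hcarrier H.
        hmult H (hmult H x y) z = hmult H x (hmult H y z)) \<and>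
     (\<forall>x\<in>hcarrier H. hmult H (hone H) x = x \<and> hmult H x (hone H) = x) \<and>
     (\<forall>x\<in>hcarrier H. \<forall>y\<in>hcarrier H. \<forall>z\<in>hcarrier H.
        hmult H (hadd H x y) z = hadd H (hmult H x z) (hmult H y z) \<and>
        hmult H z (hadd H x y) = hadd H (hmult H z x) (hmult H z y)) \<and>
     (\<forall>c. \<forall>x\<in>hcarrier H. \<forall>y\<in>hcarrier H.
        hmult H (hscale H c x) y = hscale H c (hmult H x y) \<and>
        hmult H x (hscale H c y) = hscale H c (hmult H x y))"

definition k_coalgebra :: "('k::field,'a) hopf_alg \<Rightarrow> bool" where
  "k_coalgebra H \<longleftrightarrow> vspace H \<and>
     (\<forall>x\<in>hcarrier H. set (hcomult H x) \<subseteq> hcarrier H \<times> hcarrier H) \<and>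
     (\<forall>x\<in>hcarrier H. \<forall>y\<in>hcarrier H.
        tensor_eq H H (hcomult H (hadd H x y)) (hcomult H x @ hcomult H y)) \<and>
     (\<forall>c. \<forall>x\<in>hcarrier H. tensor_eq H H (hcomult H (hscale H c x))
        (map (\<lambda>(u,v). (hscale H c u, v)) (hcomult H x))) \<and>
     (\<forall>x\<in>hcarrier H. \<forall>y\<in>hcarrier H. hcounit H (hadd H x y) = hcounit H x + hcounit H y) \<and>
     (\<forall>c. \<forall>x\<in>hcarrier H. hcounit H (hscale H c x) = c * hcounit H x) \<and>
     (\<forall>x\<in>hcarrier H. tensor3_eq H
        (concat (map (\<lambda>(u,v). map (\<lambda>(u1,u2). (u1,u2,v)) (hcomult H u)) (hcomult H x)))
        (concat (map (\<lambda>(u,v). map (\<lambda>(v1,v2). (u,v1,v2)) (hcomult H v)) (hcomult H x)))) \<and>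
     (\<forall>x\<in>hcarrier H.
        vsum H (map (\<lambda>(u,v). hscale H (hcounit H u) v) (hcomult H x)) = x \<and>
        vsum H (map (\<lambda>(u,v). hscale H (hcounit H v) u) (hcomult H x)) = x)"

definition hopf :: "('k::field,'a) hopf_alg \<Rightarrow> bool" where
  "hopf H \<longleftrightarrow> k_algebra H \<and> k_coalgebra H \<and>
     (\<forall>x\<in>hcarrier H. \<forall>y\<in>hcarrier H. tensor_eq H H (hcomult H (hmult H x y))
        (concat (map (\<lambda>(u,v). map (\<lambda>(u',v'). (hmult H u u', hmult H v v')) (hcomult H y))
                   (hcomult H x)))) \<and>
     tensor_eq H H (hcomult H (hone H)) [(hone H, hone H)] \<and>
     (\<forall>x\<in>hcarrier H. \<forall>y\<in>hcarrier H. hcounit H (hmult H x y) = hcounit H x * hcounit H y) \<and>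
     hcounit H (hone H) = 1 \<and>
     linear_map H H (hantipode H) \<and>
     (\<forall>x\<in>hcarrier H.
        vsum H (map (\<lambda>(u,v). hmult H (hantipode H u) v) (hcomult H x))
          = hscale H (hcounit H x) (hone H) \<and>
        vsum H (map (\<lambda>(u,v). hmult H u (hantipode H v)) (hcomult H x))
          = hscale H (hcounit H x) (hone H))"

definition cocomm_hopf :: "('k::field,'a) hopf_alg \<Rightarrow> bool" where
  "cocomm_hopf H \<longleftrightarrow> hopf H \<and>
     (\<forall>x\<in>hcarrier H. tensor_eq H H (hcomult H x) (map (\<lambda>(u,v). (v,u)) (hcomult H x)))"

definition hopf_hom :: "('k::field,'a) hopf_alg \<Rightarrow> ('k,'b) hopf_alg \<Rightarrow> ('a \<Rightarrow> 'b) \<Rightarrow> bool" where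
  "hopf_hom H H' f \<longleftrightarrow> linear_map H H' f \<and>
     (\<forall>x\<in>hcarrier H. \<forall>y\<in>hcarrier H. f (hmult H x y) = hmult H' (f x) (f y)) \<and>
     f (hone H) = hone H' \<and>
     (\<forall>x\<in>hcarrier H. tensor_eq H' H' (hcomult H' (f x))
        (map (\<lambda>(u,v). (f u, f v)) (hcomult H x))) \<and>
     (\<forall>x\<in>hcarrier H. hcounit H' (f x) = hcounit H x)"

definition hopf_subalg :: "('k::field,'a) hopf_alg \<Rightarrow> 'a set \<Rightarrow> bool" where
  "hopf_subalg H S \<longleftrightarrow> S \<subseteq> hcarrier H \<and> hzero H \<in> S \<and>
     (\<forall>x\<in>S. \<forall>y\<in>S. hadd H x y \<in> S) \<and> (\<forall>c. \<forall>x\<in>S. hscale H c x \<in> S) \<and>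
     hone H \<in> S \<and> (\<forall>x\<in>S. \<forall>y\<in>S. hmult H x y \<in> S) \<and>
     (\<forall>x\<in>S. hantipode H x \<in> S) \<and>
     (\<forall>x\<in>S. \<exists>l. set l \<subseteq> S \<times> S \<and> tensor_eq H H (hcomult H x) l)"

definition sub_hopf :: "('k::field,'a) hopf_alg \<Rightarrow> 'a set \<Rightarrow> ('k,'a) hopf_alg" where
  "sub_hopf H S = H\<lparr>hcarrier := S,
     hcomult := (\<lambda>x. SOME l. set l \<subseteq> S \<times> S \<and> tensor_eq H H (hcomult H x) l)\<rparr>"

definition hplus :: "('k::field,'a) hopf_alg \<Rightarrow> 'a set \<Rightarrow> 'a set" where
  "hplus H S = {x \<in> S. hcounit H x = 0}"

definition h_inverse :: "('k::field,'a) hopf_alg \<Rightarrow> ('k,'b) hopf_alg \<Rightarrow> ('a \<Rightarrow> 'b) \<Rightarrow> 'b set \<Rightarrow> 'a set" where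
  "h_inverse A B p C = {x \<in> hcarrier A. \<exists>l. set l \<subseteq> hplus B C \<times> hcarrier A \<and>
     tensor_eq B A (map (\<lambda>(u,v). (p u, v)) (hcomult A x) @ [(hscale B (-1) (hone B), x)]) l}"

end

theory Submission
  imports Defs
begin

definition lin_fun :: "('k::field,'a) hopf_alg \<Rightarrow> ('a \<Rightarrow> 'k) \<Rightarrow> bool" where
 "lin_fun V \<phi> \<longleftrightarrow> (\<forall>x\<in>hcarrier V. \<forall>y\<in>hcarrier V. \<phi> (hadd V x y) = \<phi> x + \<phi> y) \<and>
    (\<forall>c. \<forall>x\<in>hcarrier V. \<phi> (hscale V c x) = c * \<phi> x)"

definition subsp :: "('k::field,'a) hopf_alg \<Rightarrow> 'a set \<Rightarrow> bool" where
 "subsp V W \<longleftrightarrow> W \<subseteq> hcarrier V \<and> hzero V \<in> W \<and> (\<forall>x\<in>W. \<forall>y\<in>W. hadd V x y \<in> W)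
    \<and> (\<forall>c. \<forall>x\<in>W. hscale V c x \<in> W)"

locale vs = fixes V :: "('k::field,'a) hopf_alg" assumes vs: "vspace V"
begin

lemma zero_closed[simp]: "hzero V \<in> hcarrier V"
  using vs unfolding vspace_def apply (elim conjE) by metis
lemma add_closed[simp]: "x \<in> hcarrier V \<Longrightarrow> y \<in> hcarrier V \<Longrightarrow> hadd V x y \<in> hcarrier V"
  using vs unfolding vspace_def apply (elim conjE) by metis
lemma scale_closed[simp]: "x \<in> hcarrier V \<Longrightarrow> hscale V c x \<in> hcarrier V"
  using vs unfolding vspace_def apply (elim conjE) by metis
lemma add_assoc: "x \<in> hcarrier V \<Longrightarrow> y \<in> hcarrier V \<Longrightarrow> z \<in> hcarrier V \<Longrightarrow>
   hadd V (hadd V x y) z = hadd V x (hadd V y z)"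
  using vs unfolding vspace_def apply (elim conjE) by metis
lemma add_comm: "x \<in> hcarrier V \<Longrightarrow> y \<in> hcarrier V \<Longrightarrow> hadd V x y = hadd V y x"
  using vs unfolding vspace_def apply (elim conjE) by metis
lemma add_lcomm: "x \<in> hcarrier V \<Longrightarrow> y \<in> hcarrier V \<Longrightarrow> z \<in> hcarrier V \<Longrightarrow>
   hadd V x (hadd V y z) = hadd V y (hadd V x z)"
  by (metis add_assoc add_comm)
lemmas add_ac = add_assoc add_comm add_lcomm
lemma zero_add[simp]: "x \<in> hcarrier V \<Longrightarrow> hadd V (hzero V) x = x"
  using vs unfolding vspace_def apply (elim conjE) by metis
lemma add_zero[simp]: "x \<in> hcarrier V \<Longrightarrow> hadd V x (hzero V) = x"
  using zero_add add_comm zero_closed by metis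
lemma neg_ex: "x \<in> hcarrier V \<Longrightarrow> \<exists>y\<in>hcarrier V. hadd V x y = hzero V"
  using vs unfolding vspace_def apply (elim conjE) by metis
lemma scale_add_r: "x \<in> hcarrier V \<Longrightarrow> y \<in> hcarrier V \<Longrightarrow>
   hscale V c (hadd V x y) = hadd V (hscale V c x) (hscale V c y)"
  using vs unfolding vspace_def apply (elim conjE) by metis
lemma scale_add_l: "x \<in> hcarrier V \<Longrightarrow> hscale V (c + d) x = hadd V (hscale V c x) (hscale V d x)"
  using vs unfolding vspace_def apply (elim conjE) by metis
lemma scale_scale[simp]: "x \<in> hcarrier V \<Longrightarrow> hscale V c (hscale V d x) = hscale V (c * d) x"
  using vs unfolding vspace_def apply (elim conjE) by metis
lemma scale_one[simp]: "x \<in> hcarrier V \<Longrightarrow> hscale V 1 x = x"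
  using vs unfolding vspace_def apply (elim conjE) by metis

lemma add_cancel_left:
  assumes "a \<in> hcarrier V" "x \<in> hcarrier V" "y \<in> hcarrier V" "hadd V a x = hadd V a y"
  shows "x = y"
proof -
  obtain b where b: "b \<in> hcarrier V" "hadd V a b = hzero V" using neg_ex assms(1) by blast
  have "x = hadd V (hadd V b a) x" using b assms by (simp add: add_comm)
  also have "\<dots> = hadd V (hadd V b a) y" using b assms by (simp add: add_assoc)
  also have "\<dots> = y" using b assms by (simp add: add_comm)
  finally show ?thesis .
qed

lemma scale_zero_l[simp]: assumes "x \<in> hcarrier V" shows "hscale V 0 x = hzero V"
proof -
  have "hadd V (hscale V 0 x) (hscale V 0 x) = hadd V (hscale V 0 x) (hzero V)"
    using scale_add_l[OF assms, of 0 0] assms by simp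
  from add_cancel_left[OF _ _ _ this] assms show ?thesis by simp
qed

lemma scale_zero_r[simp]: "hscale V c (hzero V) = hzero V"
proof -
  have "hadd V (hscale V c (hzero V)) (hscale V c (hzero V)) = hadd V (hscale V c (hzero V)) (hzero V)"
    using scale_add_r[of "hzero V" "hzero V" c] by simp
  from add_cancel_left[OF _ _ _ this] show ?thesis by simp
qed

lemma neg_r[simp]: assumes "x \<in> hcarrier V" shows "hadd V x (hscale V (-1) x) = hzero V"
proof -
  have "hadd V x (hscale V (-1) x) = hadd V (hscale V 1 x) (hscale V (-1) x)" using assms by simp
  also have "\<dots> = hscale V 0 x" using scale_add_l[OF assms, of 1 "-1"] assms by simp
  finally show ?thesis using assms by simp
qed

lemma neg_l[simp]: "x \<in> hcarrier V \<Longrightarrow> hadd V (hscale V (-1) x) x = hzero V"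
  using neg_r add_comm by (metis scale_closed)

lemma diff_zero_eq: assumes "a \<in> hcarrier V" "c \<in> hcarrier V" "hadd V a (hscale V (-1) c) = hzero V"
  shows "a = c"
proof -
  have "a = hadd V a (hadd V (hscale V (-1) c) c)" using assms(1,2) by simp
  also have "\<dots> = hadd V (hadd V a (hscale V (-1) c)) c" using assms(1,2) by (simp del: neg_l neg_r add: add_assoc)
  also have "\<dots> = c" using assms by simp
  finally show ?thesis .
qed

lemma eq_swap_diff:
  assumes "a \<in> hcarrier V" "b \<in> hcarrier V" "c \<in> hcarrier V" "e \<in> hcarrier V"
    "hadd V a b = hadd V c e"
  shows "hadd V a (hscale V (-1) c) = hadd V e (hscale V (-1) b)"
proof -
  have "hadd V (hadd V b c) (hadd V a (hscale V (-1) c)) = hadd V (hadd V a b) (hadd V c (hscale V (-1) c))"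
    using assms(1-4) by (simp del: neg_l neg_r add: add_ac)
  then have "hadd V (hadd V b c) (hadd V a (hscale V (-1) c)) = hadd V a b" using assms by simp
  moreover have "hadd V (hadd V b c) (hadd V e (hscale V (-1) b)) = hadd V c e"
  proof -
    have "hadd V (hadd V b c) (hadd V e (hscale V (-1) b)) = hadd V (hadd V c e) (hadd V b (hscale V (-1) b))"
      using assms(1-4) by (simp del: neg_l neg_r add: add_ac)
    then show ?thesis using assms by simp
  qed
  ultimately show ?thesis using assms add_cancel_left[of "hadd V b c"] by simp
qed

lemma lin_funD:
  assumes "lin_fun V \<phi>"
  shows "x \<in> hcarrier V \<Longrightarrow> y \<in> hcarrier V \<Longrightarrow> \<phi> (hadd V x y) = \<phi> x + \<phi> y"
    and "x \<in> hcarrier V \<Longrightarrow> \<phi> (hscale V c x) = c * \<phi> x"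
  using assms unfolding lin_fun_def by auto

lemma lin_fun_zero: assumes "lin_fun V \<phi>" shows "\<phi> (hzero V) = 0"
  using lin_funD(2)[OF assms zero_closed, of 0] by simp

lemma vsum_Nil[simp]: "vsum V [] = hzero V" by (simp add: vsum_def)
lemma vsum_Cons[simp]: "vsum V (x # xs) = hadd V x (vsum V xs)" by (simp add: vsum_def)
lemma vsum_closed[simp]: "set xs \<subseteq> hcarrier V \<Longrightarrow> vsum V xs \<in> hcarrier V"
  by (induction xs) auto
lemma vsum_append: "set xs \<subseteq> hcarrier V \<Longrightarrow> set ys \<subseteq> hcarrier V \<Longrightarrow>
   vsum V (xs @ ys) = hadd V (vsum V xs) (vsum V ys)"
  by (induction xs) (auto simp: add_assoc)
lemma lin_vsum: "lin_fun V \<phi> \<Longrightarrow> set xs \<subseteq> hcarrier V \<Longrightarrow> \<phi> (vsum V xs) = sum_list (map \<phi> xs)"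
  by (induction xs) (auto simp: lin_fun_zero lin_funD)


lemma subspD:
  assumes "subsp V W"
  shows "W \<subseteq> hcarrier V" "hzero V \<in> W" "x \<in> W \<Longrightarrow> y \<in> W \<Longrightarrow> hadd V x y \<in> W"
    "x \<in> W \<Longrightarrow> hscale V c x \<in> W"
  using assms unfolding subsp_def by auto

lemma subsp_car: "subsp V W \<Longrightarrow> x \<in> W \<Longrightarrow> x \<in> hcarrier V"
  using subspD(1) by blast

lemma add_sc_comb:
  assumes "t \<in> hcarrier V" "t' \<in> hcarrier V" "v \<in> hcarrier V"
  shows "hadd V (hadd V t (hscale V c v)) (hadd V t' (hscale V c' v)) = hadd V (hadd V t t') (hscale V (c+c') v)"
proof -
  have "hadd V (hadd V t (hscale V c v)) (hadd V t' (hscale V c' v)) = hadd V (hadd V t t') (hadd V (hscale V c v) (hscale V c' v))"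
    using assms by (simp del: neg_l neg_r add: add_ac)
  then show ?thesis using assms by (simp add: scale_add_l)
qed

lemma complement:
  assumes W: "subsp V W"
  shows "\<exists>T. subsp V T \<and> T \<inter> W \<subseteq> {hzero V} \<and> (\<forall>v\<in>hcarrier V. \<exists>w\<in>W. \<exists>t\<in>T. v = hadd V w t)"
proof -
  define AA where "AA = {T. subsp V T \<and> T \<inter> W \<subseteq> {hzero V}}"
  have "\<exists>M\<in>AA. \<forall>X\<in>AA. M \<subseteq> X \<longrightarrow> X = M"
  proof (rule Zorn_Lemma2, intro ballI)
    fix Ch assume Ch: "Ch \<in> chains AA"
    show "\<exists>U\<in>AA. \<forall>X\<in>Ch. X \<subseteq> U"
    proof (cases "Ch = {}")
      case True
      have "{hzero V} \<in> AA" unfolding AA_def subsp_def by auto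
      then show ?thesis using True by blast
    next
      case False
      have sub: "\<forall>X\<in>Ch. subsp V X \<and> X \<inter> W \<subseteq> {hzero V}" using Ch unfolding chains_def AA_def by auto
      have ch: "\<forall>X\<in>Ch. \<forall>Y\<in>Ch. X \<subseteq> Y \<or> Y \<subseteq> X" using Ch unfolding chains_def chain_subset_def by blast
      have s1: "\<Union>Ch \<subseteq> hcarrier V" using sub subsp_car by auto
      obtain X0 where "X0 \<in> Ch" using False by blast
      then have "hzero V \<in> X0" using sub subspD(2) by blast
      then have s2: "hzero V \<in> \<Union>Ch" using \<open>X0 \<in> Ch\<close> by blast
      have s3: "\<forall>x\<in>\<Union>Ch. \<forall>y\<in>\<Union>Ch. hadd V x y \<in> \<Union>Ch"
      proof (intro ballI)
        fix x y assume "x \<in> \<Union>Ch" "y \<in> \<Union>Ch"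
        then obtain X Y where XY: "X\<in>Ch" "Y\<in>Ch" "x\<in>X" "y\<in>Y" by blast
        show "hadd V x y \<in> \<Union>Ch"
        proof (cases "X \<subseteq> Y")
          case True
          then have "hadd V x y \<in> Y" using XY sub subspD(3) by blast
          then show ?thesis using XY by blast
        next
          case False
          then have "Y \<subseteq> X" using ch XY by blast
          then have "hadd V x y \<in> X" using XY sub subspD(3) by blast
          then show ?thesis using XY by blast
        qed
      qed
      have s4: "\<forall>c. \<forall>x\<in>\<Union>Ch. hscale V c x \<in> \<Union>Ch"
      proof (intro allI ballI)
        fix c x assume "x \<in> \<Union>Ch"
        then obtain X where "X \<in> Ch" "x \<in> X" by blast
        then have "hscale V c x \<in> X" using sub subspD(4) by blast
        then show "hscale V c x \<in> \<Union>Ch" using \<open>X \<in> Ch\<close> by blast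
      qed
      have "subsp V (\<Union>Ch)" unfolding subsp_def using s1 s2 s3 s4 by simp
      moreover have "\<Union>Ch \<inter> W \<subseteq> {hzero V}" using sub by blast
      ultimately have "\<Union>Ch \<in> AA" unfolding AA_def by simp
      then show ?thesis by blast
    qed
  qed
  then obtain T where T: "T \<in> AA" and max: "\<forall>X\<in>AA. T \<subseteq> X \<longrightarrow> X = T" by blast
  have Ts: "subsp V T" and TW: "T \<inter> W \<subseteq> {hzero V}" using T unfolding AA_def by auto
  have span: "\<forall>v\<in>hcarrier V. \<exists>w\<in>W. \<exists>t\<in>T. v = hadd V w t"
  proof (rule ccontr)
    assume "\<not> ?thesis"
    then obtain v where v: "v \<in> hcarrier V" and nv: "\<forall>w\<in>W. \<forall>t\<in>T. v \<noteq> hadd V w t" by blast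
    define T' where "T' = {hadd V t (hscale V c v) | t c. t \<in> T}"
    have Tc: "t \<in> T \<Longrightarrow> t \<in> hcarrier V" for t using Ts subsp_car by blast
    have Wc: "w \<in> W \<Longrightarrow> w \<in> hcarrier V" for w using W subsp_car by blast
    have T'c: "T' \<subseteq> hcarrier V" unfolding T'_def using Tc v by auto
    have "hzero V = hadd V (hzero V) (hscale V 0 v)" using v by simp
    then have T'0: "hzero V \<in> T'" unfolding T'_def using subspD(2)[OF Ts] by blast
    have T'a: "\<forall>x\<in>T'. \<forall>y\<in>T'. hadd V x y \<in> T'"
    proof (intro ballI)
      fix x y assume "x \<in> T'" "y \<in> T'"
      then obtain t c t' c' where "t \<in> T" "t' \<in> T" "x = hadd V t (hscale V c v)" "y = hadd V t' (hscale V c' v)"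
        unfolding T'_def by blast
      then have "hadd V x y = hadd V (hadd V t t') (hscale V (c+c') v)" "hadd V t t' \<in> T"
        using add_sc_comb Tc v subspD(3)[OF Ts] by auto
      then show "hadd V x y \<in> T'" unfolding T'_def by blast
    qed
    have T's: "\<forall>d. \<forall>x\<in>T'. hscale V d x \<in> T'"
    proof (intro ballI allI)
      fix d x assume "x \<in> T'"
      then obtain t c where "t \<in> T" "x = hadd V t (hscale V c v)"
        unfolding T'_def by blast
      then have "hscale V d x = hadd V (hscale V d t) (hscale V (d*c) v)" "hscale V d t \<in> T"
        using Tc v subspD(4)[OF Ts] by (auto simp: scale_add_r)
      then show "hscale V d x \<in> T'" unfolding T'_def by blast
    qed
    have T'W: "T' \<inter> W \<subseteq> {hzero V}"
    proof
      fix w assume "w \<in> T' \<inter> W"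
      then obtain t c where t: "t \<in> T" and w: "w \<in> W" "w = hadd V t (hscale V c v)"
        unfolding T'_def by blast
      show "w \<in> {hzero V}"
      proof (cases "c = 0")
        case True
        then have "w = t" using w t Tc v by simp
        then show ?thesis using TW t w by blast
      next
        case False
        have "hscale V (inverse c) w = hadd V (hscale V (inverse c) t) v"
          using w t Tc v False by (simp add: scale_add_r)
        then have "hadd V (hscale V (inverse c) w) (hscale V (- inverse c) t) =
            hadd V v (hadd V (hscale V (inverse c) t) (hscale V (- inverse c) t))"
          using t Tc v by (simp del: neg_l neg_r add: add_ac)
        also have "\<dots> = v" using t Tc v by (simp add: scale_add_l[symmetric])
        finally have "v = hadd V (hscale V (inverse c) w) (hscale V (- inverse c) t)" by simp
        moreover have "hscale V (inverse c) w \<in> W" using subspD(4)[OF W] w by blast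
        moreover have "hscale V (- inverse c) t \<in> T" using subspD(4)[OF Ts] t by blast
        ultimately show ?thesis using nv by blast
      qed
    qed
    have "T' \<in> AA" unfolding AA_def subsp_def using T'c T'0 T'a T's T'W by blast
    moreover have "T \<subseteq> T'"
    proof
      fix t assume "t \<in> T"
      moreover have "t = hadd V t (hscale V 0 v)" using \<open>t \<in> T\<close> Tc v by simp
      ultimately show "t \<in> T'" unfolding T'_def by blast
    qed
    moreover have "v \<in> T'"
    proof -
      have "v = hadd V (hzero V) (hscale V 1 v)" using v by simp
      then show ?thesis unfolding T'_def using subspD(2)[OF Ts] by blast
    qed
    moreover have "v \<notin> T"
      using nv subspD(2)[OF W] v by (metis zero_add)
    ultimately show False using max by blast
  qed
  show ?thesis using Ts TW span by blast
qed


end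

context vs begin
lemma projection:
  assumes W: "subsp V W"
  shows "\<exists>\<pi>. (\<forall>v\<in>hcarrier V. \<pi> v \<in> W) \<and> (\<forall>w\<in>W. \<pi> w = w) \<and>
     (\<forall>x\<in>hcarrier V. \<forall>y\<in>hcarrier V. \<pi> (hadd V x y) = hadd V (\<pi> x) (\<pi> y)) \<and>
     (\<forall>c. \<forall>x\<in>hcarrier V. \<pi> (hscale V c x) = hscale V c (\<pi> x))"
proof -
  obtain T where Ts: "subsp V T" and TW: "T \<inter> W \<subseteq> {hzero V}"
    and span: "\<forall>v\<in>hcarrier V. \<exists>w\<in>W. \<exists>t\<in>T. v = hadd V w t"
    using complement[OF W] by blast
  have Tc: "t \<in> T \<Longrightarrow> t \<in> hcarrier V" for t using Ts subsp_car by blast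
  have Wc: "w \<in> W \<Longrightarrow> w \<in> hcarrier V" for w using W subsp_car by blast
  have uniq: "w = w'" if "w \<in> W" "w' \<in> W" "t \<in> T" "t' \<in> T" "hadd V w t = hadd V w' t'" for w w' t t'
  proof -
    have e: "hadd V w (hscale V (-1) w') = hadd V t' (hscale V (-1) t)"
      using eq_swap_diff[of w t w' t'] that Tc Wc by blast
    have "hadd V w (hscale V (-1) w') \<in> W" using that subspD(3,4)[OF W] by blast
    moreover have "hadd V t' (hscale V (-1) t) \<in> T" using that subspD(3,4)[OF Ts] by blast
    ultimately have "hadd V w (hscale V (-1) w') = hzero V" using e TW by auto
    then show ?thesis using diff_zero_eq that Wc by blast
  qed
  define \<pi> where "\<pi> v = (SOME w. w \<in> W \<and> (\<exists>t\<in>T. v = hadd V w t))" for v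
  have pspec0: "\<pi> v \<in> W \<and> (\<exists>t\<in>T. v = hadd V (\<pi> v) t)" if "v \<in> hcarrier V" for v
    unfolding \<pi>_def by (rule someI_ex) (use span that in blast)
  have pspec: "\<pi> v \<in> W \<and> (\<exists>t\<in>T. hadd V (\<pi> v) t = v)" if "v \<in> hcarrier V" for v
    using pspec0[OF that] by metis
  have peq: "\<pi> v = w" if "v \<in> hcarrier V" "w \<in> W" "t \<in> T" "v = hadd V w t" for v w t
    using pspec[OF that(1)] uniq that by metis
  have p1: "\<forall>v\<in>hcarrier V. \<pi> v \<in> W" using pspec by blast
  have p2: "\<forall>w\<in>W. \<pi> w = w"
  proof
    fix w assume w: "w \<in> W"
    show "\<pi> w = w" using peq[of w w "hzero V"] w Wc subspD(2)[OF Ts] by simp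
  qed
  have p3: "\<forall>x\<in>hcarrier V. \<forall>y\<in>hcarrier V. \<pi> (hadd V x y) = hadd V (\<pi> x) (\<pi> y)"
  proof (intro ballI)
    fix x y assume x: "x \<in> hcarrier V" and y: "y \<in> hcarrier V"
    obtain t where t: "t \<in> T" "hadd V (\<pi> x) t = x" using pspec[OF x] by blast
    obtain t' where t': "t' \<in> T" "hadd V (\<pi> y) t' = y" using pspec[OF y] by blast
    have px: "\<pi> x \<in> W" "\<pi> y \<in> W" using p1 x y by auto
    have "hadd V x y = hadd V (hadd V (\<pi> x) (\<pi> y)) (hadd V t t')"
    proof -
      have "hadd V x y = hadd V (hadd V (\<pi> x) t) (hadd V (\<pi> y) t')" using t(2) t'(2) by simp
      also have "\<dots> = hadd V (hadd V (\<pi> x) (\<pi> y)) (hadd V t t')"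
        using px t(1) t'(1) Tc Wc by (simp del: neg_l neg_r add: add_ac)
      finally show ?thesis .
    qed
    then show "\<pi> (hadd V x y) = hadd V (\<pi> x) (\<pi> y)"
      by (intro peq[of "hadd V x y" "hadd V (\<pi> x) (\<pi> y)" "hadd V t t'"])
        (use x y px t(1) t'(1) subspD(3)[OF W] subspD(3)[OF Ts] Wc Tc in auto)
  qed
  have p4: "\<forall>c. \<forall>x\<in>hcarrier V. \<pi> (hscale V c x) = hscale V c (\<pi> x)"
  proof (intro ballI allI)
    fix c x assume x: "x \<in> hcarrier V"
    obtain t where t: "t \<in> T" "hadd V (\<pi> x) t = x" using pspec[OF x] by blast
    have px: "\<pi> x \<in> W" using p1 x by auto
    have "hscale V c x = hadd V (hscale V c (\<pi> x)) (hscale V c t)"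
      using t px Tc Wc scale_add_r by metis
    then show "\<pi> (hscale V c x) = hscale V c (\<pi> x)"
      by (intro peq[of "hscale V c x" "hscale V c (\<pi> x)" "hscale V c t"])
        (use x px t(1) subspD(4)[OF W] subspD(4)[OF Ts] Wc Tc in auto)
  qed
  show ?thesis using p1 p2 p3 p4 by blast
qed

lemma lin_fun_neg: "lin_fun V \<phi> \<Longrightarrow> x \<in> hcarrier V \<Longrightarrow> \<phi> (hscale V (-1) x) = - \<phi> x"
  using lin_funD(2) by fastforce

lemma scale_inj:
  assumes x: "x \<in> hcarrier V" "x \<noteq> hzero V" and e: "hscale V c x = hscale V d x"
  shows "c = d"
proof (rule ccontr)
  assume cd: "c \<noteq> d"
  have "hscale V (c - d) x = hadd V (hscale V c x) (hscale V (-d) x)"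
    using scale_add_l[OF x(1), of c "-d"] by simp
  also have "\<dots> = hadd V (hscale V d x) (hscale V (-d) x)" using e by simp
  also have "\<dots> = hscale V (d + -d) x" using scale_add_l[OF x(1), of d "-d"] by simp
  also have "\<dots> = hzero V" using x by simp
  finally have h: "hscale V (c - d) x = hzero V" .
  have "x = hscale V (inverse (c - d) * (c - d)) x" using cd x by simp
  also have "\<dots> = hscale V (inverse (c - d)) (hscale V (c - d) x)" using x by simp
  also have "\<dots> = hzero V" using h by simp
  finally show False using x by simp
qed

lemma sep_nonzero:
  assumes x: "x \<in> hcarrier V" "x \<noteq> hzero V"
  shows "\<exists>\<phi>. lin_fun V \<phi> \<and> \<phi> x = 1"
proof -
  define W where "W = {hscale V c x | c. True}"
  have Ws: "subsp V W" unfolding subsp_def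
  proof (intro conjI ballI allI)
    show "W \<subseteq> hcarrier V" unfolding W_def using x by auto
    have "hzero V = hscale V 0 x" using x by simp
    then show "hzero V \<in> W" unfolding W_def by blast
    fix a b assume "a \<in> W" "b \<in> W"
    then obtain c d where "a = hscale V c x" "b = hscale V d x" unfolding W_def by blast
    then have "hadd V a b = hscale V (c + d) x" using x by (simp add: scale_add_l)
    then show "hadd V a b \<in> W" unfolding W_def by blast
  next
    fix e a assume "a \<in> W"
    then obtain c where "a = hscale V c x" unfolding W_def by blast
    then have "hscale V e a = hscale V (e * c) x" using x by simp
    then show "hscale V e a \<in> W" unfolding W_def by blast
  qed
  obtain \<pi> where p1: "\<forall>v\<in>hcarrier V. \<pi> v \<in> W" and p2: "\<forall>w\<in>W. \<pi> w = w"
    and p3: "\<forall>a\<in>hcarrier V. \<forall>b\<in>hcarrier V. \<pi> (hadd V a b) = hadd V (\<pi> a) (\<pi> b)"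
    and p4: "\<forall>c. \<forall>a\<in>hcarrier V. \<pi> (hscale V c a) = hscale V c (\<pi> a)"
    using projection[OF Ws] by blast
  define \<phi> where "\<phi> v = (THE c. \<pi> v = hscale V c x)" for v
  have phi: "\<pi> v = hscale V (\<phi> v) x" if "v \<in> hcarrier V" for v
  proof -
    have "\<pi> v \<in> W" using p1 that by blast
    then obtain c where c: "\<pi> v = hscale V c x" unfolding W_def by blast
    have "(THE c. \<pi> v = hscale V c x) = c"
    proof (rule the_equality)
      show "\<pi> v = hscale V c x" by (rule c)
      fix c' assume "\<pi> v = hscale V c' x"
      then show "c' = c" using c scale_inj[OF x, of c' c] by simp
    qed
    then have "\<phi> v = c" unfolding \<phi>_def .
    then show ?thesis using c by simp
  qed
  have "lin_fun V \<phi>" unfolding lin_fun_def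
  proof (intro conjI ballI allI)
    fix a b assume a: "a \<in> hcarrier V" and b: "b \<in> hcarrier V"
    have "hscale V (\<phi> (hadd V a b)) x = hscale V (\<phi> a + \<phi> b) x"
      using phi[of "hadd V a b"] phi[OF a] phi[OF b] p3 a b x by (simp add: scale_add_l)
    then show "\<phi> (hadd V a b) = \<phi> a + \<phi> b" using scale_inj[OF x] by blast
  next
    fix c a assume a: "a \<in> hcarrier V"
    have "hscale V (\<phi> (hscale V c a)) x = hscale V (c * \<phi> a) x"
      using phi[of "hscale V c a"] phi[OF a] p4 a x by simp
    then show "\<phi> (hscale V c a) = c * \<phi> a" using scale_inj[OF x] by blast
  qed
  moreover have "\<phi> x = 1"
  proof -
    have "x = hscale V 1 x" using x by simp
    then have "x \<in> W" unfolding W_def by blast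
    then have "hscale V (\<phi> x) x = hscale V 1 x" using phi[OF x(1)] p2 x by simp
    then show ?thesis using scale_inj[OF x] by blast
  qed
  ultimately show ?thesis by blast
qed

lemma separation:
  assumes "x \<in> hcarrier V" "y \<in> hcarrier V" "\<And>\<phi>. lin_fun V \<phi> \<Longrightarrow> \<phi> x = \<phi> y"
  shows "x = y"
proof (rule ccontr)
  assume "x \<noteq> y"
  let ?d = "hadd V x (hscale V (-1) y)"
  have "?d \<noteq> hzero V" using diff_zero_eq assms(1,2) \<open>x \<noteq> y\<close> by blast
  moreover have "?d \<in> hcarrier V" using assms(1,2) by simp
  ultimately obtain \<phi> where \<phi>: "lin_fun V \<phi>" "\<phi> ?d = 1" using sep_nonzero by blast
  have "\<phi> ?d = \<phi> x - \<phi> y" using \<phi>(1) assms(1,2) by (simp add: lin_funD lin_fun_neg)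
  then show False using \<phi> assms(3)[OF \<phi>(1)] by simp
qed

end

definition ev :: "('a \<Rightarrow> 'b \<Rightarrow> 'k::comm_monoid_add) \<Rightarrow> ('a \<times> 'b) list \<Rightarrow> 'k" where
  "ev \<beta> xs = sum_list (map (\<lambda>(a,b). \<beta> a b) xs)"

lemma ev_Nil[simp]: "ev \<beta> [] = 0" by (simp add: ev_def)
lemma ev_Cons[simp]: "ev \<beta> ((a,b) # xs) = \<beta> a b + ev \<beta> xs" by (simp add: ev_def)
lemma ev_append[simp]: "ev \<beta> (xs @ ys) = ev \<beta> xs + ev \<beta> ys" by (simp add: ev_def)
lemma ev_concat: "ev \<beta> (concat xss) = sum_list (map (ev \<beta>) xss)"
  by (induction xss) (auto simp: ev_def)
lemma ev_map_pair[simp]: "ev \<beta> (map (\<lambda>(a,b). (f a b, g a b)) xs) = ev (\<lambda>a b. \<beta> (f a b) (g a b)) xs"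
  by (induction xs) (auto simp: ev_def)
lemma ev_cong: "(\<And>a b. (a,b) \<in> set xs \<Longrightarrow> \<beta> a b = \<gamma> a b) \<Longrightarrow> ev \<beta> xs = ev \<gamma> xs"
  by (induction xs) (auto simp: ev_def)
lemma ev_add: "ev (\<lambda>a b. \<beta> a b + \<gamma> a b) xs = ev \<beta> xs + ev \<gamma> xs"
  by (induction xs) (auto simp: ev_def add_ac)
lemma ev_cmult: "ev (\<lambda>a b. (c::'k::comm_ring) * \<beta> a b) xs = c * ev \<beta> xs"
  by (induction xs) (auto simp: ev_def algebra_simps)
lemma ev_cmult_r: "ev (\<lambda>a b. \<beta> a b * (c::'k::comm_ring)) xs = ev \<beta> xs * c"
  by (induction xs) (auto simp: ev_def algebra_simps)
lemma ev_neg: "ev (\<lambda>a b. - (\<beta> a b::'k::ab_group_add)) xs = - ev \<beta> xs"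
  by (induction xs) (auto simp: ev_def)
lemma ev_zero[simp]: "ev (\<lambda>a b. 0) xs = 0"
  by (induction xs) (auto simp: ev_def)
lemma ev_sum_list: "ev (\<lambda>a b. sum_list (map (\<lambda>y. f y a b) ys)) xs = sum_list (map (\<lambda>y. ev (f y) xs) ys)"
  by (induction xs) (auto simp: ev_def sum_list_addf)
lemma ev_ev: "ev (\<lambda>a b. ev (\<lambda>c d. f a b c d) ys) xs = ev (\<lambda>c d. ev (\<lambda>a b. f a b c d) xs) ys"
proof (induction xs)
  case Nil then show ?case by (simp add: ev_def)
next
  case (Cons x xs) then show ?case by (cases x) (simp add: ev_add)
qed
lemma ev_concat_map: "ev \<beta> (concat (map (\<lambda>(a,b). F a b) xs)) = ev (\<lambda>a b. ev \<beta> (F a b)) xs"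
  by (induction xs) (auto simp: ev_def)

lemma lin_fun_add: "lin_fun V \<phi> \<Longrightarrow> lin_fun V \<psi> \<Longrightarrow> lin_fun V (\<lambda>x. \<phi> x + \<psi> x)"
  unfolding lin_fun_def by (auto simp: algebra_simps)
lemma lin_fun_cmult: "lin_fun V \<phi> \<Longrightarrow> lin_fun V (\<lambda>x. c * \<phi> x)"
  unfolding lin_fun_def by (auto simp: algebra_simps)
lemma lin_fun_cmult_r: "lin_fun V \<phi> \<Longrightarrow> lin_fun V (\<lambda>x. \<phi> x * c)"
  unfolding lin_fun_def by (auto simp: algebra_simps)
lemma lin_fun_zero_fun: "lin_fun V (\<lambda>x. 0)"
  unfolding lin_fun_def by auto
lemma lin_fun_sum_list: "(\<And>y. y \<in> set ys \<Longrightarrow> lin_fun V (f y)) \<Longrightarrow> lin_fun V (\<lambda>x. sum_list (map (\<lambda>y. f y x) ys))"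
proof (induction ys)
  case Nil then show ?case by (simp add: lin_fun_zero_fun)
next
  case (Cons a ys) then show ?case by (simp add: lin_fun_add)
qed
lemma lin_fun_ev: "(\<And>a b. (a,b) \<in> set t \<Longrightarrow> lin_fun V (f a b)) \<Longrightarrow> lin_fun V (\<lambda>x. ev (\<lambda>a b. f a b x) t)"
proof (induction t)
  case Nil then show ?case by (simp add: lin_fun_zero_fun)
next
  case (Cons a t) then show ?case by (cases a) (simp add: lin_fun_add)
qed
lemma lin_fun_comp: "lin_fun W \<phi> \<Longrightarrow> linear_map V W f \<Longrightarrow> lin_fun V (\<lambda>x. \<phi> (f x))"
  unfolding lin_fun_def linear_map_def by (auto simp: image_subset_iff)

lemma linear_mapD:
  assumes "linear_map V W f"
  shows "x \<in> hcarrier V \<Longrightarrow> f x \<in> hcarrier W"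
    "x \<in> hcarrier V \<Longrightarrow> y \<in> hcarrier V \<Longrightarrow> f (hadd V x y) = hadd W (f x) (f y)"
    "x \<in> hcarrier V \<Longrightarrow> f (hscale V c x) = hscale W c (f x)"
  using assms unfolding linear_map_def by auto

lemma linear_map_comp: "linear_map U V g \<Longrightarrow> linear_map V W f \<Longrightarrow> linear_map U W (\<lambda>x. f (g x))"
  unfolding linear_map_def by (auto simp: image_subset_iff)

lemma bilinear_form_iff:
  "bilinear_form V W \<beta> \<longleftrightarrow> (\<forall>y\<in>hcarrier W. lin_fun V (\<lambda>x. \<beta> x y)) \<and> (\<forall>x\<in>hcarrier V. lin_fun W (\<beta> x))"
  unfolding bilinear_form_def lin_fun_def by auto

lemma bilinear_formI:
  "(\<And>y. y \<in> hcarrier W \<Longrightarrow> lin_fun V (\<lambda>x. \<beta> x y)) \<Longrightarrow> (\<And>x. x \<in> hcarrier V \<Longrightarrow> lin_fun W (\<lambda>y. \<beta> x y)) \<Longrightarrow> bilinear_form V W \<beta>"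
  unfolding bilinear_form_iff by auto

lemma bilinear_formD:
  "bilinear_form V W \<beta> \<Longrightarrow> y \<in> hcarrier W \<Longrightarrow> lin_fun V (\<lambda>x. \<beta> x y)"
  "bilinear_form V W \<beta> \<Longrightarrow> x \<in> hcarrier V \<Longrightarrow> lin_fun W (\<lambda>y. \<beta> x y)"
  unfolding bilinear_form_iff by auto

lemma trilinear_form_iff:
  "trilinear_form V \<tau> \<longleftrightarrow> (\<forall>y\<in>hcarrier V. \<forall>z\<in>hcarrier V. lin_fun V (\<lambda>x. \<tau> x y z)) \<and>
     (\<forall>x\<in>hcarrier V. \<forall>z\<in>hcarrier V. lin_fun V (\<lambda>y. \<tau> x y z)) \<and>
     (\<forall>x\<in>hcarrier V. \<forall>y\<in>hcarrier V. lin_fun V (\<lambda>z. \<tau> x y z))"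
  unfolding trilinear_form_def bilinear_form_iff by auto

lemma trilinear_formI:
  "(\<And>y z. y \<in> hcarrier V \<Longrightarrow> z \<in> hcarrier V \<Longrightarrow> lin_fun V (\<lambda>x. \<tau> x y z)) \<Longrightarrow>
   (\<And>x z. x \<in> hcarrier V \<Longrightarrow> z \<in> hcarrier V \<Longrightarrow> lin_fun V (\<lambda>y. \<tau> x y z)) \<Longrightarrow>
   (\<And>x y. x \<in> hcarrier V \<Longrightarrow> y \<in> hcarrier V \<Longrightarrow> lin_fun V (\<lambda>z. \<tau> x y z)) \<Longrightarrow> trilinear_form V \<tau>"
  unfolding trilinear_form_iff by auto

lemma bilinear_comp:
  assumes "bilinear_form V' W' \<beta>" "linear_map V V' f" "linear_map W W' g"
  shows "bilinear_form V W (\<lambda>a b. \<beta> (f a) (g b))"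
  using assms unfolding bilinear_form_def linear_map_def by (auto simp: image_subset_iff)

lemma bilinear_prod:
  "lin_fun V \<phi> \<Longrightarrow> lin_fun W \<psi> \<Longrightarrow> bilinear_form V W (\<lambda>a b. \<phi> a * \<psi> b)"
  unfolding bilinear_form_def lin_fun_def by (auto simp: algebra_simps)

lemma bilinear_swap: "bilinear_form V W \<beta> \<Longrightarrow> bilinear_form W V (\<lambda>a b. \<beta> b a)"
  unfolding bilinear_form_def by auto

lemma bilinear_ev:
  "(\<And>c d. (c,d) \<in> set t \<Longrightarrow> bilinear_form V W (f c d)) \<Longrightarrow> bilinear_form V W (\<lambda>a b. ev (\<lambda>c d. f c d a b) t)"
  unfolding bilinear_form_iff by (auto intro!: lin_fun_ev)

lemma bilinear_add: "bilinear_form V W \<beta> \<Longrightarrow> bilinear_form V W \<gamma> \<Longrightarrow> bilinear_form V W (\<lambda>a b. \<beta> a b + \<gamma> a b)"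
  unfolding bilinear_form_def by (auto simp: algebra_simps)

lemma bilinear_cmult: "bilinear_form V W \<beta> \<Longrightarrow> bilinear_form V W (\<lambda>a b. c * \<beta> a b)"
  unfolding bilinear_form_def by (auto simp: algebra_simps)

lemma teqD:
  assumes "tensor_eq V W xs ys"
  shows "set xs \<subseteq> hcarrier V \<times> hcarrier W" "set ys \<subseteq> hcarrier V \<times> hcarrier W"
    "bilinear_form V W \<beta> \<Longrightarrow> ev \<beta> xs = ev \<beta> ys"
  using assms unfolding tensor_eq_def ev_def by auto

lemma teqI:
  "set xs \<subseteq> hcarrier V \<times> hcarrier W \<Longrightarrow> set ys \<subseteq> hcarrier V \<times> hcarrier W \<Longrightarrow>
   (\<And>\<beta>. bilinear_form V W \<beta> \<Longrightarrow> ev \<beta> xs = ev \<beta> ys) \<Longrightarrow> tensor_eq V W xs ys"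
  unfolding tensor_eq_def ev_def by auto

lemma teq_refl: "set xs \<subseteq> hcarrier V \<times> hcarrier W \<Longrightarrow> tensor_eq V W xs xs"
  by (rule teqI) auto
lemma teq_sym: "tensor_eq V W xs ys \<Longrightarrow> tensor_eq V W ys xs"
  unfolding tensor_eq_def by auto
lemma teq_trans: "tensor_eq V W xs ys \<Longrightarrow> tensor_eq V W ys zs \<Longrightarrow> tensor_eq V W xs zs"
  unfolding tensor_eq_def by auto
lemma teq_append: assumes "tensor_eq V W xs ys" "tensor_eq V W xs' ys'"
  shows "tensor_eq V W (xs @ xs') (ys @ ys')"
proof (rule teqI)
  show "set (xs @ xs') \<subseteq> hcarrier V \<times> hcarrier W" using teqD(1)[OF assms(1)] teqD(1)[OF assms(2)] by auto
  show "set (ys @ ys') \<subseteq> hcarrier V \<times> hcarrier W" using teqD(2)[OF assms(1)] teqD(2)[OF assms(2)] by auto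
  fix \<beta> assume "bilinear_form V W \<beta>"
  then show "ev \<beta> (xs @ xs') = ev \<beta> (ys @ ys')" using teqD(3)[OF assms(1)] teqD(3)[OF assms(2)] by simp
qed

lemma teq_map:
  assumes "tensor_eq V W xs ys" "linear_map V V' f" "linear_map W W' g"
  shows "tensor_eq V' W' (map (\<lambda>(a,b). (f a, g b)) xs) (map (\<lambda>(a,b). (f a, g b)) ys)"
proof (rule teqI)
  show "set (map (\<lambda>(a,b). (f a, g b)) xs) \<subseteq> hcarrier V' \<times> hcarrier W'"
    using teqD(1)[OF assms(1)] assms(2,3) unfolding linear_map_def by auto
  show "set (map (\<lambda>(a,b). (f a, g b)) ys) \<subseteq> hcarrier V' \<times> hcarrier W'"
    using teqD(2)[OF assms(1)] assms(2,3) unfolding linear_map_def by auto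
  fix \<beta> assume "bilinear_form V' W' \<beta>"
  then show "ev \<beta> (map (\<lambda>(a,b). (f a, g b)) xs) = ev \<beta> (map (\<lambda>(a,b). (f a, g b)) ys)"
    using teqD(3)[OF assms(1) bilinear_comp[OF _ assms(2,3)]] by simp
qed

lemma teq_swap:
  assumes "tensor_eq V W xs ys"
  shows "tensor_eq W V (map (\<lambda>(a,b). (b,a)) xs) (map (\<lambda>(a,b). (b,a)) ys)"
proof (rule teqI)
  show "set (map (\<lambda>(a,b). (b,a)) xs) \<subseteq> hcarrier W \<times> hcarrier V"
    using teqD(1)[OF assms(1)] by auto
  show "set (map (\<lambda>(a,b). (b,a)) ys) \<subseteq> hcarrier W \<times> hcarrier V"
    using teqD(2)[OF assms(1)] by auto
  fix \<beta> assume "bilinear_form W V \<beta>"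
  then show "ev \<beta> (map (\<lambda>(a,b). (b,a)) xs) = ev \<beta> (map (\<lambda>(a,b). (b,a)) ys)"
    using teqD(3)[OF assms(1) bilinear_swap] by simp
qed

lemma teq_vsum:
  assumes U: "vspace U" and F: "\<And>a b. a \<in> hcarrier V \<Longrightarrow> b \<in> hcarrier W \<Longrightarrow> F a b \<in> hcarrier U"
    and bl: "\<And>\<phi>. lin_fun U \<phi> \<Longrightarrow> bilinear_form V W (\<lambda>a b. \<phi> (F a b))"
    and t: "tensor_eq V W xs ys"
  shows "vsum U (map (\<lambda>(a,b). F a b) xs) = vsum U (map (\<lambda>(a,b). F a b) ys)"
proof -
  interpret U: vs U by (rule vs.intro[OF U])
  have sx: "set (map (\<lambda>(a,b). F a b) xs) \<subseteq> hcarrier U" using teqD(1)[OF t] F by auto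
  have sy: "set (map (\<lambda>(a,b). F a b) ys) \<subseteq> hcarrier U" using teqD(2)[OF t] F by auto
  show ?thesis
  proof (rule U.separation)
    show "vsum U (map (\<lambda>(a,b). F a b) xs) \<in> hcarrier U" using sx by simp
    show "vsum U (map (\<lambda>(a,b). F a b) ys) \<in> hcarrier U" using sy by simp
    fix \<phi> assume \<phi>: "lin_fun U \<phi>"
    have "\<phi> (vsum U (map (\<lambda>(a,b). F a b) xs)) = ev (\<lambda>a b. \<phi> (F a b)) xs"
      using U.lin_vsum[OF \<phi> sx] by (simp add: ev_def comp_def case_prod_beta')
    also have "\<dots> = ev (\<lambda>a b. \<phi> (F a b)) ys" using teqD(3)[OF t bl[OF \<phi>]] .
    also have "\<dots> = \<phi> (vsum U (map (\<lambda>(a,b). F a b) ys))"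
      using U.lin_vsum[OF \<phi> sy] by (simp add: ev_def comp_def case_prod_beta')
    finally show "\<phi> (vsum U (map (\<lambda>(a,b). F a b) xs)) = \<phi> (vsum U (map (\<lambda>(a,b). F a b) ys))" .
  qed
qed

lemma lin_vsum_ev:
  assumes U: "vspace U" "lin_fun U \<phi>" "\<And>a b. (a,b) \<in> set xs \<Longrightarrow> F a b \<in> hcarrier U"
  shows "\<phi> (vsum U (map (\<lambda>(a,b). F a b) xs)) = ev (\<lambda>a b. \<phi> (F a b)) xs"
proof -
  interpret U: vs U by (rule vs.intro[OF U(1)])
  have sx: "set (map (\<lambda>(a,b). F a b) xs) \<subseteq> hcarrier U" using U(3) by auto
  show ?thesis using U.lin_vsum[OF U(2) sx] by (simp add: ev_def comp_def case_prod_beta')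
qed


definition subrec :: "('k::field,'a) hopf_alg \<Rightarrow> ('k,'a) hopf_alg \<Rightarrow> bool" where
  "subrec V' V \<longleftrightarrow> subsp V (hcarrier V') \<and> hadd V' = hadd V \<and> hscale V' = hscale V"

lemma proj_linear:
  assumes V: "vspace V" and sr: "subrec V' V"
  shows "\<exists>\<pi>. linear_map V V' \<pi> \<and> (\<forall>a\<in>hcarrier V'. \<pi> a = a)"
proof -
  interpret V: vs V by (rule vs.intro[OF V])
  have s: "subsp V (hcarrier V')" and a: "hadd V' = hadd V" and c: "hscale V' = hscale V"
    using sr unfolding subrec_def by auto
  obtain \<pi> where p1: "\<forall>v\<in>hcarrier V. \<pi> v \<in> hcarrier V'" and p2: "\<forall>w\<in>hcarrier V'. \<pi> w = w"
    and p3: "\<forall>x\<in>hcarrier V. \<forall>y\<in>hcarrier V. \<pi> (hadd V x y) = hadd V (\<pi> x) (\<pi> y)"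
    and p4: "\<forall>c. \<forall>x\<in>hcarrier V. \<pi> (hscale V c x) = hscale V c (\<pi> x)"
    using V.projection[OF s] by blast
  have "linear_map V V' \<pi>" unfolding linear_map_def using p1 p3 p4 a c by auto
  then show ?thesis using p2 by blast
qed

lemma subrec_lin_fun: "subrec V' V \<Longrightarrow> lin_fun V \<phi> \<Longrightarrow> lin_fun V' \<phi>"
  unfolding subrec_def subsp_def lin_fun_def by (auto simp: subset_iff)

lemma subrec_bilinear: "subrec V' V \<Longrightarrow> subrec W' W \<Longrightarrow> bilinear_form V W \<beta> \<Longrightarrow> bilinear_form V' W' \<beta>"
  unfolding subrec_def subsp_def bilinear_form_def by (auto simp: subset_iff)

lemma subrec_trilinear: assumes "subrec V' V" "trilinear_form V \<tau>" shows "trilinear_form V' \<tau>"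
proof -
  have c: "\<And>x. x \<in> hcarrier V' \<Longrightarrow> x \<in> hcarrier V" using assms(1) unfolding subrec_def subsp_def by auto
  show ?thesis
  proof (rule trilinear_formI)
    fix y z assume "y \<in> hcarrier V'" "z \<in> hcarrier V'"
    then show "lin_fun V' (\<lambda>x. \<tau> x y z)" using assms(2) c subrec_lin_fun[OF assms(1)] unfolding trilinear_form_iff by blast
  next
    fix x z assume "x \<in> hcarrier V'" "z \<in> hcarrier V'"
    then show "lin_fun V' (\<lambda>y. \<tau> x y z)" using assms(2) c subrec_lin_fun[OF assms(1)] unfolding trilinear_form_iff by blast
  next
    fix x y assume "x \<in> hcarrier V'" "y \<in> hcarrier V'"
    then show "lin_fun V' (\<lambda>z. \<tau> x y z)" using assms(2) c subrec_lin_fun[OF assms(1)] unfolding trilinear_form_iff by blast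
  qed
qed

lemma teq_restrict:
  assumes V: "vspace V" and W: "vspace W" and sV: "subrec V' V" and sW: "subrec W' W"
    and xs: "set xs \<subseteq> hcarrier V' \<times> hcarrier W'" and ys: "set ys \<subseteq> hcarrier V' \<times> hcarrier W'"
    and t: "tensor_eq V W xs ys"
  shows "tensor_eq V' W' xs ys"
proof (rule teqI[OF xs ys])
  fix \<beta> assume \<beta>: "bilinear_form V' W' \<beta>"
  obtain \<pi>1 where l1: "linear_map V V' \<pi>1" and i1: "\<forall>a\<in>hcarrier V'. \<pi>1 a = a"
    using proj_linear[OF V sV] by blast
  obtain \<pi>2 where l2: "linear_map W W' \<pi>2" and i2: "\<forall>a\<in>hcarrier W'. \<pi>2 a = a"
    using proj_linear[OF W sW] by blast
  have b: "bilinear_form V W (\<lambda>a b. \<beta> (\<pi>1 a) (\<pi>2 b))" by (rule bilinear_comp[OF \<beta> l1 l2])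
  have "ev \<beta> xs = ev (\<lambda>a b. \<beta> (\<pi>1 a) (\<pi>2 b)) xs" using xs i1 i2 by (intro ev_cong) auto
  also have "\<dots> = ev (\<lambda>a b. \<beta> (\<pi>1 a) (\<pi>2 b)) ys" using teqD(3)[OF t b] .
  also have "\<dots> = ev \<beta> ys" using ys i1 i2 by (intro ev_cong) auto
  finally show "ev \<beta> xs = ev \<beta> ys" .
qed

lemma teq_extend:
  assumes sV: "subrec V' V" and sW: "subrec W' W" and t: "tensor_eq V' W' xs ys"
  shows "tensor_eq V W xs ys"
proof (rule teqI)
  have "hcarrier V' \<subseteq> hcarrier V" "hcarrier W' \<subseteq> hcarrier W"
    using sV sW unfolding subrec_def subsp_def by auto
  then show "set xs \<subseteq> hcarrier V \<times> hcarrier W" "set ys \<subseteq> hcarrier V \<times> hcarrier W"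
    using teqD(1,2)[OF t] by auto
  fix \<beta> assume "bilinear_form V W \<beta>"
  then show "ev \<beta> xs = ev \<beta> ys" using teqD(3)[OF t] subrec_bilinear[OF sV sW] by blast
qed

definition ev3 :: "('a \<Rightarrow> 'a \<Rightarrow> 'a \<Rightarrow> 'k::comm_monoid_add) \<Rightarrow> ('a \<times> 'a \<times> 'a) list \<Rightarrow> 'k" where
  "ev3 \<tau> xs = sum_list (map (\<lambda>(a,b,c). \<tau> a b c) xs)"

lemma t3D:
  assumes "tensor3_eq V xs ys"
  shows "set xs \<subseteq> hcarrier V \<times> hcarrier V \<times> hcarrier V" "set ys \<subseteq> hcarrier V \<times> hcarrier V \<times> hcarrier V"
    "trilinear_form V \<tau> \<Longrightarrow> ev3 \<tau> xs = ev3 \<tau> ys"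
  using assms unfolding tensor3_eq_def ev3_def by auto

lemma t3I:
  "set xs \<subseteq> hcarrier V \<times> hcarrier V \<times> hcarrier V \<Longrightarrow> set ys \<subseteq> hcarrier V \<times> hcarrier V \<times> hcarrier V \<Longrightarrow>
   (\<And>\<tau>. trilinear_form V \<tau> \<Longrightarrow> ev3 \<tau> xs = ev3 \<tau> ys) \<Longrightarrow> tensor3_eq V xs ys"
  unfolding tensor3_eq_def ev3_def by auto

lemma ev3_cong: "(\<And>a b c. (a,b,c) \<in> set xs \<Longrightarrow> \<tau> a b c = \<sigma> a b c) \<Longrightarrow> ev3 \<tau> xs = ev3 \<sigma> xs"
  by (induction xs) (auto simp: ev3_def)

lemma t3_restrict:
  assumes V: "vspace V" and sV: "subrec V' V"
    and xs: "set xs \<subseteq> hcarrier V' \<times> hcarrier V' \<times> hcarrier V'" and ys: "set ys \<subseteq> hcarrier V' \<times> hcarrier V' \<times> hcarrier V'"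
    and t: "tensor3_eq V xs ys"
  shows "tensor3_eq V' xs ys"
proof (rule t3I[OF xs ys])
  fix \<tau> assume \<tau>: "trilinear_form V' \<tau>"
  obtain \<pi> where l: "linear_map V V' \<pi>" and i: "\<forall>a\<in>hcarrier V'. \<pi> a = a"
    using proj_linear[OF V sV] by blast
  have pc: "x \<in> hcarrier V \<Longrightarrow> \<pi> x \<in> hcarrier V'" for x using linear_mapD(1)[OF l] .
  have b: "trilinear_form V (\<lambda>a b c. \<tau> (\<pi> a) (\<pi> b) (\<pi> c))"
  proof (rule trilinear_formI)
    fix y z assume "y \<in> hcarrier V" "z \<in> hcarrier V"
    then have "lin_fun V' (\<lambda>x. \<tau> x (\<pi> y) (\<pi> z))" using \<tau> pc unfolding trilinear_form_iff by blast
    then show "lin_fun V (\<lambda>x. \<tau> (\<pi> x) (\<pi> y) (\<pi> z))" by (rule lin_fun_comp[OF _ l])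
  next
    fix x z assume "x \<in> hcarrier V" "z \<in> hcarrier V"
    then have "lin_fun V' (\<lambda>y. \<tau> (\<pi> x) y (\<pi> z))" using \<tau> pc unfolding trilinear_form_iff by blast
    then show "lin_fun V (\<lambda>y. \<tau> (\<pi> x) (\<pi> y) (\<pi> z))" by (rule lin_fun_comp[OF _ l])
  next
    fix x y assume "x \<in> hcarrier V" "y \<in> hcarrier V"
    then have "lin_fun V' (\<lambda>z. \<tau> (\<pi> x) (\<pi> y) z)" using \<tau> pc unfolding trilinear_form_iff by blast
    then show "lin_fun V (\<lambda>z. \<tau> (\<pi> x) (\<pi> y) (\<pi> z))" by (rule lin_fun_comp[OF _ l])
  qed
  have "ev3 \<tau> xs = ev3 (\<lambda>a b c. \<tau> (\<pi> a) (\<pi> b) (\<pi> c)) xs" using xs i by (intro ev3_cong) auto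
  also have "\<dots> = ev3 (\<lambda>a b c. \<tau> (\<pi> a) (\<pi> b) (\<pi> c)) ys" using t3D(3)[OF t b] .
  also have "\<dots> = ev3 \<tau> ys" using ys i by (intro ev3_cong) auto
  finally show "ev3 \<tau> xs = ev3 \<tau> ys" .
qed

lemma ev3_concat1: "ev3 \<tau> (concat (map (\<lambda>(u,v). map (\<lambda>(a,b). (a,b,v)) (F u)) xs)) =
   ev (\<lambda>u v. ev (\<lambda>a b. \<tau> a b v) (F u)) xs"
proof (induction xs)
  case Nil then show ?case by (simp add: ev3_def)
next
  case (Cons x xs)
  have e: "ev3 \<tau> (map (\<lambda>(a,b). (a,b,v)) t) = ev (\<lambda>a b. \<tau> a b v) t" for t v
    by (induction t) (auto simp: ev3_def)
  have a: "ev3 \<tau> (ys @ zs) = ev3 \<tau> ys + ev3 \<tau> zs" for ys zs by (simp add: ev3_def)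
  show ?case using Cons e a by (cases x) simp
qed

lemma ev3_concat2: "ev3 \<tau> (concat (map (\<lambda>(u,v). map (\<lambda>(a,b). (u,a,b)) (F v)) xs)) =
   ev (\<lambda>u v. ev (\<lambda>a b. \<tau> u a b) (F v)) xs"
proof (induction xs)
  case Nil then show ?case by (simp add: ev3_def)
next
  case (Cons x xs)
  have e: "ev3 \<tau> (map (\<lambda>(a,b). (u,a,b)) t) = ev (\<lambda>a b. \<tau> u a b) t" for t u
    by (induction t) (auto simp: ev3_def)
  have a: "ev3 \<tau> (ys @ zs) = ev3 \<tau> ys + ev3 \<tau> zs" for ys zs by (simp add: ev3_def)
  show ?case using Cons e a by (cases x) simp
qed

definition tprod :: "('k,'a) hopf_alg \<Rightarrow> ('a \<times> 'a) list \<Rightarrow> ('a \<times> 'a) list \<Rightarrow> ('a \<times> 'a) list" where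
  "tprod H t t' = concat (map (\<lambda>(u,v). map (\<lambda>(u',v'). (hmult H u u', hmult H v v')) t') t)"

lemma ev_tprod: "ev \<gamma> (tprod H t t') = ev (\<lambda>a b. ev (\<lambda>a' b'. \<gamma> (hmult H a a') (hmult H b b')) t') t"
  unfolding tprod_def by (simp add: ev_concat_map)

locale hopfL = fixes H :: "('k::field,'a) hopf_alg" assumes hopf: "hopf H"
begin

lemma kalg: "k_algebra H" and kcoalg: "k_coalgebra H" using hopf unfolding hopf_def by auto

sublocale vs H using kalg unfolding k_algebra_def by (simp add: vs.intro)

lemma one_closed[simp]: "hone H \<in> hcarrier H" using kalg unfolding k_algebra_def by auto
lemma mult_closed[simp]: "x \<in> hcarrier H \<Longrightarrow> y \<in> hcarrier H \<Longrightarrow> hmult H x y \<in> hcarrier H"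
  using kalg unfolding k_algebra_def by auto
lemma mult_assoc: "x \<in> hcarrier H \<Longrightarrow> y \<in> hcarrier H \<Longrightarrow> z \<in> hcarrier H \<Longrightarrow>
  hmult H (hmult H x y) z = hmult H x (hmult H y z)"
  using kalg unfolding k_algebra_def by auto
lemma one_mult[simp]: "x \<in> hcarrier H \<Longrightarrow> hmult H (hone H) x = x"
  using kalg unfolding k_algebra_def by auto
lemma mult_one[simp]: "x \<in> hcarrier H \<Longrightarrow> hmult H x (hone H) = x"
  using kalg unfolding k_algebra_def by auto
lemma mult_add_l: "x \<in> hcarrier H \<Longrightarrow> y \<in> hcarrier H \<Longrightarrow> z \<in> hcarrier H \<Longrightarrow>
  hmult H (hadd H x y) z = hadd H (hmult H x z) (hmult H y z)"
  using kalg unfolding k_algebra_def by auto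
lemma mult_add_r: "x \<in> hcarrier H \<Longrightarrow> y \<in> hcarrier H \<Longrightarrow> z \<in> hcarrier H \<Longrightarrow>
  hmult H z (hadd H x y) = hadd H (hmult H z x) (hmult H z y)"
  using kalg unfolding k_algebra_def by auto
lemma mult_scale_l: "x \<in> hcarrier H \<Longrightarrow> y \<in> hcarrier H \<Longrightarrow>
  hmult H (hscale H c x) y = hscale H c (hmult H x y)"
  using kalg unfolding k_algebra_def by auto
lemma mult_scale_r: "x \<in> hcarrier H \<Longrightarrow> y \<in> hcarrier H \<Longrightarrow>
  hmult H x (hscale H c y) = hscale H c (hmult H x y)"
  using kalg unfolding k_algebra_def by auto

lemma comult_set: "x \<in> hcarrier H \<Longrightarrow> set (hcomult H x) \<subseteq> hcarrier H \<times> hcarrier H"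
  using kcoalg unfolding k_coalgebra_def by auto
lemma comult_mem: "x \<in> hcarrier H \<Longrightarrow> (u,v) \<in> set (hcomult H x) \<Longrightarrow> u \<in> hcarrier H \<and> v \<in> hcarrier H"
  using comult_set by blast
lemma comult_add: "x \<in> hcarrier H \<Longrightarrow> y \<in> hcarrier H \<Longrightarrow>
  tensor_eq H H (hcomult H (hadd H x y)) (hcomult H x @ hcomult H y)"
  using kcoalg unfolding k_coalgebra_def by auto
lemma comult_scale: "x \<in> hcarrier H \<Longrightarrow>
  tensor_eq H H (hcomult H (hscale H c x)) (map (\<lambda>(u,v). (hscale H c u, v)) (hcomult H x))"
  using kcoalg unfolding k_coalgebra_def by auto
lemma counit_add: "x \<in> hcarrier H \<Longrightarrow> y \<in> hcarrier H \<Longrightarrow> hcounit H (hadd H x y) = hcounit H x + hcounit H y"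
  using kcoalg unfolding k_coalgebra_def by auto
lemma counit_scale: "x \<in> hcarrier H \<Longrightarrow> hcounit H (hscale H c x) = c * hcounit H x"
  using kcoalg unfolding k_coalgebra_def by auto
lemma coassoc: "x \<in> hcarrier H \<Longrightarrow> tensor3_eq H
        (concat (map (\<lambda>(u,v). map (\<lambda>(u1,u2). (u1,u2,v)) (hcomult H u)) (hcomult H x)))
        (concat (map (\<lambda>(u,v). map (\<lambda>(v1,v2). (u,v1,v2)) (hcomult H v)) (hcomult H x)))"
  using kcoalg unfolding k_coalgebra_def by auto
lemma counit_l: "x \<in> hcarrier H \<Longrightarrow> vsum H (map (\<lambda>(u,v). hscale H (hcounit H u) v) (hcomult H x)) = x"
  using kcoalg unfolding k_coalgebra_def by auto
lemma counit_r: "x \<in> hcarrier H \<Longrightarrow> vsum H (map (\<lambda>(u,v). hscale H (hcounit H v) u) (hcomult H x)) = x"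
  using kcoalg unfolding k_coalgebra_def by auto
lemma comult_mult: "x \<in> hcarrier H \<Longrightarrow> y \<in> hcarrier H \<Longrightarrow>
  tensor_eq H H (hcomult H (hmult H x y)) (tprod H (hcomult H x) (hcomult H y))"
  using hopf unfolding hopf_def tprod_def by auto
lemma comult_one: "tensor_eq H H (hcomult H (hone H)) [(hone H, hone H)]"
  using hopf unfolding hopf_def by auto
lemma counit_mult: "x \<in> hcarrier H \<Longrightarrow> y \<in> hcarrier H \<Longrightarrow> hcounit H (hmult H x y) = hcounit H x * hcounit H y"
  using hopf unfolding hopf_def by auto
lemma counit_one[simp]: "hcounit H (hone H) = 1"
  using hopf unfolding hopf_def by auto
lemma antipode_lin: "linear_map H H (hantipode H)"
  using hopf unfolding hopf_def by auto
lemma antipode_l: "x \<in> hcarrier H \<Longrightarrow>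
  vsum H (map (\<lambda>(u,v). hmult H (hantipode H u) v) (hcomult H x)) = hscale H (hcounit H x) (hone H)"
  using hopf unfolding hopf_def by auto
lemma antipode_r: "x \<in> hcarrier H \<Longrightarrow>
  vsum H (map (\<lambda>(u,v). hmult H u (hantipode H v)) (hcomult H x)) = hscale H (hcounit H x) (hone H)"
  using hopf unfolding hopf_def by auto

lemma S_closed[simp]: "x \<in> hcarrier H \<Longrightarrow> hantipode H x \<in> hcarrier H"
  using linear_mapD(1)[OF antipode_lin] .
lemma S_add: "x \<in> hcarrier H \<Longrightarrow> y \<in> hcarrier H \<Longrightarrow> hantipode H (hadd H x y) = hadd H (hantipode H x) (hantipode H y)"
  using linear_mapD(2)[OF antipode_lin] .
lemma S_scale: "x \<in> hcarrier H \<Longrightarrow> hantipode H (hscale H c x) = hscale H c (hantipode H x)"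
  using linear_mapD(3)[OF antipode_lin] .

lemma counit_lin: "lin_fun H (hcounit H)"
  unfolding lin_fun_def using counit_add counit_scale by auto

lemma mult_left_lin: "c \<in> hcarrier H \<Longrightarrow> linear_map H H (\<lambda>x. hmult H c x)"
  unfolding linear_map_def using mult_add_r mult_scale_r by auto
lemma mult_right_lin: "c \<in> hcarrier H \<Longrightarrow> linear_map H H (\<lambda>x. hmult H x c)"
  unfolding linear_map_def using mult_add_l mult_scale_l by auto
lemma id_lin: "linear_map H H (\<lambda>x. x)"
  unfolding linear_map_def by auto

lemma lin_mult_l: "lin_fun H \<phi> \<Longrightarrow> c \<in> hcarrier H \<Longrightarrow> lin_fun H (\<lambda>x. \<phi> (hmult H c x))"
  by (rule lin_fun_comp[OF _ mult_left_lin])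
lemma lin_mult_r: "lin_fun H \<phi> \<Longrightarrow> c \<in> hcarrier H \<Longrightarrow> lin_fun H (\<lambda>x. \<phi> (hmult H x c))"
  by (rule lin_fun_comp[OF _ mult_right_lin])
lemma lin_S: "lin_fun H \<phi> \<Longrightarrow> lin_fun H (\<lambda>x. \<phi> (hantipode H x))"
  by (rule lin_fun_comp[OF _ antipode_lin])

lemma D_lin: "bilinear_form H H \<gamma> \<Longrightarrow> lin_fun H (\<lambda>x. ev \<gamma> (hcomult H x))"
  unfolding lin_fun_def
proof (intro conjI ballI allI)
  assume g: "bilinear_form H H \<gamma>"
  fix x y assume x: "x \<in> hcarrier H" and y: "y \<in> hcarrier H"
  show "ev \<gamma> (hcomult H (hadd H x y)) = ev \<gamma> (hcomult H x) + ev \<gamma> (hcomult H y)"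
    using teqD(3)[OF comult_add[OF x y] g] by simp
next
  assume g: "bilinear_form H H \<gamma>"
  fix c x assume x: "x \<in> hcarrier H"
  have "ev \<gamma> (hcomult H (hscale H c x)) = ev (\<lambda>u v. \<gamma> (hscale H c u) v) (hcomult H x)"
    using teqD(3)[OF comult_scale[OF x] g] by simp
  also have "\<dots> = ev (\<lambda>u v. c * \<gamma> u v) (hcomult H x)"
    using comult_set[OF x] g unfolding bilinear_form_def by (intro ev_cong) auto
  finally show "ev \<gamma> (hcomult H (hscale H c x)) = c * ev \<gamma> (hcomult H x)" by (simp add: ev_cmult)
qed

lemma ev_counit_l: "lin_fun H \<phi> \<Longrightarrow> x \<in> hcarrier H \<Longrightarrow> ev (\<lambda>u v. hcounit H u * \<phi> v) (hcomult H x) = \<phi> x"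
proof -
  assume \<phi>: "lin_fun H \<phi>" and x: "x \<in> hcarrier H"
  have "\<phi> x = \<phi> (vsum H (map (\<lambda>(u,v). hscale H (hcounit H u) v) (hcomult H x)))" using counit_l[OF x] by simp
  also have "\<dots> = ev (\<lambda>u v. \<phi> (hscale H (hcounit H u) v)) (hcomult H x)"
    by (rule lin_vsum_ev[OF vs \<phi>]) (use comult_set[OF x] in auto)
  also have "\<dots> = ev (\<lambda>u v. hcounit H u * \<phi> v) (hcomult H x)"
    using comult_set[OF x] lin_funD(2)[OF \<phi>] by (intro ev_cong) auto
  finally show ?thesis by simp
qed

lemma ev_counit_r: "lin_fun H \<phi> \<Longrightarrow> x \<in> hcarrier H \<Longrightarrow> ev (\<lambda>u v. \<phi> u * hcounit H v) (hcomult H x) = \<phi> x"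
proof -
  assume \<phi>: "lin_fun H \<phi>" and x: "x \<in> hcarrier H"
  have "\<phi> x = \<phi> (vsum H (map (\<lambda>(u,v). hscale H (hcounit H v) u) (hcomult H x)))" using counit_r[OF x] by simp
  also have "\<dots> = ev (\<lambda>u v. \<phi> (hscale H (hcounit H v) u)) (hcomult H x)"
    by (rule lin_vsum_ev[OF vs \<phi>]) (use comult_set[OF x] in auto)
  also have "\<dots> = ev (\<lambda>u v. \<phi> u * hcounit H v) (hcomult H x)"
    using comult_set[OF x] lin_funD(2)[OF \<phi>] by (intro ev_cong) (auto simp: mult.commute)
  finally show ?thesis by simp
qed

lemma ev_antipode_l: "lin_fun H \<phi> \<Longrightarrow> x \<in> hcarrier H \<Longrightarrow>
  ev (\<lambda>u v. \<phi> (hmult H (hantipode H u) v)) (hcomult H x) = hcounit H x * \<phi> (hone H)"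
proof -
  assume \<phi>: "lin_fun H \<phi>" and x: "x \<in> hcarrier H"
  have "ev (\<lambda>u v. \<phi> (hmult H (hantipode H u) v)) (hcomult H x) =
      \<phi> (vsum H (map (\<lambda>(u,v). hmult H (hantipode H u) v) (hcomult H x)))"
    by (rule lin_vsum_ev[OF vs \<phi>, symmetric]) (use comult_set[OF x] in auto)
  also have "\<dots> = hcounit H x * \<phi> (hone H)" using antipode_l[OF x] lin_funD(2)[OF \<phi>] by simp
  finally show ?thesis .
qed

lemma ev_antipode_r: "lin_fun H \<phi> \<Longrightarrow> x \<in> hcarrier H \<Longrightarrow>
  ev (\<lambda>u v. \<phi> (hmult H u (hantipode H v))) (hcomult H x) = hcounit H x * \<phi> (hone H)"
proof -
  assume \<phi>: "lin_fun H \<phi>" and x: "x \<in> hcarrier H"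
  have "ev (\<lambda>u v. \<phi> (hmult H u (hantipode H v))) (hcomult H x) =
      \<phi> (vsum H (map (\<lambda>(u,v). hmult H u (hantipode H v)) (hcomult H x)))"
    by (rule lin_vsum_ev[OF vs \<phi>, symmetric]) (use comult_set[OF x] in auto)
  also have "\<dots> = hcounit H x * \<phi> (hone H)" using antipode_r[OF x] lin_funD(2)[OF \<phi>] by simp
  finally show ?thesis .
qed

lemma ev_coassoc: "trilinear_form H \<tau> \<Longrightarrow> x \<in> hcarrier H \<Longrightarrow>
  ev (\<lambda>u v. ev (\<lambda>a b. \<tau> a b v) (hcomult H u)) (hcomult H x) =
  ev (\<lambda>u v. ev (\<lambda>a b. \<tau> u a b) (hcomult H v)) (hcomult H x)"
  using t3D(3)[OF coassoc] ev3_concat1 ev3_concat2 by metis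

lemma ev_comult_mult: "bilinear_form H H \<gamma> \<Longrightarrow> x \<in> hcarrier H \<Longrightarrow> y \<in> hcarrier H \<Longrightarrow>
  ev \<gamma> (hcomult H (hmult H x y)) = ev (\<lambda>a b. ev (\<lambda>a' b'. \<gamma> (hmult H a a') (hmult H b b')) (hcomult H y)) (hcomult H x)"
  using teqD(3)[OF comult_mult] ev_tprod by metis

lemma ev_comult_one: "bilinear_form H H \<gamma> \<Longrightarrow> ev \<gamma> (hcomult H (hone H)) = \<gamma> (hone H) (hone H)"
  using teqD(3)[OF comult_one] by simp

end

locale cocommL = hopfL +
  assumes cocomm: "\<forall>x\<in>hcarrier H. tensor_eq H H (hcomult H x) (map (\<lambda>(u,v). (v,u)) (hcomult H x))"
begin
lemma ev_cocomm: "bilinear_form H H \<gamma> \<Longrightarrow> x \<in> hcarrier H \<Longrightarrow> ev \<gamma> (hcomult H x) = ev (\<lambda>a b. \<gamma> b a) (hcomult H x)"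
  using teqD(3)[OF cocomm[rule_format]] by simp
end

lemma cocommL_iff: "cocomm_hopf H \<longleftrightarrow> cocommL H"
  unfolding cocomm_hopf_def cocommL_def cocommL_axioms_def hopfL_def by auto

lemma bilinear_cong: "vspace V \<Longrightarrow> vspace W \<Longrightarrow> (\<And>a b. a \<in> hcarrier V \<Longrightarrow> b \<in> hcarrier W \<Longrightarrow> \<beta> a b = \<beta>' a b) \<Longrightarrow>
  bilinear_form V W \<beta>' \<Longrightarrow> bilinear_form V W \<beta>"
  unfolding bilinear_form_def by (auto simp: vs.add_closed vs.scale_closed vs.intro)

lemma lin_fun_cong: "(\<And>a. a \<in> hcarrier V \<Longrightarrow> \<phi> a = \<phi>' a) \<Longrightarrow> vspace V \<Longrightarrow> lin_fun V \<phi>' \<Longrightarrow> lin_fun V \<phi>"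
  unfolding lin_fun_def by (auto simp: vs.add_closed vs.scale_closed vs.intro)

lemma sub_hopf_simps[simp]:
  "hcarrier (sub_hopf H S) = S" "hadd (sub_hopf H S) = hadd H" "hzero (sub_hopf H S) = hzero H"
  "hscale (sub_hopf H S) = hscale H" "hmult (sub_hopf H S) = hmult H" "hone (sub_hopf H S) = hone H"
  "hcounit (sub_hopf H S) = hcounit H" "hantipode (sub_hopf H S) = hantipode H"
  "hcomult (sub_hopf H S) = (\<lambda>x. SOME l. set l \<subseteq> S \<times> S \<and> tensor_eq H H (hcomult H x) l)"
  unfolding sub_hopf_def by simp_all

lemma vsum_sub_hopf[simp]: "vsum (sub_hopf H S) = vsum H"
  unfolding vsum_def by (simp add: fun_eq_iff)

lemma tprod_sub_hopf[simp]: "tprod (sub_hopf H S) = tprod H"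
  unfolding tprod_def by (simp add: fun_eq_iff)

context hopfL begin

lemma scale_lin: "linear_map H H (\<lambda>x. hscale H c x)"
  unfolding linear_map_def by (auto simp: scale_add_r mult.commute)

lemma tprod_set: "set t \<subseteq> hcarrier H \<times> hcarrier H \<Longrightarrow> set t' \<subseteq> hcarrier H \<times> hcarrier H \<Longrightarrow>
  set (tprod H t t') \<subseteq> hcarrier H \<times> hcarrier H"
  unfolding tprod_def by fastforce

lemma bilinear_mult_rr: "bilinear_form H H \<gamma> \<Longrightarrow> a' \<in> hcarrier H \<Longrightarrow> b' \<in> hcarrier H \<Longrightarrow>
  bilinear_form H H (\<lambda>a b. \<gamma> (hmult H a a') (hmult H b b'))"
  by (rule bilinear_comp[OF _ mult_right_lin mult_right_lin])
lemma bilinear_mult_ll: "bilinear_form H H \<gamma> \<Longrightarrow> a \<in> hcarrier H \<Longrightarrow> b \<in> hcarrier H \<Longrightarrow>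
  bilinear_form H H (\<lambda>a' b'. \<gamma> (hmult H a a') (hmult H b b'))"
  by (rule bilinear_comp[OF _ mult_left_lin mult_left_lin])

lemma teq_tprod:
  assumes t1: "tensor_eq H H t1 t1'" and t2: "tensor_eq H H t2 t2'"
  shows "tensor_eq H H (tprod H t1 t2) (tprod H t1' t2')"
proof (rule teqI)
  show "set (tprod H t1 t2) \<subseteq> hcarrier H \<times> hcarrier H" using teqD(1)[OF t1] teqD(1)[OF t2] tprod_set by blast
  show "set (tprod H t1' t2') \<subseteq> hcarrier H \<times> hcarrier H" using teqD(2)[OF t1] teqD(2)[OF t2] tprod_set by blast
  fix \<gamma> assume g: "bilinear_form H H \<gamma>"
  have "ev \<gamma> (tprod H t1 t2) = ev (\<lambda>a b. ev (\<lambda>a' b'. \<gamma> (hmult H a a') (hmult H b b')) t2) t1"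
    by (rule ev_tprod)
  also have "\<dots> = ev (\<lambda>a b. ev (\<lambda>a' b'. \<gamma> (hmult H a a') (hmult H b b')) t2) t1'"
    by (rule teqD(3)[OF t1], rule bilinear_ev, use bilinear_mult_rr[OF g] teqD(1)[OF t2] in auto)
  also have "\<dots> = ev (\<lambda>a' b'. ev (\<lambda>a b. \<gamma> (hmult H a a') (hmult H b b')) t1') t2"
    by (rule ev_ev)
  also have "\<dots> = ev (\<lambda>a' b'. ev (\<lambda>a b. \<gamma> (hmult H a a') (hmult H b b')) t1') t2'"
    by (rule teqD(3)[OF t2], rule bilinear_ev, use bilinear_mult_ll[OF g] teqD(2)[OF t1] in auto)
  also have "\<dots> = ev (\<lambda>a b. ev (\<lambda>a' b'. \<gamma> (hmult H a a') (hmult H b b')) t2') t1'"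
    by (rule ev_ev[symmetric])
  also have "\<dots> = ev \<gamma> (tprod H t1' t2')" by (rule ev_tprod[symmetric])
  finally show "ev \<gamma> (tprod H t1 t2) = ev \<gamma> (tprod H t1' t2')" .
qed

lemma bilin_counit_scale: "bilinear_form H H (\<lambda>a b. \<phi> (hscale H (hcounit H a) b))" if "lin_fun H \<phi>"
  by (rule bilinear_cong[OF vs vs, of _ "\<lambda>a b. hcounit H a * \<phi> b"])
     (use that counit_lin in \<open>auto simp: lin_funD intro: bilinear_prod\<close>)

lemma tri_bil12: "trilinear_form H \<tau> \<Longrightarrow> v \<in> hcarrier H \<Longrightarrow> bilinear_form H H (\<lambda>a b. \<tau> a b v)"
  unfolding trilinear_form_def by blast
lemma tri_bil23: "trilinear_form H \<tau> \<Longrightarrow> u \<in> hcarrier H \<Longrightarrow> bilinear_form H H (\<lambda>a b. \<tau> u a b)"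
  unfolding trilinear_form_def by blast
lemma tri_B1: "trilinear_form H \<tau> \<Longrightarrow> bilinear_form H H (\<lambda>u v. ev (\<lambda>a b. \<tau> a b v) (hcomult H u))"
proof (rule bilinear_formI)
  assume t: "trilinear_form H \<tau>"
  fix y assume "y \<in> hcarrier H" then show "lin_fun H (\<lambda>x. ev (\<lambda>a b. \<tau> a b y) (hcomult H x))"
    using D_lin[OF tri_bil12[OF t]] by blast
next
  assume t: "trilinear_form H \<tau>"
  fix x assume x: "x \<in> hcarrier H" then show "lin_fun H (\<lambda>y. ev (\<lambda>a b. \<tau> a b y) (hcomult H x))"
    using comult_set[OF x] t unfolding trilinear_form_iff by (intro lin_fun_ev) auto
qed
lemma tri_B2: "trilinear_form H \<tau> \<Longrightarrow> bilinear_form H H (\<lambda>u v. ev (\<lambda>a b. \<tau> u a b) (hcomult H v))"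
proof (rule bilinear_formI)
  assume t: "trilinear_form H \<tau>"
  fix y assume y: "y \<in> hcarrier H" then show "lin_fun H (\<lambda>x. ev (\<lambda>a b. \<tau> x a b) (hcomult H y))"
    using comult_set[OF y] t unfolding trilinear_form_iff by (intro lin_fun_ev) auto
next
  assume t: "trilinear_form H \<tau>"
  fix x assume "x \<in> hcarrier H" then show "lin_fun H (\<lambda>y. ev (\<lambda>a b. \<tau> x a b) (hcomult H y))"
    using D_lin[OF tri_bil23[OF t]] by blast
qed

lemma bilin_antipode_mult: "bilinear_form H H (\<lambda>a b. \<phi> (hmult H (hantipode H a) b))" if "lin_fun H \<phi>"
proof (rule bilinear_formI)
  fix y assume "y \<in> hcarrier H"
  then show "lin_fun H (\<lambda>x. \<phi> (hmult H (hantipode H x) y))" using lin_S[OF lin_mult_r[OF that]] by blast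
next
  fix x assume "x \<in> hcarrier H"
  then show "lin_fun H (\<lambda>y. \<phi> (hmult H (hantipode H x) y))" using lin_mult_l[OF that] by simp
qed

lemma bilin_mult_antipode: "bilinear_form H H (\<lambda>a b. \<phi> (hmult H a (hantipode H b)))" if "lin_fun H \<phi>"
proof (rule bilinear_formI)
  fix y assume "y \<in> hcarrier H"
  then show "lin_fun H (\<lambda>x. \<phi> (hmult H x (hantipode H y)))" using lin_mult_r[OF that] by simp
next
  fix x assume "x \<in> hcarrier H"
  then show "lin_fun H (\<lambda>y. \<phi> (hmult H x (hantipode H y)))" using lin_S[OF lin_mult_l[OF that]] by blast
qed

end

context cocommL begin

lemma sub_hopf_main:
  assumes S: "hopf_subalg H S"
  shows "cocomm_hopf (sub_hopf H S) \<and> hopf_hom (sub_hopf H S) H id"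
proof -
  let ?SH = "sub_hopf H S"
  let ?D = "\<lambda>x. SOME l. set l \<subseteq> S \<times> S \<and> tensor_eq H H (hcomult H x) l"
  have Sc: "S \<subseteq> hcarrier H" using S unfolding hopf_subalg_def by auto
  have Sz: "hzero H \<in> S" and Sa: "\<And>x y. x \<in> S \<Longrightarrow> y \<in> S \<Longrightarrow> hadd H x y \<in> S"
    and Ss: "\<And>c x. x \<in> S \<Longrightarrow> hscale H c x \<in> S" and S1: "hone H \<in> S"
    and Sm: "\<And>x y. x \<in> S \<Longrightarrow> y \<in> S \<Longrightarrow> hmult H x y \<in> S"
    and SS: "\<And>x. x \<in> S \<Longrightarrow> hantipode H x \<in> S"
    using S unfolding hopf_subalg_def by auto
  have Sx: "x \<in> S \<Longrightarrow> x \<in> hcarrier H" for x using Sc by blast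
  have Dspec: "set (?D x) \<subseteq> S \<times> S \<and> tensor_eq H H (hcomult H x) (?D x)" if "x \<in> S" for x
    by (rule someI_ex) (use S that in \<open>auto simp: hopf_subalg_def\<close>)
  have Dset: "set (?D x) \<subseteq> S \<times> S" and Dteq: "tensor_eq H H (hcomult H x) (?D x)" if "x \<in> S" for x
    using Dspec[OF that] by auto
  have Dmem: "(u,v) \<in> set (?D x) \<Longrightarrow> x \<in> S \<Longrightarrow> u \<in> S \<and> v \<in> S" for u v x using Dset by blast
  have sub: "subsp H S" unfolding subsp_def using Sc Sz Sa Ss by auto
  have sr: "subrec ?SH H" unfolding subrec_def using sub by simp
  have restr: "tensor_eq ?SH ?SH xs ys" if "set xs \<subseteq> S \<times> S" "set ys \<subseteq> S \<times> S" "tensor_eq H H xs ys" for xs ys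
    using teq_restrict[OF vs vs sr sr] that by simp
  have vsSH: "vspace ?SH"
    unfolding vspace_def
  proof (simp only: sub_hopf_simps, intro conjI ballI allI)
    show "hzero H \<in> S" by (rule Sz)
  next
    fix x y assume "x \<in> S" "y \<in> S" then show "hadd H x y \<in> S" by (rule Sa)
  next
    fix c x assume "x \<in> S" then show "hscale H c x \<in> S" by (rule Ss)
  next
    fix x y z assume "x \<in> S" "y \<in> S" "z \<in> S"
    then show "hadd H (hadd H x y) z = hadd H x (hadd H y z)" using Sx add_assoc by blast
  next
    fix x y assume "x \<in> S" "y \<in> S" then show "hadd H x y = hadd H y x" using Sx add_comm by blast
  next
    fix x assume "x \<in> S" then show "hadd H (hzero H) x = x" using Sx by simp
  next
    fix x assume x: "x \<in> S"
    then have "hadd H x (hscale H (-1) x) = hzero H" using Sx by simp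
    then show "\<exists>y\<in>S. hadd H x y = hzero H" using Ss x by blast
  next
    fix c x y assume "x \<in> S" "y \<in> S"
    then show "hscale H c (hadd H x y) = hadd H (hscale H c x) (hscale H c y)" using Sx scale_add_r by blast
  next
    fix c d x assume "x \<in> S"
    then show "hscale H (c + d) x = hadd H (hscale H c x) (hscale H d x)" using Sx scale_add_l by blast
  next
    fix c d x assume "x \<in> S"
    then show "hscale H (c * d) x = hscale H c (hscale H d x)" using Sx by simp
  next
    fix x assume "x \<in> S" then show "hscale H 1 x = x" using Sx by simp
  qed
  have kalgSH: "k_algebra ?SH"
    unfolding k_algebra_def using vsSH S1 Sm Sx mult_assoc mult_add_l mult_add_r mult_scale_l mult_scale_r
    by simp
  have kcoalgSH: "k_coalgebra ?SH"
    unfolding k_coalgebra_def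
  proof (simp only: sub_hopf_simps vsum_sub_hopf, intro conjI ballI allI vsSH)
    fix x assume x: "x \<in> S" then show "set (?D x) \<subseteq> S \<times> S" by (rule Dset)
  next
    fix x y assume x: "x \<in> S" and y: "y \<in> S"
    show "tensor_eq ?SH ?SH (?D (hadd H x y)) (?D x @ ?D y)"
    proof (rule restr)
      show "set (?D (hadd H x y)) \<subseteq> S \<times> S" using Dset Sa x y by blast
      show "set (?D x @ ?D y) \<subseteq> S \<times> S" using Dset x y by auto
      have "tensor_eq H H (?D (hadd H x y)) (hcomult H (hadd H x y))" using teq_sym[OF Dteq] Sa x y by blast
      also have "tensor_eq H H (hcomult H (hadd H x y)) (hcomult H x @ hcomult H y)" using comult_add Sx x y by blast
      moreover have "tensor_eq H H (hcomult H x @ hcomult H y) (?D x @ ?D y)" using teq_append Dteq x y by blast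
      ultimately show "tensor_eq H H (?D (hadd H x y)) (?D x @ ?D y)" using teq_trans by blast
    qed
  next
    fix c x assume x: "x \<in> S"
    show "tensor_eq ?SH ?SH (?D (hscale H c x)) (map (\<lambda>(u,v). (hscale H c u, v)) (?D x))"
    proof (rule restr)
      show "set (?D (hscale H c x)) \<subseteq> S \<times> S" using Dset Ss x by blast
      show "set (map (\<lambda>(u,v). (hscale H c u, v)) (?D x)) \<subseteq> S \<times> S" using Dset[OF x] Ss by auto
      have "tensor_eq H H (?D (hscale H c x)) (hcomult H (hscale H c x))" using teq_sym[OF Dteq] Ss x by blast
      moreover have "tensor_eq H H (hcomult H (hscale H c x)) (map (\<lambda>(u,v). (hscale H c u, v)) (hcomult H x))"
        using comult_scale Sx x by blast
      moreover have "tensor_eq H H (map (\<lambda>(u,v). (hscale H c u, v)) (hcomult H x)) (map (\<lambda>(u,v). (hscale H c u, v)) (?D x))"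
        using teq_map[OF Dteq[OF x] scale_lin id_lin] by simp
      ultimately show "tensor_eq H H (?D (hscale H c x)) (map (\<lambda>(u,v). (hscale H c u, v)) (?D x))" using teq_trans by blast
    qed
  next
    fix x y assume "x \<in> S" "y \<in> S" then show "hcounit H (hadd H x y) = hcounit H x + hcounit H y"
      using counit_add Sx by blast
  next
    fix c x assume "x \<in> S" then show "hcounit H (hscale H c x) = c * hcounit H x" using counit_scale Sx by blast
  next
    fix x assume x: "x \<in> S"
    show "tensor3_eq ?SH (concat (map (\<lambda>(u,v). map (\<lambda>(u1,u2). (u1,u2,v)) (?D u)) (?D x)))
        (concat (map (\<lambda>(u,v). map (\<lambda>(v1,v2). (u,v1,v2)) (?D v)) (?D x)))"
    proof (rule t3_restrict[OF vs sr])
      show s1: "set (concat (map (\<lambda>(u,v). map (\<lambda>(u1,u2). (u1,u2,v)) (?D u)) (?D x))) \<subseteq> hcarrier ?SH \<times> hcarrier ?SH \<times> hcarrier ?SH"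
        using Dmem x by fastforce
      show s2: "set (concat (map (\<lambda>(u,v). map (\<lambda>(v1,v2). (u,v1,v2)) (?D v)) (?D x))) \<subseteq> hcarrier ?SH \<times> hcarrier ?SH \<times> hcarrier ?SH"
        using Dmem x by fastforce
      show "tensor3_eq H (concat (map (\<lambda>(u,v). map (\<lambda>(u1,u2). (u1,u2,v)) (?D u)) (?D x)))
        (concat (map (\<lambda>(u,v). map (\<lambda>(v1,v2). (u,v1,v2)) (?D v)) (?D x)))"
      proof (rule t3I)
        have SSS: "S \<times> S \<times> S \<subseteq> hcarrier H \<times> hcarrier H \<times> hcarrier H" using Sc by auto
        show "set (concat (map (\<lambda>(u,v). map (\<lambda>(u1,u2). (u1,u2,v)) (?D u)) (?D x))) \<subseteq> hcarrier H \<times> hcarrier H \<times> hcarrier H"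
          using order_trans[OF s1[unfolded sub_hopf_simps] SSS] .
        show "set (concat (map (\<lambda>(u,v). map (\<lambda>(v1,v2). (u,v1,v2)) (?D v)) (?D x))) \<subseteq> hcarrier H \<times> hcarrier H \<times> hcarrier H"
          using order_trans[OF s2[unfolded sub_hopf_simps] SSS] .
        fix \<tau> assume t: "trilinear_form H \<tau>"
        have "ev3 \<tau> (concat (map (\<lambda>(u,v). map (\<lambda>(u1,u2). (u1,u2,v)) (?D u)) (?D x)))
            = ev (\<lambda>u v. ev (\<lambda>a b. \<tau> a b v) (?D u)) (?D x)" by (rule ev3_concat1)
        also have "\<dots> = ev (\<lambda>u v. ev (\<lambda>a b. \<tau> a b v) (hcomult H u)) (?D x)"
        proof (rule ev_cong)
          fix u v assume "(u,v) \<in> set (?D x)"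
          then have u: "u \<in> S" and v: "v \<in> S" using Dmem x by auto
          show "ev (\<lambda>a b. \<tau> a b v) (?D u) = ev (\<lambda>a b. \<tau> a b v) (hcomult H u)"
            using teqD(3)[OF Dteq[OF u] tri_bil12[OF t Sx[OF v]]] by simp
        qed
        also have "\<dots> = ev (\<lambda>u v. ev (\<lambda>a b. \<tau> a b v) (hcomult H u)) (hcomult H x)"
          using teqD(3)[OF Dteq[OF x] tri_B1[OF t]] by simp
        also have "\<dots> = ev (\<lambda>u v. ev (\<lambda>a b. \<tau> u a b) (hcomult H v)) (hcomult H x)"
          by (rule ev_coassoc[OF t Sx[OF x]])
        also have "\<dots> = ev (\<lambda>u v. ev (\<lambda>a b. \<tau> u a b) (hcomult H v)) (?D x)"
          using teqD(3)[OF Dteq[OF x] tri_B2[OF t]] by simp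
        also have "\<dots> = ev (\<lambda>u v. ev (\<lambda>a b. \<tau> u a b) (?D v)) (?D x)"
        proof (rule ev_cong)
          fix u v assume "(u,v) \<in> set (?D x)"
          then have u: "u \<in> S" and v: "v \<in> S" using Dmem x by auto
          show "ev (\<lambda>a b. \<tau> u a b) (hcomult H v) = ev (\<lambda>a b. \<tau> u a b) (?D v)"
            using teqD(3)[OF Dteq[OF v] tri_bil23[OF t Sx[OF u]]] by simp
        qed
        also have "\<dots> = ev3 \<tau> (concat (map (\<lambda>(u,v). map (\<lambda>(v1,v2). (u,v1,v2)) (?D v)) (?D x)))"
          by (rule ev3_concat2[symmetric])
        finally show "ev3 \<tau> (concat (map (\<lambda>(u,v). map (\<lambda>(u1,u2). (u1,u2,v)) (?D u)) (?D x))) =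
           ev3 \<tau> (concat (map (\<lambda>(u,v). map (\<lambda>(v1,v2). (u,v1,v2)) (?D v)) (?D x)))" .
      qed
    qed
  next
    fix x assume x: "x \<in> S"
    have "vsum H (map (\<lambda>(u,v). hscale H (hcounit H u) v) (?D x)) = vsum H (map (\<lambda>(u,v). hscale H (hcounit H u) v) (hcomult H x))"
      by (rule teq_vsum[OF vs _ bilin_counit_scale teq_sym[OF Dteq[OF x]]]) auto
    then show "vsum H (map (\<lambda>(u,v). hscale H (hcounit H u) v) (?D x)) = x" using counit_l Sx x by simp
  next
    fix x assume x: "x \<in> S"
    have "vsum H (map (\<lambda>(u,v). hscale H (hcounit H v) u) (?D x)) = vsum H (map (\<lambda>(u,v). hscale H (hcounit H v) u) (hcomult H x))"
      by (rule teq_vsum[OF vs _ _ teq_sym[OF Dteq[OF x]]])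
         (auto intro!: bilinear_swap[OF bilin_counit_scale, simplified])
    then show "vsum H (map (\<lambda>(u,v). hscale H (hcounit H v) u) (?D x)) = x" using counit_r Sx x by simp
  qed
  have tpS: "set (tprod H t t') \<subseteq> S \<times> S" if "set t \<subseteq> S \<times> S" "set t' \<subseteq> S \<times> S" for t t'
    using that Sm unfolding tprod_def by fastforce
  have hopfSH: "hopf ?SH"
    unfolding hopf_def
  proof (simp only: sub_hopf_simps vsum_sub_hopf, intro conjI ballI allI kalgSH kcoalgSH)
    fix x y assume x: "x \<in> S" and y: "y \<in> S"
    have "tensor_eq ?SH ?SH (?D (hmult H x y)) (tprod H (?D x) (?D y))"
    proof (rule restr)
      show "set (?D (hmult H x y)) \<subseteq> S \<times> S" using Dset Sm x y by blast
      show "set (tprod H (?D x) (?D y)) \<subseteq> S \<times> S" using tpS Dset x y by blast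
      have "tensor_eq H H (?D (hmult H x y)) (hcomult H (hmult H x y))" using teq_sym[OF Dteq] Sm x y by blast
      moreover have "tensor_eq H H (hcomult H (hmult H x y)) (tprod H (hcomult H x) (hcomult H y))"
        using comult_mult Sx x y by blast
      moreover have "tensor_eq H H (tprod H (hcomult H x) (hcomult H y)) (tprod H (?D x) (?D y))"
        using teq_tprod Dteq x y by blast
      ultimately show "tensor_eq H H (?D (hmult H x y)) (tprod H (?D x) (?D y))" using teq_trans by blast
    qed
    then show "tensor_eq ?SH ?SH (?D (hmult H x y))
        (concat (map (\<lambda>(u,v). map (\<lambda>(u',v'). (hmult H u u', hmult H v v')) (?D y)) (?D x)))"
      unfolding tprod_def .
  next
    show "tensor_eq ?SH ?SH (?D (hone H)) [(hone H, hone H)]"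
    proof (rule restr)
      show "set (?D (hone H)) \<subseteq> S \<times> S" using Dset S1 by blast
      show "set [(hone H, hone H)] \<subseteq> S \<times> S" using S1 by auto
      show "tensor_eq H H (?D (hone H)) [(hone H, hone H)]" using teq_trans[OF teq_sym[OF Dteq[OF S1]] comult_one] .
    qed
  next
    fix x y assume "x \<in> S" "y \<in> S" then show "hcounit H (hmult H x y) = hcounit H x * hcounit H y"
      using counit_mult Sx by blast
  next
    show "hcounit H (hone H) = 1" by simp
  next
    show "linear_map ?SH ?SH (hantipode H)" unfolding linear_map_def
      using SS S_add S_scale Sx by auto
  next
    fix x assume x: "x \<in> S"
    have "vsum H (map (\<lambda>(u,v). hmult H (hantipode H u) v) (?D x)) = vsum H (map (\<lambda>(u,v). hmult H (hantipode H u) v) (hcomult H x))"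
      by (rule teq_vsum[OF vs _ bilin_antipode_mult teq_sym[OF Dteq[OF x]]]) auto
    then show "vsum H (map (\<lambda>(u,v). hmult H (hantipode H u) v) (?D x)) = hscale H (hcounit H x) (hone H)"
      using antipode_l Sx x by simp
  next
    fix x assume x: "x \<in> S"
    have "vsum H (map (\<lambda>(u,v). hmult H u (hantipode H v)) (?D x)) = vsum H (map (\<lambda>(u,v). hmult H u (hantipode H v)) (hcomult H x))"
      by (rule teq_vsum[OF vs _ bilin_mult_antipode teq_sym[OF Dteq[OF x]]]) auto
    then show "vsum H (map (\<lambda>(u,v). hmult H u (hantipode H v)) (?D x)) = hscale H (hcounit H x) (hone H)"
      using antipode_r Sx x by simp
  qed
  have cocSH: "\<forall>x\<in>S. tensor_eq ?SH ?SH (?D x) (map (\<lambda>(u,v). (v,u)) (?D x))"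
  proof
    fix x assume x: "x \<in> S"
    show "tensor_eq ?SH ?SH (?D x) (map (\<lambda>(u,v). (v,u)) (?D x))"
    proof (rule restr)
      show "set (?D x) \<subseteq> S \<times> S" using Dset x by blast
      show "set (map (\<lambda>(u,v). (v,u)) (?D x)) \<subseteq> S \<times> S" using Dset[OF x] by auto
      have "tensor_eq H H (?D x) (hcomult H x)" using teq_sym[OF Dteq[OF x]] .
      moreover have "tensor_eq H H (hcomult H x) (map (\<lambda>(u,v). (v,u)) (hcomult H x))" using cocomm Sx x by blast
      moreover have "tensor_eq H H (map (\<lambda>(u,v). (v,u)) (hcomult H x)) (map (\<lambda>(u,v). (v,u)) (?D x))"
        using teq_swap[OF Dteq[OF x]] .
      ultimately show "tensor_eq H H (?D x) (map (\<lambda>(u,v). (v,u)) (?D x))" using teq_trans by blast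
    qed
  qed
  have "cocomm_hopf ?SH" unfolding cocomm_hopf_def using hopfSH cocSH by simp
  moreover have "hopf_hom ?SH H id"
    unfolding hopf_hom_def linear_map_def using Sx Dteq by auto
  ultimately show ?thesis by blast
qed

end

context hopfL begin

lemma S_one: "hantipode H (hone H) = hone H"
proof -
  have "vsum H (map (\<lambda>(u,v). hmult H (hantipode H u) v) (hcomult H (hone H))) =
        vsum H (map (\<lambda>(u,v). hmult H (hantipode H u) v) [(hone H, hone H)])"
    by (rule teq_vsum[OF vs _ bilin_antipode_mult comult_one]) auto
  then show ?thesis using antipode_l[OF one_closed] by simp
qed

lemma counit_S: assumes x: "x \<in> hcarrier H" shows "hcounit H (hantipode H x) = hcounit H x"
proof -
  have "hcounit H x = ev (\<lambda>u v. hcounit H (hmult H (hantipode H u) v)) (hcomult H x)"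
    using ev_antipode_l[OF counit_lin x] by simp
  also have "\<dots> = ev (\<lambda>u v. hcounit H (hantipode H u) * hcounit H v) (hcomult H x)"
    using comult_set[OF x] by (intro ev_cong) (auto simp: counit_mult)
  also have "\<dots> = hcounit H (hantipode H x)"
    by (rule ev_counit_r[OF lin_S[OF counit_lin] x])
  finally show ?thesis by simp
qed

definition tlin :: "('a \<Rightarrow> ('a \<times> 'a) list) \<Rightarrow> bool" where
  "tlin F \<longleftrightarrow> (\<forall>x\<in>hcarrier H. set (F x) \<subseteq> hcarrier H \<times> hcarrier H) \<and>
     (\<forall>\<gamma>. bilinear_form H H \<gamma> \<longrightarrow> lin_fun H (\<lambda>x. ev \<gamma> (F x)))"

definition conv :: "('a \<Rightarrow> ('a \<times> 'a) list) \<Rightarrow> ('a \<Rightarrow> ('a \<times> 'a) list) \<Rightarrow> 'a \<Rightarrow> ('a \<times> 'a) list" where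
  "conv F G x = concat (map (\<lambda>(a,b). tprod H (F a) (G b)) (hcomult H x))"

definition teqf :: "('a \<Rightarrow> ('a \<times> 'a) list) \<Rightarrow> ('a \<Rightarrow> ('a \<times> 'a) list) \<Rightarrow> bool" where
  "teqf F G \<longleftrightarrow> (\<forall>x\<in>hcarrier H. tensor_eq H H (F x) (G x))"

definition Eu :: "'a \<Rightarrow> ('a \<times> 'a) list" where
  "Eu x = [(hscale H (hcounit H x) (hone H), hone H)]"

lemma teqf_trans: "teqf F G \<Longrightarrow> teqf G K \<Longrightarrow> teqf F K"
  unfolding teqf_def using teq_trans by blast
lemma teqf_sym: "teqf F G \<Longrightarrow> teqf G F"
  unfolding teqf_def using teq_sym by blast

lemma tlinD: "tlin F \<Longrightarrow> x \<in> hcarrier H \<Longrightarrow> set (F x) \<subseteq> hcarrier H \<times> hcarrier H"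
  "tlin F \<Longrightarrow> bilinear_form H H \<gamma> \<Longrightarrow> lin_fun H (\<lambda>x. ev \<gamma> (F x))"
  unfolding tlin_def by auto

lemma tlin_mem: "tlin F \<Longrightarrow> x \<in> hcarrier H \<Longrightarrow> (u,v) \<in> set (F x) \<Longrightarrow> u \<in> hcarrier H \<and> v \<in> hcarrier H"
  using tlinD(1) by blast

lemma ev_conv: "ev \<gamma> (conv F G x) = ev (\<lambda>a b. ev \<gamma> (tprod H (F a) (G b))) (hcomult H x)"
  unfolding conv_def by (simp add: ev_concat_map)

lemma bilinear_tp:
  assumes F: "tlin F" and G: "tlin G" and g: "bilinear_form H H \<gamma>"
  shows "bilinear_form H H (\<lambda>a b. ev \<gamma> (tprod H (F a) (G b)))"
proof (rule bilinear_formI)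
  fix b assume b: "b \<in> hcarrier H"
  have "bilinear_form H H (\<lambda>u v. ev (\<lambda>u' v'. \<gamma> (hmult H u u') (hmult H v v')) (G b))"
    by (rule bilinear_ev) (use bilinear_mult_rr[OF g] tlin_mem[OF G b] in auto)
  from tlinD(2)[OF F this] show "lin_fun H (\<lambda>a. ev \<gamma> (tprod H (F a) (G b)))"
    by (simp add: ev_tprod)
next
  fix a assume a: "a \<in> hcarrier H"
  have "bilinear_form H H (\<lambda>u' v'. ev (\<lambda>u v. \<gamma> (hmult H u u') (hmult H v v')) (F a))"
    by (rule bilinear_ev) (use bilinear_mult_ll[OF g] tlin_mem[OF F a] in auto)
  from tlinD(2)[OF G this] show "lin_fun H (\<lambda>b. ev \<gamma> (tprod H (F a) (G b)))"
    by (simp add: ev_tprod ev_ev[of _ _ "F a"])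
qed

lemma tlin_conv: assumes F: "tlin F" and G: "tlin G" shows "tlin (conv F G)"
  unfolding tlin_def
proof (intro conjI ballI allI impI)
  fix x assume x: "x \<in> hcarrier H"
  show "set (conv F G x) \<subseteq> hcarrier H \<times> hcarrier H"
  proof
    fix z assume "z \<in> set (conv F G x)"
    then obtain a b where ab: "(a,b) \<in> set (hcomult H x)" and z: "z \<in> set (tprod H (F a) (G b))"
      unfolding conv_def by auto
    have "a \<in> hcarrier H" "b \<in> hcarrier H" using comult_mem[OF x ab] by auto
    then have "set (tprod H (F a) (G b)) \<subseteq> hcarrier H \<times> hcarrier H"
      using tprod_set tlinD(1)[OF F] tlinD(1)[OF G] by blast
    then show "z \<in> hcarrier H \<times> hcarrier H" using z by blast
  qed
next
  fix \<gamma> assume g: "bilinear_form H H \<gamma>"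
  show "lin_fun H (\<lambda>x. ev \<gamma> (conv F G x))"
    unfolding ev_conv by (rule D_lin[OF bilinear_tp[OF F G g]])
qed

lemma conv_cong:
  assumes F: "tlin F" and G: "tlin G" and F': "tlin F'" and G': "tlin G'"
    and e1: "teqf F F'" and e2: "teqf G G'"
  shows "teqf (conv F G) (conv F' G')"
  unfolding teqf_def
proof
  fix x assume x: "x \<in> hcarrier H"
  show "tensor_eq H H (conv F G x) (conv F' G' x)"
  proof (rule teqI)
    show "set (conv F G x) \<subseteq> hcarrier H \<times> hcarrier H" using tlinD(1)[OF tlin_conv[OF F G] x] .
    show "set (conv F' G' x) \<subseteq> hcarrier H \<times> hcarrier H" using tlinD(1)[OF tlin_conv[OF F' G'] x] .
    fix \<gamma> assume g: "bilinear_form H H \<gamma>"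
    show "ev \<gamma> (conv F G x) = ev \<gamma> (conv F' G' x)"
      unfolding ev_conv
    proof (rule ev_cong)
      fix a b assume "(a,b) \<in> set (hcomult H x)"
      then have a: "a \<in> hcarrier H" and b: "b \<in> hcarrier H" using comult_mem[OF x] by auto
      show "ev \<gamma> (tprod H (F a) (G b)) = ev \<gamma> (tprod H (F' a) (G' b))"
        using teqD(3)[OF teq_tprod[OF e1[unfolded teqf_def, rule_format, OF a] e2[unfolded teqf_def, rule_format, OF b]] g] .
    qed
  qed
qed

lemma tprod_append_l: "tprod H (xs @ ys) t = tprod H xs t @ tprod H ys t"
  unfolding tprod_def by simp
lemma tprod_concat_l: "tprod H (concat ts) t = concat (map (\<lambda>s. tprod H s t) ts)"
  by (induction ts) (auto simp: tprod_append_l tprod_def)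
lemma ev_tprod_concat_r: "ev \<gamma> (tprod H t (concat ts)) = sum_list (map (\<lambda>s. ev \<gamma> (tprod H t s)) ts)"
  unfolding ev_tprod ev_concat by (simp add: ev_sum_list)

lemma ev_tprod3l: "ev \<gamma> (tprod H (tprod H t1 t2) t3) =
  ev (\<lambda>a1 b1. ev (\<lambda>a2 b2. ev (\<lambda>a3 b3. \<gamma> (hmult H (hmult H a1 a2) a3) (hmult H (hmult H b1 b2) b3)) t3) t2) t1"
  unfolding ev_tprod[of \<gamma>] by (simp add: ev_tprod)
lemma ev_tprod3r: "ev \<gamma> (tprod H t1 (tprod H t2 t3)) =
  ev (\<lambda>a1 b1. ev (\<lambda>a2 b2. ev (\<lambda>a3 b3. \<gamma> (hmult H a1 (hmult H a2 a3)) (hmult H b1 (hmult H b2 b3))) t3) t2) t1"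
  unfolding ev_tprod[of \<gamma> _ "tprod H t2 t3"] by (simp add: ev_tprod)

lemma ev_tprod_assoc:
  assumes "set t1 \<subseteq> hcarrier H \<times> hcarrier H" "set t2 \<subseteq> hcarrier H \<times> hcarrier H" "set t3 \<subseteq> hcarrier H \<times> hcarrier H"
  shows "ev \<gamma> (tprod H (tprod H t1 t2) t3) = ev \<gamma> (tprod H t1 (tprod H t2 t3))"
  unfolding ev_tprod3l ev_tprod3r
  by (intro ev_cong) (use assms in \<open>auto simp: mult_assoc subset_iff\<close>)

lemma teqf_refl: "tlin F \<Longrightarrow> teqf F F"
  unfolding teqf_def using tlinD(1) teq_refl by blast

lemma sum_list_map_pair: "sum_list (map f (map (\<lambda>(a,b). g a b) xs)) = ev (\<lambda>a b. f (g a b)) xs"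
  by (induction xs) auto

lemma bil_tp_r: "bilinear_form H H \<gamma> \<Longrightarrow> set t \<subseteq> hcarrier H \<times> hcarrier H \<Longrightarrow>
  bilinear_form H H (\<lambda>u w. ev (\<lambda>a3 b3. \<gamma> (hmult H u a3) (hmult H w b3)) t)"
  by (rule bilinear_ev) (use bilinear_mult_rr in auto)

lemma lin_tprod_right:
  assumes K: "tlin K" and T: "set T \<subseteq> hcarrier H \<times> hcarrier H" and g: "bilinear_form H H \<gamma>"
  shows "lin_fun H (\<lambda>v. ev \<gamma> (tprod H T (K v)))"
proof -
  have "bilinear_form H H (\<lambda>a3 b3. ev (\<lambda>u w. \<gamma> (hmult H u a3) (hmult H w b3)) T)"
    by (rule bilinear_ev) (use bilinear_mult_ll[OF g] T in auto)
  from tlinD(2)[OF K this] show ?thesis by (simp add: ev_tprod ev_ev[of _ _ T])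
qed

lemma ev_tprod_append_r: "ev \<gamma> (tprod H t (ys @ zs)) = ev \<gamma> (tprod H t ys) + ev \<gamma> (tprod H t zs)"
  unfolding ev_tprod by (simp add: ev_add)

lemma ev_tprod_conv_l_gen: "ev \<gamma> (tprod H (concat (map (\<lambda>(a,b). tprod H (F a) (G b)) xs)) t) = ev (\<lambda>a b. ev \<gamma> (tprod H (tprod H (F a) (G b)) t)) xs"
proof (induction xs)
  case (Cons p xs) then show ?case by (cases p) (simp add: tprod_append_l)
qed (simp add: tprod_def)

lemma ev_tprod_conv_r_gen: "ev \<gamma> (tprod H t (concat (map (\<lambda>(a,b). tprod H (F a) (G b)) xs))) = ev (\<lambda>a b. ev \<gamma> (tprod H t (tprod H (F a) (G b)))) xs"
proof (induction xs)
  case (Cons p xs) then show ?case by (cases p) (simp add: ev_tprod_append_r)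
next
  case Nil then show ?case by (simp add: ev_tprod)
qed

lemma ev_tprod_conv_l: "ev \<gamma> (tprod H (conv F G u) t) = ev (\<lambda>a b. ev \<gamma> (tprod H (tprod H (F a) (G b)) t)) (hcomult H u)"
  unfolding conv_def by (rule ev_tprod_conv_l_gen)

lemma ev_tprod_conv_r: "ev \<gamma> (tprod H t (conv F G u)) = ev (\<lambda>a b. ev \<gamma> (tprod H t (tprod H (F a) (G b)))) (hcomult H u)"
  unfolding conv_def by (rule ev_tprod_conv_r_gen)

lemma conv_assoc:
  assumes F: "tlin F" and G: "tlin G" and K: "tlin K"
  shows "teqf (conv (conv F G) K) (conv F (conv G K))"
  unfolding teqf_def
proof
  fix x assume x: "x \<in> hcarrier H"
  show "tensor_eq H H (conv (conv F G) K x) (conv F (conv G K) x)"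
  proof (rule teqI)
    show "set (conv (conv F G) K x) \<subseteq> hcarrier H \<times> hcarrier H" using tlinD(1)[OF tlin_conv[OF tlin_conv[OF F G] K] x] .
    show "set (conv F (conv G K) x) \<subseteq> hcarrier H \<times> hcarrier H" using tlinD(1)[OF tlin_conv[OF F tlin_conv[OF G K]] x] .
    fix \<gamma> assume g: "bilinear_form H H \<gamma>"
    define \<tau> where "\<tau> a b v = ev \<gamma> (tprod H (tprod H (F a) (G b)) (K v))" for a b v
    have tri: "trilinear_form H \<tau>"
    proof (rule trilinear_formI)
      fix b v assume b: "b \<in> hcarrier H" and v: "v \<in> hcarrier H"
      have "bilinear_form H H (\<lambda>a b. ev (\<lambda>u w. ev (\<lambda>a3 b3. \<gamma> (hmult H u a3) (hmult H w b3)) (K v)) (tprod H (F a) (G b)))"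
        by (rule bilinear_tp[OF F G bil_tp_r[OF g tlinD(1)[OF K v]]])
      from bilinear_formD(1)[OF this b] show "lin_fun H (\<lambda>a. \<tau> a b v)"
        unfolding \<tau>_def by (simp add: ev_tprod[of \<gamma>])
    next
      fix a v assume a: "a \<in> hcarrier H" and v: "v \<in> hcarrier H"
      have "bilinear_form H H (\<lambda>a b. ev (\<lambda>u w. ev (\<lambda>a3 b3. \<gamma> (hmult H u a3) (hmult H w b3)) (K v)) (tprod H (F a) (G b)))"
        by (rule bilinear_tp[OF F G bil_tp_r[OF g tlinD(1)[OF K v]]])
      from bilinear_formD(2)[OF this a] show "lin_fun H (\<lambda>b. \<tau> a b v)"
        unfolding \<tau>_def by (simp add: ev_tprod[of \<gamma>])
    next
      fix a b assume a: "a \<in> hcarrier H" and b: "b \<in> hcarrier H"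
      have "set (tprod H (F a) (G b)) \<subseteq> hcarrier H \<times> hcarrier H"
        using tprod_set tlinD(1)[OF F a] tlinD(1)[OF G b] by blast
      from lin_tprod_right[OF K this g] show "lin_fun H (\<lambda>v. \<tau> a b v)" unfolding \<tau>_def .
    qed
    have "ev \<gamma> (conv (conv F G) K x) = ev (\<lambda>u v. ev \<gamma> (tprod H (conv F G u) (K v))) (hcomult H x)"
      by (rule ev_conv)
    also have "\<dots> = ev (\<lambda>u v. ev (\<lambda>a b. \<tau> a b v) (hcomult H u)) (hcomult H x)"
      unfolding \<tau>_def ev_tprod_conv_l ..
    also have "\<dots> = ev (\<lambda>u v. ev (\<lambda>a b. \<tau> u a b) (hcomult H v)) (hcomult H x)"
      by (rule ev_coassoc[OF tri x])
    also have "\<dots> = ev (\<lambda>u v. ev \<gamma> (tprod H (F u) (conv G K v))) (hcomult H x)"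
    proof (rule ev_cong)
      fix u v assume "(u,v) \<in> set (hcomult H x)"
      then have u: "u \<in> hcarrier H" and v: "v \<in> hcarrier H" using comult_mem[OF x] by auto
      show "ev (\<lambda>a b. \<tau> u a b) (hcomult H v) = ev \<gamma> (tprod H (F u) (conv G K v))"
        unfolding ev_tprod_conv_r \<tau>_def
        by (rule ev_cong, rule ev_tprod_assoc)
           (use tlinD(1)[OF F u] tlinD(1)[OF G] tlinD(1)[OF K] comult_mem[OF v] in auto)
    qed
    also have "\<dots> = ev \<gamma> (conv F (conv G K) x)" by (rule ev_conv[symmetric])
    finally show "ev \<gamma> (conv (conv F G) K x) = ev \<gamma> (conv F (conv G K) x)" .
  qed
qed

lemma ev_tprod_E_r:
  assumes t: "set t \<subseteq> hcarrier H \<times> hcarrier H" and g: "bilinear_form H H \<gamma>" and b: "b \<in> hcarrier H"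
  shows "ev \<gamma> (tprod H t (Eu b)) = hcounit H b * ev \<gamma> t"
proof -
  have "ev \<gamma> (tprod H t (Eu b)) = ev (\<lambda>u v. hcounit H b * \<gamma> u v) t"
    unfolding Eu_def ev_tprod using t g unfolding bilinear_form_def
    by (intro ev_cong) (auto simp: mult_scale_r)
  then show ?thesis by (simp add: ev_cmult)
qed

lemma ev_tprod_E_l:
  assumes t: "set t \<subseteq> hcarrier H \<times> hcarrier H" and g: "bilinear_form H H \<gamma>" and b: "b \<in> hcarrier H"
  shows "ev \<gamma> (tprod H (Eu b) t) = hcounit H b * ev \<gamma> t"
proof -
  have "ev \<gamma> (tprod H (Eu b) t) = ev (\<lambda>u v. hcounit H b * \<gamma> u v) t"
    unfolding Eu_def ev_tprod using t g unfolding bilinear_form_def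
    by (simp add: mult_scale_l ev_cmult[symmetric]) (intro ev_cong, auto simp: mult_scale_l)
  then show ?thesis by (simp add: ev_cmult)
qed

lemma ev_Eu: "bilinear_form H H \<gamma> \<Longrightarrow> x \<in> hcarrier H \<Longrightarrow> ev \<gamma> (Eu x) = hcounit H x * \<gamma> (hone H) (hone H)"
  unfolding Eu_def bilinear_form_def by simp

lemma tlin_Eu: "tlin Eu"
  unfolding tlin_def
proof (intro conjI ballI allI impI)
  fix x assume "x \<in> hcarrier H" then show "set (Eu x) \<subseteq> hcarrier H \<times> hcarrier H" unfolding Eu_def by simp
next
  fix \<gamma> assume g: "bilinear_form H H \<gamma>"
  show "lin_fun H (\<lambda>x. ev \<gamma> (Eu x))"
    by (rule lin_fun_cong[OF _ vs lin_fun_cmult_r[OF counit_lin]]) (use ev_Eu[OF g] in blast)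
qed

lemma tlin_D: "tlin (hcomult H)"
  unfolding tlin_def using comult_set D_lin by blast
lemma tlin_L: "tlin (\<lambda>x. hcomult H (hantipode H x))"
  unfolding tlin_def using comult_set D_lin lin_fun_comp[OF _ antipode_lin] by auto
lemma tlin_R: "tlin (\<lambda>x. map (\<lambda>(a,b). (hantipode H a, hantipode H b)) (hcomult H x))"
  unfolding tlin_def
proof (intro conjI ballI allI impI)
  fix x assume x: "x \<in> hcarrier H"
  then show "set (map (\<lambda>(a,b). (hantipode H a, hantipode H b)) (hcomult H x)) \<subseteq> hcarrier H \<times> hcarrier H"
    using comult_set[OF x] by auto
next
  fix \<gamma> assume g: "bilinear_form H H \<gamma>"
  show "lin_fun H (\<lambda>x. ev \<gamma> (map (\<lambda>(a,b). (hantipode H a, hantipode H b)) (hcomult H x)))"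
    using D_lin[OF bilinear_comp[OF g antipode_lin antipode_lin]] by simp
qed

lemma conv_E_r: assumes F: "tlin F" shows "teqf (conv F Eu) F"
  unfolding teqf_def
proof
  fix x assume x: "x \<in> hcarrier H"
  show "tensor_eq H H (conv F Eu x) (F x)"
  proof (rule teqI)
    show "set (conv F Eu x) \<subseteq> hcarrier H \<times> hcarrier H" using tlinD(1)[OF tlin_conv[OF F tlin_Eu] x] .
    show "set (F x) \<subseteq> hcarrier H \<times> hcarrier H" using tlinD(1)[OF F x] .
    fix \<gamma> assume g: "bilinear_form H H \<gamma>"
    have "ev \<gamma> (conv F Eu x) = ev (\<lambda>a b. ev \<gamma> (F a) * hcounit H b) (hcomult H x)"
      unfolding ev_conv using comult_mem[OF x]
      by (intro ev_cong) (auto simp: ev_tprod_E_r[OF tlinD(1)[OF F] g] mult.commute)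
    also have "\<dots> = ev \<gamma> (F x)" by (rule ev_counit_r[OF tlinD(2)[OF F g] x])
    finally show "ev \<gamma> (conv F Eu x) = ev \<gamma> (F x)" .
  qed
qed

lemma conv_E_l: assumes F: "tlin F" shows "teqf (conv Eu F) F"
  unfolding teqf_def
proof
  fix x assume x: "x \<in> hcarrier H"
  show "tensor_eq H H (conv Eu F x) (F x)"
  proof (rule teqI)
    show "set (conv Eu F x) \<subseteq> hcarrier H \<times> hcarrier H" using tlinD(1)[OF tlin_conv[OF tlin_Eu F] x] .
    show "set (F x) \<subseteq> hcarrier H \<times> hcarrier H" using tlinD(1)[OF F x] .
    fix \<gamma> assume g: "bilinear_form H H \<gamma>"
    have "ev \<gamma> (conv Eu F x) = ev (\<lambda>a b. hcounit H a * ev \<gamma> (F b)) (hcomult H x)"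
      unfolding ev_conv using comult_mem[OF x]
      by (intro ev_cong) (auto simp: ev_tprod_E_l[OF tlinD(1)[OF F] g])
    also have "\<dots> = ev \<gamma> (F x)" by (rule ev_counit_l[OF tlinD(2)[OF F g] x])
    finally show "ev \<gamma> (conv Eu F x) = ev \<gamma> (F x)" .
  qed
qed

lemma conv_L_D: "teqf (conv (\<lambda>x. hcomult H (hantipode H x)) (hcomult H)) Eu"
  unfolding teqf_def
proof
  fix x assume x: "x \<in> hcarrier H"
  show "tensor_eq H H (conv (\<lambda>x. hcomult H (hantipode H x)) (hcomult H) x) (Eu x)"
  proof (rule teqI)
    show "set (conv (\<lambda>x. hcomult H (hantipode H x)) (hcomult H) x) \<subseteq> hcarrier H \<times> hcarrier H"
      using tlinD(1)[OF tlin_conv[OF tlin_L tlin_D] x] .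
    show "set (Eu x) \<subseteq> hcarrier H \<times> hcarrier H" using tlinD(1)[OF tlin_Eu x] .
    fix \<gamma> assume g: "bilinear_form H H \<gamma>"
    have "ev \<gamma> (conv (\<lambda>x. hcomult H (hantipode H x)) (hcomult H) x) =
        ev (\<lambda>a b. ev \<gamma> (hcomult H (hmult H (hantipode H a) b))) (hcomult H x)"
      unfolding ev_conv
    proof (rule ev_cong)
      fix a b assume "(a,b) \<in> set (hcomult H x)"
      then have a: "a \<in> hcarrier H" and b: "b \<in> hcarrier H" using comult_mem[OF x] by auto
      show "ev \<gamma> (tprod H (hcomult H (hantipode H a)) (hcomult H b)) = ev \<gamma> (hcomult H (hmult H (hantipode H a) b))"
        using teqD(3)[OF comult_mult[OF S_closed[OF a] b] g] by simp
    qed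
    also have "\<dots> = hcounit H x * ev \<gamma> (hcomult H (hone H))"
      by (rule ev_antipode_l[OF D_lin[OF g] x])
    also have "\<dots> = ev \<gamma> (Eu x)" using ev_Eu[OF g x] ev_comult_one[OF g] by simp
    finally show "ev \<gamma> (conv (\<lambda>x. hcomult H (hantipode H x)) (hcomult H) x) = ev \<gamma> (Eu x)" .
  qed
qed

end

context cocommL begin

lemma conv_D_R: "teqf (conv (hcomult H) (\<lambda>x. map (\<lambda>(a,b). (hantipode H a, hantipode H b)) (hcomult H x))) Eu"
  unfolding teqf_def
proof
  fix x assume x: "x \<in> hcarrier H"
  let ?R = "\<lambda>x. map (\<lambda>(a,b). (hantipode H a, hantipode H b)) (hcomult H x)"
  show "tensor_eq H H (conv (hcomult H) ?R x) (Eu x)"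
  proof (rule teqI)
    show "set (conv (hcomult H) ?R x) \<subseteq> hcarrier H \<times> hcarrier H"
      using tlinD(1)[OF tlin_conv[OF tlin_D tlin_R] x] .
    show "set (Eu x) \<subseteq> hcarrier H \<times> hcarrier H" using tlinD(1)[OF tlin_Eu x] .
    fix \<gamma> assume g: "bilinear_form H H \<gamma>"
    define \<tau> where "\<tau> a1 a2 b = ev (\<lambda>c1 c2. \<gamma> (hmult H a1 (hantipode H c1)) (hmult H a2 (hantipode H c2))) (hcomult H b)"
      for a1 a2 b
    have mS: "linear_map H H (\<lambda>c. hmult H a (hantipode H c))" if "a \<in> hcarrier H" for a
      by (rule linear_map_comp[OF antipode_lin mult_left_lin[OF that]])
    have tri: "trilinear_form H \<tau>"
    proof (rule trilinear_formI)
      fix a2 b assume a2: "a2 \<in> hcarrier H" and b: "b \<in> hcarrier H"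
      show "lin_fun H (\<lambda>a1. \<tau> a1 a2 b)" unfolding \<tau>_def
        by (rule lin_fun_ev, rule lin_fun_comp[OF _ mult_right_lin], rule bilinear_formD(1)[OF g])
           (use comult_mem[OF b] a2 in auto)
    next
      fix a1 b assume a1: "a1 \<in> hcarrier H" and b: "b \<in> hcarrier H"
      show "lin_fun H (\<lambda>a2. \<tau> a1 a2 b)" unfolding \<tau>_def
        by (rule lin_fun_ev, rule lin_fun_comp[OF _ mult_right_lin], rule bilinear_formD(2)[OF g])
           (use comult_mem[OF b] a1 in auto)
    next
      fix a1 a2 assume a1: "a1 \<in> hcarrier H" and a2: "a2 \<in> hcarrier H"
      show "lin_fun H (\<lambda>b. \<tau> a1 a2 b)" unfolding \<tau>_def
        by (rule D_lin[OF bilinear_comp[OF g mS[OF a1] mS[OF a2]]])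
    qed
    have inner: "ev (\<lambda>b1 b2. \<tau> a b1 b2) (hcomult H b) = \<gamma> (hmult H a (hantipode H b)) (hone H)"
      if a: "a \<in> hcarrier H" and b: "b \<in> hcarrier H" for a b
    proof -
      define \<tau>' where "\<tau>' d1 c1 c2 = \<gamma> (hmult H a (hantipode H c2)) (hmult H d1 (hantipode H c1))" for d1 c1 c2
      have tri': "trilinear_form H \<tau>'"
      proof (rule trilinear_formI)
        fix c1 c2 assume c1: "c1 \<in> hcarrier H" and c2: "c2 \<in> hcarrier H"
        show "lin_fun H (\<lambda>d1. \<tau>' d1 c1 c2)" unfolding \<tau>'_def
          by (rule lin_fun_comp[OF _ mult_right_lin], rule bilinear_formD(2)[OF g]) (use a c1 c2 in auto)
      next
        fix d1 c2 assume d1: "d1 \<in> hcarrier H" and c2: "c2 \<in> hcarrier H"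
        show "lin_fun H (\<lambda>c1. \<tau>' d1 c1 c2)" unfolding \<tau>'_def
          by (rule lin_fun_comp[OF _ mS[OF d1]], rule bilinear_formD(2)[OF g]) (use a c2 in auto)
      next
        fix d1 c1 assume d1: "d1 \<in> hcarrier H" and c1: "c1 \<in> hcarrier H"
        show "lin_fun H (\<lambda>c2. \<tau>' d1 c1 c2)" unfolding \<tau>'_def
          by (rule lin_fun_comp[OF _ mS[OF a]], rule bilinear_formD(1)[OF g]) (use d1 c1 in auto)
      qed
      have "ev (\<lambda>b1 b2. \<tau> a b1 b2) (hcomult H b) = ev (\<lambda>b1 b2. ev (\<lambda>c1 c2. \<tau>' b1 c1 c2) (hcomult H b2)) (hcomult H b)"
      proof (rule ev_cong)
        fix b1 b2 assume "(b1,b2) \<in> set (hcomult H b)"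
        then have b1: "b1 \<in> hcarrier H" and b2: "b2 \<in> hcarrier H" using comult_mem[OF b] by auto
        have bl: "bilinear_form H H (\<lambda>c1 c2. \<gamma> (hmult H a (hantipode H c1)) (hmult H b1 (hantipode H c2)))"
          by (rule bilinear_comp[OF g mS[OF a] mS[OF b1]])
        show "\<tau> a b1 b2 = ev (\<lambda>c1 c2. \<tau>' b1 c1 c2) (hcomult H b2)"
          unfolding \<tau>_def \<tau>'_def using ev_cocomm[OF bl b2] by simp
      qed
      also have "\<dots> = ev (\<lambda>b1 b2. ev (\<lambda>d1 d2. \<tau>' d1 d2 b2) (hcomult H b1)) (hcomult H b)"
        by (rule ev_coassoc[OF tri' b, symmetric])
      also have "\<dots> = ev (\<lambda>b1 b2. hcounit H b1 * \<gamma> (hmult H a (hantipode H b2)) (hone H)) (hcomult H b)"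
      proof (rule ev_cong)
        fix b1 b2 assume "(b1,b2) \<in> set (hcomult H b)"
        then have b1: "b1 \<in> hcarrier H" and b2: "b2 \<in> hcarrier H" using comult_mem[OF b] by auto
        show "ev (\<lambda>d1 d2. \<tau>' d1 d2 b2) (hcomult H b1) = hcounit H b1 * \<gamma> (hmult H a (hantipode H b2)) (hone H)"
          unfolding \<tau>'_def by (rule ev_antipode_r[OF bilinear_formD(2)[OF g] b1]) (use a b2 in simp)
      qed
      also have "\<dots> = \<gamma> (hmult H a (hantipode H b)) (hone H)"
        by (rule ev_counit_l[OF lin_fun_comp[OF bilinear_formD(1)[OF g] mS[OF a]] b]) simp
      finally show ?thesis .
    qed
    have "ev \<gamma> (conv (hcomult H) ?R x) = ev (\<lambda>a b. ev (\<lambda>a1 a2. \<tau> a1 a2 b) (hcomult H a)) (hcomult H x)"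
      unfolding ev_conv \<tau>_def by (simp add: ev_tprod)
    also have "\<dots> = ev (\<lambda>a b. ev (\<lambda>b1 b2. \<tau> a b1 b2) (hcomult H b)) (hcomult H x)"
      by (rule ev_coassoc[OF tri x])
    also have "\<dots> = ev (\<lambda>a b. \<gamma> (hmult H a (hantipode H b)) (hone H)) (hcomult H x)"
      using comult_mem[OF x] inner by (intro ev_cong) auto
    also have "\<dots> = hcounit H x * \<gamma> (hone H) (hone H)"
      by (rule ev_antipode_r[OF bilinear_formD(1)[OF g one_closed] x])
    also have "\<dots> = ev \<gamma> (Eu x)" using ev_Eu[OF g x] by simp
    finally show "ev \<gamma> (conv (hcomult H) ?R x) = ev \<gamma> (Eu x)" .
  qed
qed

lemma antipode_comult:
  assumes x: "x \<in> hcarrier H" and g: "bilinear_form H H \<gamma>"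
  shows "ev \<gamma> (hcomult H (hantipode H x)) = ev (\<lambda>a b. \<gamma> (hantipode H a) (hantipode H b)) (hcomult H x)"
proof -
  let ?L = "\<lambda>x. hcomult H (hantipode H x)"
  let ?R = "\<lambda>x. map (\<lambda>(a,b). (hantipode H a, hantipode H b)) (hcomult H x)"
  have "teqf ?L (conv ?L Eu)" by (rule teqf_sym[OF conv_E_r[OF tlin_L]])
  also have "teqf (conv ?L Eu) (conv ?L (conv (hcomult H) ?R))"
    by (rule conv_cong[OF tlin_L tlin_Eu tlin_L tlin_conv[OF tlin_D tlin_R] teqf_refl[OF tlin_L] teqf_sym[OF conv_D_R]])
  moreover have "teqf (conv ?L (conv (hcomult H) ?R)) (conv (conv ?L (hcomult H)) ?R)"
    by (rule teqf_sym[OF conv_assoc[OF tlin_L tlin_D tlin_R]])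
  moreover have "teqf (conv (conv ?L (hcomult H)) ?R) (conv Eu ?R)"
    by (rule conv_cong[OF tlin_conv[OF tlin_L tlin_D] tlin_R tlin_Eu tlin_R conv_L_D teqf_refl[OF tlin_R]])
  moreover have "teqf (conv Eu ?R) ?R" by (rule conv_E_l[OF tlin_R])
  ultimately have "teqf ?L ?R" using teqf_trans by meson
  then have "tensor_eq H H (?L x) (?R x)" unfolding teqf_def using x by blast
  from teqD(3)[OF this g] show ?thesis by simp
qed

end

definition comb :: "('k::field,'a) hopf_alg \<Rightarrow> 'k list \<Rightarrow> 'a list \<Rightarrow> 'a" where
  "comb V cs ws = vsum V (map (\<lambda>(c,v). hscale V c v) (zip cs ws))"

definition span_l :: "('k::field,'a) hopf_alg \<Rightarrow> 'a list \<Rightarrow> 'a set" where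
  "span_l V ws = {comb V cs ws | cs. length cs = length ws}"

definition snd_duals :: "('k::field,'b) hopf_alg \<Rightarrow> ('a \<times> 'b) list \<Rightarrow> bool" where
  "snd_duals W ys \<longleftrightarrow> (\<forall>j<length ys. \<exists>\<psi>. lin_fun W \<psi> \<and> \<psi> (snd (ys!j)) = 1 \<and>
      (\<forall>i<length ys. i \<noteq> j \<longrightarrow> \<psi> (snd (ys!i)) = 0))"

lemma comb_Nil1[simp]: "comb V [] ws = hzero V" by (simp add: comb_def vsum_def)
lemma comb_Nil2[simp]: "comb V cs [] = hzero V" by (simp add: comb_def vsum_def)
lemma comb_Cons[simp]: "comb V (c # cs) (v # ws) = hadd V (hscale V c v) (comb V cs ws)"
  by (simp add: comb_def vsum_def)

context vs begin

lemma comb_closed[simp]: "set ws \<subseteq> hcarrier V \<Longrightarrow> comb V cs ws \<in> hcarrier V"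
proof (induction ws arbitrary: cs)
  case (Cons v ws) then show ?case by (cases cs) auto
qed simp

lemma comb_zero: "set ws \<subseteq> hcarrier V \<Longrightarrow> comb V (replicate (length ws) 0) ws = hzero V"
  by (induction ws) auto

lemma comb_add: "set ws \<subseteq> hcarrier V \<Longrightarrow> length cs = length ws \<Longrightarrow> length ds = length ws \<Longrightarrow>
  hadd V (comb V cs ws) (comb V ds ws) = comb V (map2 (+) cs ds) ws"
proof (induction ws arbitrary: cs ds)
  case Nil then show ?case by simp
next
  case (Cons v ws)
  obtain c cs' where c: "cs = c # cs'" using Cons(3) by (cases cs) auto
  obtain d ds' where d: "ds = d # ds'" using Cons(4) by (cases ds) auto
  have v: "v \<in> hcarrier V" and ws: "set ws \<subseteq> hcarrier V" using Cons(2) by auto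
  have ih: "hadd V (comb V cs' ws) (comb V ds' ws) = comb V (map2 (+) cs' ds') ws"
    using Cons c d by auto
  have "hadd V (comb V cs (v # ws)) (comb V ds (v # ws)) =
      hadd V (hadd V (hscale V c v) (hscale V d v)) (hadd V (comb V cs' ws) (comb V ds' ws))"
    unfolding c d using v ws by (simp del: neg_l neg_r add: add_ac)
  also have "\<dots> = comb V (map2 (+) cs ds) (v # ws)"
    unfolding ih c d using v by (simp add: scale_add_l)
  finally show ?case .
qed

lemma comb_scale: "set ws \<subseteq> hcarrier V \<Longrightarrow> hscale V e (comb V cs ws) = comb V (map ((*) e) cs) ws"
proof (induction ws arbitrary: cs)
  case (Cons v ws) then show ?case by (cases cs) (auto simp: scale_add_r)
qed simp

lemma span_subsp: assumes "set ws \<subseteq> hcarrier V" shows "subsp V (span_l V ws)"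
  unfolding subsp_def span_l_def
proof (intro conjI ballI allI)
  show "{comb V cs ws |cs. length cs = length ws} \<subseteq> hcarrier V" using assms by auto
  have "hzero V = comb V (replicate (length ws) 0) ws" "length (replicate (length ws) (0::'k)) = length ws"
    using comb_zero[OF assms] by simp_all
  then show "hzero V \<in> {comb V cs ws |cs. length cs = length ws}" by blast
next
  fix x y assume "x \<in> {comb V cs ws |cs. length cs = length ws}" "y \<in> {comb V cs ws |cs. length cs = length ws}"
  then obtain cs ds where "x = comb V cs ws" "length cs = length ws" "y = comb V ds ws" "length ds = length ws" by blast
  then have "hadd V x y = comb V (map2 (+) cs ds) ws" "length (map2 (+) cs ds) = length ws"
    using comb_add[OF assms] by simp_all
  then show "hadd V x y \<in> {comb V cs ws |cs. length cs = length ws}" by blast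
next
  fix c x assume "x \<in> {comb V cs ws |cs. length cs = length ws}"
  then obtain cs where "x = comb V cs ws" "length cs = length ws" by blast
  then have "hscale V c x = comb V (map ((*) c) cs) ws" "length (map ((*) c) cs) = length ws"
    using comb_scale[OF assms] by simp_all
  then show "hscale V c x \<in> {comb V cs ws |cs. length cs = length ws}" by blast
qed

lemma span_contains: "set ws \<subseteq> hcarrier V \<Longrightarrow> set ws \<subseteq> span_l V ws"
proof (induction ws)
  case Nil then show ?case by simp
next
  case (Cons w ws)
  have w: "w \<in> hcarrier V" and ws: "set ws \<subseteq> hcarrier V" using Cons(2) by auto
  have "w = comb V (1 # replicate (length ws) 0) (w # ws)" using w comb_zero[OF ws] by simp
  moreover have "length (1 # replicate (length ws) (0::'k)) = length (w # ws)" by simp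
  ultimately have "w \<in> span_l V (w # ws)" unfolding span_l_def by blast
  moreover have "u \<in> span_l V (w # ws)" if uin: "u \<in> set ws" for u
  proof -
    have "u \<in> span_l V ws" using Cons(1)[OF ws] uin by blast
    then obtain cs where "u = comb V cs ws" "length cs = length ws" unfolding span_l_def by blast
    then have "u = comb V (0 # cs) (w # ws)" "length (0 # cs) = length (w # ws)" using w ws by simp_all
    then show ?thesis unfolding span_l_def by blast
  qed
  ultimately show ?case by auto
qed

lemma lin_comb: "lin_fun V \<phi> \<Longrightarrow> set ws \<subseteq> hcarrier V \<Longrightarrow>
  \<phi> (comb V cs ws) = sum_list (map (\<lambda>(c,v). c * \<phi> v) (zip cs ws))"
proof (induction ws arbitrary: cs)
  case Nil then show ?case by (simp add: lin_fun_zero)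
next
  case (Cons v ws) then show ?case by (cases cs) (auto simp: lin_fun_zero lin_funD)
qed

end

lemma ev_zip_mod:
  assumes "length cs = length rest" "bilinear_form V W \<beta>" "u \<in> hcarrier V" "set rest \<subseteq> hcarrier V \<times> hcarrier W"
    "vspace V"
  shows "ev \<beta> (map (\<lambda>(c,(a,b)). (hadd V a (hscale V c u), b)) (zip cs rest)) =
    ev \<beta> rest + sum_list (map (\<lambda>(c,(a,b)). c * \<beta> u b) (zip cs rest))"
  using assms
proof (induction cs rest rule: list_induct2)
  case Nil then show ?case by simp
next
  case (Cons c cs r rest)
  obtain a b where r: "r = (a,b)" by (cases r)
  have ab: "a \<in> hcarrier V" "b \<in> hcarrier W" using Cons(5) r by auto
  have "\<beta> (hadd V a (hscale V c u)) b = \<beta> a b + c * \<beta> u b"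
    using Cons(3,4) ab assms(5) unfolding bilinear_form_def by (simp add: vs.scale_closed vs.intro)
  then show ?case using Cons r by simp
qed

lemma bil_comb:
  assumes "length cs = length rest" "bilinear_form V W \<beta>" "u \<in> hcarrier V" "set rest \<subseteq> hcarrier V \<times> hcarrier W"
    "vspace W"
  shows "\<beta> u (comb W cs (map snd rest)) = sum_list (map (\<lambda>(c,(a,b)). c * \<beta> u b) (zip cs rest))"
proof -
  interpret W: vs W by (rule vs.intro[OF assms(5)])
  have l: "lin_fun W (\<beta> u)" using bilinear_formD(2)[OF assms(2,3)] by simp
  have s: "set (map snd rest) \<subseteq> hcarrier W" using assms(4) by auto
  have "\<beta> u (comb W cs (map snd rest)) = sum_list (map (\<lambda>(c,v). c * \<beta> u v) (zip cs (map snd rest)))"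
    by (rule W.lin_comb[OF l s])
  also have "\<dots> = sum_list (map (\<lambda>(c,(a,b)). c * \<beta> u b) (zip cs rest))"
    using assms(1) by (induction cs rest rule: list_induct2) auto
  finally show ?thesis .
qed

lemma reduce:
  assumes V: "vspace V" and W: "vspace W"
  shows "set xs \<subseteq> hcarrier V \<times> hcarrier W \<Longrightarrow>
    \<exists>ys. tensor_eq V W xs ys \<and> set (map snd ys) \<subseteq> set (map snd xs) \<and> snd_duals W ys"
proof (induction "length xs" arbitrary: xs rule: less_induct)
  case less
  interpret V: vs V by (rule vs.intro[OF V])
  interpret W: vs W by (rule vs.intro[OF W])
  show ?case
  proof (cases "snd_duals W xs")
    case True then show ?thesis using teq_refl[OF less.prems] by blast
  next
    case False
    then obtain j where j: "j < length xs" and nod: "\<not> (\<exists>\<psi>. lin_fun W \<psi> \<and> \<psi> (snd (xs!j)) = 1 \<and>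
        (\<forall>i<length xs. i \<noteq> j \<longrightarrow> \<psi> (snd (xs!i)) = 0))"
      unfolding snd_duals_def by blast
    define rest where "rest = take j xs @ drop (Suc j) xs"
    obtain u v where uv: "xs ! j = (u,v)" by (cases "xs!j")
    have xsj: "xs = take j xs @ (u,v) # drop (Suc j) xs" using id_take_nth_drop[OF j] uv by simp
    have restset: "set rest \<subseteq> set xs" unfolding rest_def using set_take_subset set_drop_subset by fastforce
    have rs: "set rest \<subseteq> hcarrier V \<times> hcarrier W" using restset less.prems by blast
    have "(u,v) \<in> set xs" using uv j nth_mem by metis
    then have u: "u \<in> hcarrier V" and v: "v \<in> hcarrier W" using less.prems by auto
    have others: "xs ! i \<in> set rest" if "i < length xs" "i \<noteq> j" for i
    proof (cases "i < j")
      case True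
      then have "xs ! i = take j xs ! i" by simp
      moreover have "i < length (take j xs)" using True that by simp
      ultimately show ?thesis unfolding rest_def by (metis UnCI nth_mem set_append)
    next
      case False
      then have ij: "j < i" using that by simp
      have "xs ! i = drop (Suc j) xs ! (i - Suc j)" using ij that by simp
      moreover have "i - Suc j < length (drop (Suc j) xs)" using ij that by simp
      ultimately show ?thesis unfolding rest_def by (metis UnCI nth_mem set_append)
    qed
    let ?U = "span_l W (map snd rest)"
    have rsnd: "set (map snd rest) \<subseteq> hcarrier W" using rs by auto
    have Us: "subsp W ?U" by (rule W.span_subsp[OF rsnd])
    have vU: "v \<in> ?U"
    proof (rule ccontr)
      assume nv: "v \<notin> ?U"
      obtain \<pi> where p1: "\<forall>y\<in>hcarrier W. \<pi> y \<in> ?U" and p2: "\<forall>w\<in>?U. \<pi> w = w"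
        and p3: "\<forall>x\<in>hcarrier W. \<forall>y\<in>hcarrier W. \<pi> (hadd W x y) = hadd W (\<pi> x) (\<pi> y)"
        and p4: "\<forall>c. \<forall>x\<in>hcarrier W. \<pi> (hscale W c x) = hscale W c (\<pi> x)"
        using W.projection[OF Us] by blast
      have Uc: "?U \<subseteq> hcarrier W" using Us unfolding subsp_def by blast
      have plin: "linear_map W W \<pi>" unfolding linear_map_def using p1 p3 p4 Uc by blast
      have pv: "\<pi> v \<in> hcarrier W" using p1 Uc v by blast
      let ?z = "hadd W v (hscale W (-1) (\<pi> v))"
      have "?z \<noteq> hzero W"
      proof
        assume "?z = hzero W"
        then have "v = \<pi> v" using W.diff_zero_eq v pv by blast
        then show False using nv p1 v by metis
      qed
      moreover have "?z \<in> hcarrier W" using v pv by simp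
      ultimately obtain \<phi> where \<phi>: "lin_fun W \<phi>" "\<phi> ?z = 1" using W.sep_nonzero by blast
      define \<psi> where "\<psi> y = \<phi> y - \<phi> (\<pi> y)" for y
      have l0: "lin_fun W (\<lambda>y. \<phi> y + (-1) * \<phi> (\<pi> y))"
        by (rule lin_fun_add[OF \<phi>(1) lin_fun_cmult[OF lin_fun_comp[OF \<phi>(1) plin]]])
      have plin': "lin_fun W \<psi>"
        by (rule lin_fun_cong[OF _ W l0]) (simp add: \<psi>_def)
      have "\<psi> v = 1" using \<phi> v pv unfolding \<psi>_def by (simp add: W.lin_funD W.lin_fun_neg)
      moreover have "\<psi> (snd (xs!i)) = 0" if "i < length xs" "i \<noteq> j" for i
      proof -
        have "snd (xs!i) \<in> set (map snd rest)" using others[OF that] by force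
        then have "snd (xs!i) \<in> ?U" using W.span_contains[OF rsnd] by blast
        then show ?thesis unfolding \<psi>_def using p2 by simp
      qed
      ultimately show False using nod plin' uv by auto
    qed
    obtain cs where cs: "v = comb W cs (map snd rest)" "length cs = length rest" using vU unfolding span_l_def by auto
    define rest' where "rest' = map (\<lambda>(c,(a,b)). (hadd V a (hscale V c u), b)) (zip cs rest)"
    have r's: "set rest' \<subseteq> hcarrier V \<times> hcarrier W"
      unfolding rest'_def using rs u by (auto dest!: set_zip_rightD)
    have snd': "set (map snd rest') \<subseteq> set (map snd rest)"
      unfolding rest'_def by (auto dest!: set_zip_rightD) (metis image_eqI snd_conv)
    have teq1: "tensor_eq V W xs rest'"
    proof (rule teqI[OF less.prems r's])
      fix \<beta> assume b: "bilinear_form V W \<beta>"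
      have "ev \<beta> xs = ev \<beta> rest + \<beta> u v"
        by (subst xsj) (simp add: rest_def)
      also have "\<dots> = ev \<beta> rest + sum_list (map (\<lambda>(c,(a,b)). c * \<beta> u b) (zip cs rest))"
        using bil_comb[OF cs(2) b u rs W] cs(1) by simp
      also have "\<dots> = ev \<beta> rest'"
        unfolding rest'_def by (rule ev_zip_mod[symmetric, OF cs(2) b u rs V])
      finally show "ev \<beta> xs = ev \<beta> rest'" .
    qed
    have len: "length rest' < length xs" unfolding rest'_def rest_def using cs(2) j by (simp add: rest_def)
    obtain ys where ys: "tensor_eq V W rest' ys" "set (map snd ys) \<subseteq> set (map snd rest')" "snd_duals W ys"
      using less.hyps[OF len r's] by blast
    have "set (map snd rest) \<subseteq> set (map snd xs)" using restset by auto
    then show ?thesis using teq_trans[OF teq1 ys(1)] ys(2,3) snd' by blast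
  qed
qed

lemma ev_sum_nth: "ev \<beta> ys = (\<Sum>i<length ys. \<beta> (fst (ys ! i)) (snd (ys ! i)))"
  unfolding ev_def by (simp add: sum_list_sum_nth case_prod_beta atLeast0LessThan)

lemma dual_extract:
  assumes V: "vspace V" and ys: "set ys \<subseteq> hcarrier V \<times> hcarrier W" and \<psi>: "lin_fun W \<psi>"
    and j: "j < length ys" and d1: "\<psi> (snd (ys!j)) = 1" and d0: "\<forall>i<length ys. i \<noteq> j \<longrightarrow> \<psi> (snd (ys!i)) = 0"
  shows "vsum V (map (\<lambda>(a,b). hscale V (\<psi> b) a) ys) = fst (ys!j)"
proof -
  interpret V: vs V by (rule vs.intro[OF V])
  have mem: "ys ! i \<in> hcarrier V \<times> hcarrier W" if "i < length ys" for i using ys that nth_mem by blast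
  have sc: "set (map (\<lambda>(a,b). hscale V (\<psi> b) a) ys) \<subseteq> hcarrier V" using ys by auto
  show ?thesis
  proof (rule V.separation)
    show "vsum V (map (\<lambda>(a,b). hscale V (\<psi> b) a) ys) \<in> hcarrier V" using sc by simp
    show "fst (ys!j) \<in> hcarrier V" using mem[OF j] by auto
    fix \<phi> assume \<phi>: "lin_fun V \<phi>"
    have "\<phi> (vsum V (map (\<lambda>(a,b). hscale V (\<psi> b) a) ys)) = ev (\<lambda>a b. \<phi> (hscale V (\<psi> b) a)) ys"
      by (rule lin_vsum_ev[OF V \<phi>]) (use ys in auto)
    also have "\<dots> = (\<Sum>i<length ys. \<phi> (hscale V (\<psi> (snd (ys!i))) (fst (ys!i))))" by (rule ev_sum_nth)
    also have "\<dots> = (\<Sum>i<length ys. \<psi> (snd (ys!i)) * \<phi> (fst (ys!i)))"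
    proof (rule sum.cong)
      fix i assume "i \<in> {..<length ys}"
      then have "fst (ys!i) \<in> hcarrier V" using mem by (simp add: mem_Times_iff)
      then show "\<phi> (hscale V (\<psi> (snd (ys!i))) (fst (ys!i))) = \<psi> (snd (ys!i)) * \<phi> (fst (ys!i))"
        using V.lin_funD(2)[OF \<phi>] by blast
    qed simp
    also have "\<dots> = \<psi> (snd (ys!j)) * \<phi> (fst (ys!j)) + (\<Sum>i\<in>{..<length ys} - {j}. \<psi> (snd (ys!i)) * \<phi> (fst (ys!i)))"
      using j by (simp add: sum.remove)
    also have "(\<Sum>i\<in>{..<length ys} - {j}. \<psi> (snd (ys!i)) * \<phi> (fst (ys!i))) = 0"
      using d0 by (intro sum.neutral) auto
    finally show "\<phi> (vsum V (map (\<lambda>(a,b). hscale V (\<psi> b) a) ys)) = \<phi> (fst (ys!j))" using d1 by simp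
  qed
qed

locale homL = A: hopfL A + B: hopfL B for A :: "('k::field,'a) hopf_alg" and B :: "('k,'b) hopf_alg" +
  fixes p :: "'a \<Rightarrow> 'b"
  assumes hom: "hopf_hom A B p"
begin

lemma p_lin: "linear_map A B p" using hom unfolding hopf_hom_def by auto
lemma p_closed[simp]: "x \<in> hcarrier A \<Longrightarrow> p x \<in> hcarrier B" using linear_mapD(1)[OF p_lin] .
lemma p_add: "x \<in> hcarrier A \<Longrightarrow> y \<in> hcarrier A \<Longrightarrow> p (hadd A x y) = hadd B (p x) (p y)"
  using linear_mapD(2)[OF p_lin] .
lemma p_scale: "x \<in> hcarrier A \<Longrightarrow> p (hscale A c x) = hscale B c (p x)"
  using linear_mapD(3)[OF p_lin] .
lemma p_mult: "x \<in> hcarrier A \<Longrightarrow> y \<in> hcarrier A \<Longrightarrow> p (hmult A x y) = hmult B (p x) (p y)"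
  using hom unfolding hopf_hom_def by auto
lemma p_one[simp]: "p (hone A) = hone B" using hom unfolding hopf_hom_def by auto
lemma p_comult: "x \<in> hcarrier A \<Longrightarrow> tensor_eq B B (hcomult B (p x)) (map (\<lambda>(u,v). (p u, p v)) (hcomult A x))"
  using hom unfolding hopf_hom_def by auto
lemma p_counit: "x \<in> hcarrier A \<Longrightarrow> hcounit B (p x) = hcounit A x"
  using hom unfolding hopf_hom_def by auto

lemma p_zero[simp]: "p (hzero A) = hzero B"
  using p_scale[OF A.zero_closed, of 0] by simp

lemma pS_lin: "linear_map A B (\<lambda>a. p (hantipode A a))"
  by (rule linear_map_comp[OF A.antipode_lin p_lin])

lemma p_S: assumes x: "x \<in> hcarrier A" shows "p (hantipode A x) = hantipode B (p x)"
proof (rule B.separation)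
  show "p (hantipode A x) \<in> hcarrier B" using x by simp
  show "hantipode B (p x) \<in> hcarrier B" using x by simp
  fix \<phi> assume \<phi>: "lin_fun B \<phi>"
  define \<tau> where "\<tau> a b1 b2 = \<phi> (hmult B (p (hantipode A a)) (hmult B (p b1) (hantipode B (p b2))))" for a b1 b2
  have tri: "trilinear_form A \<tau>"
  proof (rule trilinear_formI)
    fix b1 b2 assume b1: "b1 \<in> hcarrier A" and b2: "b2 \<in> hcarrier A"
    show "lin_fun A (\<lambda>a. \<tau> a b1 b2)" unfolding \<tau>_def
      by (rule lin_fun_comp[OF B.lin_mult_r[OF \<phi>] pS_lin]) (use b1 b2 in simp)
  next
    fix a b2 assume a: "a \<in> hcarrier A" and b2: "b2 \<in> hcarrier A"
    show "lin_fun A (\<lambda>b1. \<tau> a b1 b2)" unfolding \<tau>_def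
      by (rule lin_fun_comp[OF B.lin_mult_r[OF B.lin_mult_l[OF \<phi>]] p_lin]) (use a b2 in simp_all)
  next
    fix a b1 assume a: "a \<in> hcarrier A" and b1: "b1 \<in> hcarrier A"
    show "lin_fun A (\<lambda>b2. \<tau> a b1 b2)" unfolding \<tau>_def
      by (rule lin_fun_comp[OF B.lin_S[OF B.lin_mult_l[OF B.lin_mult_l[OF \<phi>]]] p_lin]) (use a b1 in simp_all)
  qed
  have l1: "lin_fun A (\<lambda>a. \<phi> (p (hantipode A a)))" by (rule lin_fun_comp[OF \<phi> pS_lin])
  have "\<phi> (p (hantipode A x)) = ev (\<lambda>a b. \<phi> (p (hantipode A a)) * hcounit A b) (hcomult A x)"
    by (rule A.ev_counit_r[OF l1 x, symmetric])
  also have "\<dots> = ev (\<lambda>a b. ev (\<lambda>b1 b2. \<tau> a b1 b2) (hcomult A b)) (hcomult A x)"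
  proof (rule ev_cong)
    fix a b assume "(a,b) \<in> set (hcomult A x)"
    then have a: "a \<in> hcarrier A" and b: "b \<in> hcarrier A" using A.comult_mem[OF x] by auto
    let ?z = "p (hantipode A a)"
    have z: "?z \<in> hcarrier B" using a by simp
    have lz: "lin_fun B (\<lambda>w. \<phi> (hmult B ?z w))" by (rule B.lin_mult_l[OF \<phi> z])
    have "\<phi> ?z * hcounit A b = hcounit B (p b) * \<phi> (hmult B ?z (hone B))"
      using z b by (simp add: p_counit)
    also have "\<dots> = ev (\<lambda>c1 c2. \<phi> (hmult B ?z (hmult B c1 (hantipode B c2)))) (hcomult B (p b))"
      by (rule B.ev_antipode_r[OF lz, symmetric]) (use b in simp)
    also have "\<dots> = ev (\<lambda>c1 c2. \<phi> (hmult B ?z (hmult B c1 (hantipode B c2)))) (map (\<lambda>(u,v). (p u, p v)) (hcomult A b))"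
      by (rule teqD(3)[OF p_comult[OF b] B.bilin_mult_antipode[OF lz]])
    also have "\<dots> = ev (\<lambda>b1 b2. \<tau> a b1 b2) (hcomult A b)" unfolding \<tau>_def by simp
    finally show "\<phi> (p (hantipode A a)) * hcounit A b = ev (\<lambda>b1 b2. \<tau> a b1 b2) (hcomult A b)" .
  qed
  also have "\<dots> = ev (\<lambda>a b. ev (\<lambda>a1 a2. \<tau> a1 a2 b) (hcomult A a)) (hcomult A x)"
    by (rule A.ev_coassoc[OF tri x, symmetric])
  also have "\<dots> = ev (\<lambda>a b. hcounit A a * \<phi> (hantipode B (p b))) (hcomult A x)"
  proof (rule ev_cong)
    fix a b assume "(a,b) \<in> set (hcomult A x)"
    then have a: "a \<in> hcarrier A" and b: "b \<in> hcarrier A" using A.comult_mem[OF x] by auto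
    let ?w = "hantipode B (p b)"
    have w: "?w \<in> hcarrier B" using b by simp
    have lw: "lin_fun A (\<lambda>z. \<phi> (hmult B (p z) ?w))" by (rule lin_fun_comp[OF B.lin_mult_r[OF \<phi> w] p_lin])
    have "ev (\<lambda>a1 a2. \<tau> a1 a2 b) (hcomult A a) = ev (\<lambda>a1 a2. \<phi> (hmult B (p (hmult A (hantipode A a1) a2)) ?w)) (hcomult A a)"
      unfolding \<tau>_def using A.comult_mem[OF a] w
      by (intro ev_cong) (auto simp: p_mult B.mult_assoc)
    also have "\<dots> = hcounit A a * \<phi> (hmult B (p (hone A)) ?w)"
      by (rule A.ev_antipode_l[OF lw a])
    also have "\<dots> = hcounit A a * \<phi> ?w" using w by simp
    finally show "ev (\<lambda>a1 a2. \<tau> a1 a2 b) (hcomult A a) = hcounit A a * \<phi> ?w" .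
  qed
  also have "\<dots> = \<phi> (hantipode B (p x))"
    by (rule A.ev_counit_l[OF lin_fun_comp[OF B.lin_S[OF \<phi>] p_lin] x])
  finally show "\<phi> (p (hantipode A x)) = \<phi> (hantipode B (p x))" .
qed

end

lemma sub_comult_spec:
  assumes "hopf_subalg H S" "x \<in> S"
  shows "set (hcomult (sub_hopf H S) x) \<subseteq> S \<times> S \<and> tensor_eq H H (hcomult H x) (hcomult (sub_hopf H S) x)"
  unfolding sub_hopf_simps by (rule someI_ex) (use assms in \<open>auto simp: hopf_subalg_def\<close>)

lemma hopf_subalg_subrec: "hopf_subalg H S \<Longrightarrow> subrec (sub_hopf H S) H"
  unfolding subrec_def subsp_def hopf_subalg_def by simp

lemma ev_diff: "ev (\<lambda>a b. (\<beta> a b::'k::ab_group_add) - \<gamma> a b) xs = ev \<beta> xs - ev \<gamma> xs"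
  by (induction xs) (auto simp: ev_def)

lemma map_swap_swap: "map (\<lambda>(u,v). (v,u)) (map (\<lambda>(u,v). (v,u)) xs) = xs"
  by (induction xs) auto
lemma map_case_swap: "map (\<lambda>(a,b). F a b) (map (\<lambda>(u,v). (v,u)) xs) = map (\<lambda>(u,v). F v u) xs"
  by (induction xs) auto

locale pbL = homL A B p + A: cocommL A + B: cocommL B
  for A :: "('k::field,'a) hopf_alg" and B :: "('k,'b) hopf_alg" and p +
  fixes C :: "'b set"
  assumes C: "hopf_subalg B C"
begin

abbreviation "Sinv \<equiv> h_inverse A B p C"

lemma Cc: "C \<subseteq> hcarrier B" and Cz: "hzero B \<in> C" and Ca: "\<And>x y. x \<in> C \<Longrightarrow> y \<in> C \<Longrightarrow> hadd B x y \<in> C"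
  and Cs: "\<And>c x. x \<in> C \<Longrightarrow> hscale B c x \<in> C" and C1: "hone B \<in> C"
  and Cm: "\<And>x y. x \<in> C \<Longrightarrow> y \<in> C \<Longrightarrow> hmult B x y \<in> C"
  and CS: "\<And>x. x \<in> C \<Longrightarrow> hantipode B x \<in> C"
  using C unfolding hopf_subalg_def by auto

lemma Cx: "x \<in> C \<Longrightarrow> x \<in> hcarrier B" using Cc by blast

lemma hplusD: "c \<in> hplus B C \<Longrightarrow> c \<in> C \<and> hcounit B c = 0"
  unfolding hplus_def by auto
lemma hplusI: "c \<in> C \<Longrightarrow> hcounit B c = 0 \<Longrightarrow> c \<in> hplus B C"
  unfolding hplus_def by auto

lemma bil_pA: "bilinear_form B A \<gamma> \<Longrightarrow> bilinear_form A A (\<lambda>a b. \<gamma> (p a) b)"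
  using bilinear_comp[OF _ p_lin A.id_lin] by simp

lemma memS_I:
  assumes x: "x \<in> hcarrier A" and l: "set l \<subseteq> hplus B C \<times> hcarrier A"
    and e: "\<And>\<gamma>. bilinear_form B A \<gamma> \<Longrightarrow> ev (\<lambda>a b. \<gamma> (p a) b) (hcomult A x) = \<gamma> (hone B) x + ev \<gamma> l"
  shows "x \<in> Sinv"
  unfolding h_inverse_def
proof (intro CollectI conjI exI[of _ l] x l)
  have lc: "set l \<subseteq> hcarrier B \<times> hcarrier A" using l Cc unfolding hplus_def by auto
  show "tensor_eq B A (map (\<lambda>(u,v). (p u, v)) (hcomult A x) @ [(hscale B (-1) (hone B), x)]) l"
  proof (rule teqI[OF _ lc])
    show "set (map (\<lambda>(u,v). (p u, v)) (hcomult A x) @ [(hscale B (-1) (hone B), x)]) \<subseteq> hcarrier B \<times> hcarrier A"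
      using A.comult_set[OF x] x by auto
    fix \<gamma> assume g: "bilinear_form B A \<gamma>"
    have "\<gamma> (hscale B (-1) (hone B)) x = - \<gamma> (hone B) x"
      using g x unfolding bilinear_form_def by simp
    then show "ev \<gamma> (map (\<lambda>(u,v). (p u, v)) (hcomult A x) @ [(hscale B (-1) (hone B), x)]) = ev \<gamma> l"
      using e[OF g] by simp
  qed
qed

lemma memS_D:
  assumes "x \<in> Sinv"
  shows "x \<in> hcarrier A" "\<exists>l. set l \<subseteq> hplus B C \<times> hcarrier A \<and>
     (\<forall>\<gamma>. bilinear_form B A \<gamma> \<longrightarrow> ev (\<lambda>a b. \<gamma> (p a) b) (hcomult A x) = \<gamma> (hone B) x + ev \<gamma> l)"
proof -
  show x: "x \<in> hcarrier A" using assms unfolding h_inverse_def by auto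
  obtain l where l: "set l \<subseteq> hplus B C \<times> hcarrier A"
    and t: "tensor_eq B A (map (\<lambda>(u,v). (p u, v)) (hcomult A x) @ [(hscale B (-1) (hone B), x)]) l"
    using assms unfolding h_inverse_def by auto
  have "ev (\<lambda>a b. \<gamma> (p a) b) (hcomult A x) = \<gamma> (hone B) x + ev \<gamma> l" if g: "bilinear_form B A \<gamma>" for \<gamma>
  proof -
    have "\<gamma> (hscale B (-1) (hone B)) x = - \<gamma> (hone B) x"
      using g x unfolding bilinear_form_def by simp
    then show ?thesis using teqD(3)[OF t g] by (simp add: algebra_simps)
  qed
  then show "\<exists>l. set l \<subseteq> hplus B C \<times> hcarrier A \<and>
     (\<forall>\<gamma>. bilinear_form B A \<gamma> \<longrightarrow> ev (\<lambda>a b. \<gamma> (p a) b) (hcomult A x) = \<gamma> (hone B) x + ev \<gamma> l)"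
    using l by blast
qed

lemma S_sub: "Sinv \<subseteq> hcarrier A" using memS_D(1) by blast

lemma G1: assumes x: "x \<in> Sinv" shows "p x \<in> C"
proof -
  have xc: "x \<in> hcarrier A" using memS_D(1)[OF x] .
  obtain l where l: "set l \<subseteq> hplus B C \<times> hcarrier A"
    and e: "\<forall>\<gamma>. bilinear_form B A \<gamma> \<longrightarrow> ev (\<lambda>a b. \<gamma> (p a) b) (hcomult A x) = \<gamma> (hone B) x + ev \<gamma> l"
    using memS_D(2)[OF x] by blast
  have Cs': "subsp B C" unfolding subsp_def using Cc Cz Ca Cs by auto
  obtain \<pi> where p1: "\<forall>v\<in>hcarrier B. \<pi> v \<in> C" and p2: "\<forall>w\<in>C. \<pi> w = w"
    and p3: "\<forall>x\<in>hcarrier B. \<forall>y\<in>hcarrier B. \<pi> (hadd B x y) = hadd B (\<pi> x) (\<pi> y)"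
    and p4: "\<forall>c. \<forall>x\<in>hcarrier B. \<pi> (hscale B c x) = hscale B c (\<pi> x)"
    using B.projection[OF Cs'] by blast
  have plin: "linear_map B B \<pi>" unfolding linear_map_def using p1 p3 p4 Cc by blast
  have "p x = \<pi> (p x)"
  proof (rule B.separation)
    show "p x \<in> hcarrier B" using xc by simp
    show "\<pi> (p x) \<in> hcarrier B" using p1 Cc xc by auto
    fix \<phi> assume \<phi>: "lin_fun B \<phi>"
    define \<phi>' where "\<phi>' b = \<phi> b + (-1) * \<phi> (\<pi> b)" for b
    have l': "lin_fun B \<phi>'" unfolding \<phi>'_def
      by (rule lin_fun_add[OF \<phi> lin_fun_cmult[OF lin_fun_comp[OF \<phi> plin]]])
    have z: "\<phi>' c = 0" if "c \<in> C" for c unfolding \<phi>'_def using p2 that by simp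
    have g: "bilinear_form B A (\<lambda>c a. \<phi>' c * hcounit A a)" by (rule bilinear_prod[OF l' A.counit_lin])
    have "\<phi>' (p x) = ev (\<lambda>a b. \<phi>' (p a) * hcounit A b) (hcomult A x)"
      by (rule A.ev_counit_r[OF lin_fun_comp[OF l' p_lin] xc, symmetric])
    also have "\<dots> = \<phi>' (hone B) * hcounit A x + ev (\<lambda>c a. \<phi>' c * hcounit A a) l"
      using e[rule_format, OF g] by simp
    also have "\<dots> = 0"
    proof -
      have "ev (\<lambda>c a. \<phi>' c * hcounit A a) l = ev (\<lambda>c a. 0) l"
        using l z hplusD by (intro ev_cong) auto
      then show ?thesis using z[OF C1] by simp
    qed
    finally show "\<phi> (p x) = \<phi> (\<pi> (p x))" unfolding \<phi>'_def by simp
  qed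
  then show ?thesis using p1 xc by (metis p_closed)
qed

lemma memS_zero: "hzero A \<in> Sinv"
proof (rule memS_I[of _ "[]"])
  fix \<gamma> assume g: "bilinear_form B A \<gamma>"
  have "ev (\<lambda>a b. \<gamma> (p a) b) (hcomult A (hzero A)) = 0" using A.lin_fun_zero[OF A.D_lin[OF bil_pA[OF g]]] .
  moreover have "\<gamma> (hone B) (hzero A) = 0" using A.lin_fun_zero[OF bilinear_formD(2)[OF g B.one_closed]] .
  ultimately show "ev (\<lambda>a b. \<gamma> (p a) b) (hcomult A (hzero A)) = \<gamma> (hone B) (hzero A) + ev \<gamma> []" by simp
qed auto

lemma memS_one: "hone A \<in> Sinv"
proof (rule memS_I[of _ "[]"])
  fix \<gamma> assume g: "bilinear_form B A \<gamma>"
  show "ev (\<lambda>a b. \<gamma> (p a) b) (hcomult A (hone A)) = \<gamma> (hone B) (hone A) + ev \<gamma> []"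
    using A.ev_comult_one[OF bil_pA[OF g]] by simp
qed auto

lemma memS_add: assumes x: "x \<in> Sinv" and y: "y \<in> Sinv" shows "hadd A x y \<in> Sinv"
proof -
  have xc: "x \<in> hcarrier A" and yc: "y \<in> hcarrier A" using memS_D(1) x y by auto
  obtain lx where lx: "set lx \<subseteq> hplus B C \<times> hcarrier A"
    and ex: "\<forall>\<gamma>. bilinear_form B A \<gamma> \<longrightarrow> ev (\<lambda>a b. \<gamma> (p a) b) (hcomult A x) = \<gamma> (hone B) x + ev \<gamma> lx"
    using memS_D(2)[OF x] by blast
  obtain ly where ly: "set ly \<subseteq> hplus B C \<times> hcarrier A"
    and ey: "\<forall>\<gamma>. bilinear_form B A \<gamma> \<longrightarrow> ev (\<lambda>a b. \<gamma> (p a) b) (hcomult A y) = \<gamma> (hone B) y + ev \<gamma> ly"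
    using memS_D(2)[OF y] by blast
  show ?thesis
  proof (rule memS_I[of _ "lx @ ly"])
    show "hadd A x y \<in> hcarrier A" using xc yc by simp
    show "set (lx @ ly) \<subseteq> hplus B C \<times> hcarrier A" using lx ly by auto
    fix \<gamma> assume g: "bilinear_form B A \<gamma>"
    have "ev (\<lambda>a b. \<gamma> (p a) b) (hcomult A (hadd A x y)) =
        ev (\<lambda>a b. \<gamma> (p a) b) (hcomult A x) + ev (\<lambda>a b. \<gamma> (p a) b) (hcomult A y)"
      using A.lin_funD(1)[OF A.D_lin[OF bil_pA[OF g]] xc yc] .
    moreover have "\<gamma> (hone B) (hadd A x y) = \<gamma> (hone B) x + \<gamma> (hone B) y"
      using A.lin_funD(1)[OF bilinear_formD(2)[OF g B.one_closed] xc yc] .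
    ultimately show "ev (\<lambda>a b. \<gamma> (p a) b) (hcomult A (hadd A x y)) = \<gamma> (hone B) (hadd A x y) + ev \<gamma> (lx @ ly)"
      using ex[rule_format, OF g] ey[rule_format, OF g] by simp
  qed
qed

lemma memS_scale: assumes x: "x \<in> Sinv" shows "hscale A k x \<in> Sinv"
proof -
  have xc: "x \<in> hcarrier A" using memS_D(1) x by auto
  obtain lx where lx: "set lx \<subseteq> hplus B C \<times> hcarrier A"
    and ex: "\<forall>\<gamma>. bilinear_form B A \<gamma> \<longrightarrow> ev (\<lambda>a b. \<gamma> (p a) b) (hcomult A x) = \<gamma> (hone B) x + ev \<gamma> lx"
    using memS_D(2)[OF x] by blast
  show ?thesis
  proof (rule memS_I[of _ "map (\<lambda>(c,a). (c, hscale A k a)) lx"])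
    show "hscale A k x \<in> hcarrier A" using xc by simp
    show "set (map (\<lambda>(c,a). (c, hscale A k a)) lx) \<subseteq> hplus B C \<times> hcarrier A" using lx by auto
    fix \<gamma> assume g: "bilinear_form B A \<gamma>"
    have "ev (\<lambda>a b. \<gamma> (p a) b) (hcomult A (hscale A k x)) = k * ev (\<lambda>a b. \<gamma> (p a) b) (hcomult A x)"
      using A.lin_funD(2)[OF A.D_lin[OF bil_pA[OF g]] xc] .
    moreover have "\<gamma> (hone B) (hscale A k x) = k * \<gamma> (hone B) x"
      using A.lin_funD(2)[OF bilinear_formD(2)[OF g B.one_closed] xc] .
    moreover have "ev \<gamma> (map (\<lambda>(c,a). (c, hscale A k a)) lx) = k * ev \<gamma> lx"
    proof -
      have "ev \<gamma> (map (\<lambda>(c,a). (c, hscale A k a)) lx) = ev (\<lambda>c a. k * \<gamma> c a) lx"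
      proof (simp, rule ev_cong)
        fix c a assume "(c,a) \<in> set lx"
        then have "c \<in> hcarrier B" "a \<in> hcarrier A" using lx hplusD Cx by auto
        then show "\<gamma> c (hscale A k a) = k * \<gamma> c a" using g unfolding bilinear_form_def by blast
      qed
      then show ?thesis by (simp add: ev_cmult)
    qed
    ultimately show "ev (\<lambda>a b. \<gamma> (p a) b) (hcomult A (hscale A k x)) =
        \<gamma> (hone B) (hscale A k x) + ev \<gamma> (map (\<lambda>(c,a). (c, hscale A k a)) lx)"
      using ex[rule_format, OF g] by (simp add: algebra_simps)
  qed
qed

lemma memS_antipode: assumes x: "x \<in> Sinv" shows "hantipode A x \<in> Sinv"
proof -
  have xc: "x \<in> hcarrier A" using memS_D(1) x by auto
  obtain lx where lx: "set lx \<subseteq> hplus B C \<times> hcarrier A"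
    and ex: "\<forall>\<gamma>. bilinear_form B A \<gamma> \<longrightarrow> ev (\<lambda>a b. \<gamma> (p a) b) (hcomult A x) = \<gamma> (hone B) x + ev \<gamma> lx"
    using memS_D(2)[OF x] by blast
  show ?thesis
  proof (rule memS_I[of _ "map (\<lambda>(c,a). (hantipode B c, hantipode A a)) lx"])
    show "hantipode A x \<in> hcarrier A" using xc by simp
    show "set (map (\<lambda>(c,a). (hantipode B c, hantipode A a)) lx) \<subseteq> hplus B C \<times> hcarrier A"
    proof
      fix z assume "z \<in> set (map (\<lambda>(c,a). (hantipode B c, hantipode A a)) lx)"
      then obtain c a where ca: "(c,a) \<in> set lx" and z: "z = (hantipode B c, hantipode A a)" by auto
      have c: "c \<in> C" "hcounit B c = 0" and a: "a \<in> hcarrier A" using ca lx hplusD by auto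
      have "hantipode B c \<in> hplus B C" using CS[OF c(1)] B.counit_S[OF Cx[OF c(1)]] c(2) by (simp add: hplusI)
      then show "z \<in> hplus B C \<times> hcarrier A" using z a by simp
    qed
    fix \<gamma> assume g: "bilinear_form B A \<gamma>"
    have g': "bilinear_form B A (\<lambda>c a. \<gamma> (hantipode B c) (hantipode A a))"
      by (rule bilinear_comp[OF g B.antipode_lin A.antipode_lin])
    have "ev (\<lambda>a b. \<gamma> (p a) b) (hcomult A (hantipode A x)) =
        ev (\<lambda>a b. \<gamma> (p (hantipode A a)) (hantipode A b)) (hcomult A x)"
      using A.antipode_comult[OF xc bil_pA[OF g]] .
    also have "\<dots> = ev (\<lambda>a b. \<gamma> (hantipode B (p a)) (hantipode A b)) (hcomult A x)"
      using A.comult_mem[OF xc] by (intro ev_cong) (auto simp: p_S)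
    also have "\<dots> = \<gamma> (hantipode B (hone B)) (hantipode A x) + ev (\<lambda>c a. \<gamma> (hantipode B c) (hantipode A a)) lx"
      using ex[rule_format, OF g'] by simp
    also have "\<dots> = \<gamma> (hone B) (hantipode A x) + ev \<gamma> (map (\<lambda>(c,a). (hantipode B c, hantipode A a)) lx)"
      by (simp add: B.S_one)
    finally show "ev (\<lambda>a b. \<gamma> (p a) b) (hcomult A (hantipode A x)) =
        \<gamma> (hone B) (hantipode A x) + ev \<gamma> (map (\<lambda>(c,a). (hantipode B c, hantipode A a)) lx)" .
  qed
qed

lemma memS_mult: assumes x: "x \<in> Sinv" and y: "y \<in> Sinv" shows "hmult A x y \<in> Sinv"
proof -
  have xc: "x \<in> hcarrier A" and yc: "y \<in> hcarrier A" using memS_D(1) x y by auto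
  obtain lx where lx: "set lx \<subseteq> hplus B C \<times> hcarrier A"
    and ex: "\<forall>\<gamma>. bilinear_form B A \<gamma> \<longrightarrow> ev (\<lambda>a b. \<gamma> (p a) b) (hcomult A x) = \<gamma> (hone B) x + ev \<gamma> lx"
    using memS_D(2)[OF x] by blast
  obtain ly where ly: "set ly \<subseteq> hplus B C \<times> hcarrier A"
    and ey: "\<forall>\<gamma>. bilinear_form B A \<gamma> \<longrightarrow> ev (\<lambda>a b. \<gamma> (p a) b) (hcomult A y) = \<gamma> (hone B) y + ev \<gamma> ly"
    using memS_D(2)[OF y] by blast
  have lxm: "c \<in> C" "hcounit B c = 0" "d \<in> hcarrier A" if "(c,d) \<in> set lx" for c d
    using that lx hplusD by auto
  have lym: "c \<in> C" "hcounit B c = 0" "d \<in> hcarrier A" if "(c,d) \<in> set ly" for c d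
    using that ly hplusD by auto
  define l where "l = map (\<lambda>(c',d'). (c', hmult A x d')) ly @ map (\<lambda>(c,d). (c, hmult A d y)) lx @
     concat (map (\<lambda>(c,d). map (\<lambda>(c',d'). (hmult B c c', hmult A d d')) ly) lx)"
  show ?thesis
  proof (rule memS_I[of _ l])
    show "hmult A x y \<in> hcarrier A" using xc yc by simp
    show "set l \<subseteq> hplus B C \<times> hcarrier A"
    proof
      fix z assume "z \<in> set l"
      then consider (a) c' d' where "(c',d') \<in> set ly" "z = (c', hmult A x d')"
        | (b) c d where "(c,d) \<in> set lx" "z = (c, hmult A d y)"
        | (c) c d c' d' where "(c,d) \<in> set lx" "(c',d') \<in> set ly" "z = (hmult B c c', hmult A d d')"
        unfolding l_def by auto
      then show "z \<in> hplus B C \<times> hcarrier A"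
      proof cases
        case a then show ?thesis using lym[OF a(1)] xc by (simp add: hplusI)
      next
        case b then show ?thesis using lxm[OF b(1)] yc by (simp add: hplusI)
      next
        case c
        have "hmult B c c' \<in> hplus B C"
          using lxm[OF c(1)] lym[OF c(2)] Cm Cx B.counit_mult by (simp add: hplusI)
        then show ?thesis using c lxm[OF c(1)] lym[OF c(2)] by simp
      qed
    qed
    fix \<gamma> assume g: "bilinear_form B A \<gamma>"
    have "ev (\<lambda>a b. \<gamma> (p a) b) (hcomult A (hmult A x y)) =
        ev (\<lambda>a b. ev (\<lambda>a' b'. \<gamma> (p (hmult A a a')) (hmult A b b')) (hcomult A y)) (hcomult A x)"
      using A.ev_comult_mult[OF bil_pA[OF g] xc yc] .
    also have "\<dots> = ev (\<lambda>a b. ev (\<lambda>a' b'. \<gamma> (hmult B (p a) (p a')) (hmult A b b')) (hcomult A y)) (hcomult A x)"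
      using A.comult_mem[OF xc] A.comult_mem[OF yc] by (intro ev_cong) (auto simp: p_mult)
    also have "\<dots> = ev (\<lambda>a' b'. ev (\<lambda>a b. \<gamma> (hmult B (p a) (p a')) (hmult A b b')) (hcomult A x)) (hcomult A y)"
      by (rule ev_ev)
    also have "\<dots> = ev (\<lambda>a' b'. \<gamma> (p a') (hmult A x b') + ev (\<lambda>c d. \<gamma> (hmult B c (p a')) (hmult A d b')) lx) (hcomult A y)"
    proof (rule ev_cong)
      fix a' b' assume "(a',b') \<in> set (hcomult A y)"
      then have a': "a' \<in> hcarrier A" and b': "b' \<in> hcarrier A" using A.comult_mem[OF yc] by auto
      have g': "bilinear_form B A (\<lambda>c d. \<gamma> (hmult B c (p a')) (hmult A d b'))"
        by (rule bilinear_comp[OF g B.mult_right_lin A.mult_right_lin]) (use a' b' in simp_all)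
      show "ev (\<lambda>a b. \<gamma> (hmult B (p a) (p a')) (hmult A b b')) (hcomult A x) =
          \<gamma> (p a') (hmult A x b') + ev (\<lambda>c d. \<gamma> (hmult B c (p a')) (hmult A d b')) lx"
        using ex[rule_format, OF g'] a' by simp
    qed
    also have "\<dots> = ev (\<lambda>a' b'. \<gamma> (p a') (hmult A x b')) (hcomult A y) +
        ev (\<lambda>a' b'. ev (\<lambda>c d. \<gamma> (hmult B c (p a')) (hmult A d b')) lx) (hcomult A y)"
      by (rule ev_add)
    also have "ev (\<lambda>a' b'. \<gamma> (p a') (hmult A x b')) (hcomult A y) =
        \<gamma> (hone B) (hmult A x y) + ev \<gamma> (map (\<lambda>(c',d'). (c', hmult A x d')) ly)"
    proof -
      have g': "bilinear_form B A (\<lambda>c d. \<gamma> c (hmult A x d))"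
        using bilinear_comp[OF g B.id_lin A.mult_left_lin[OF xc]] by simp
      show ?thesis using ey[rule_format, OF g'] by simp
    qed
    also have "ev (\<lambda>a' b'. ev (\<lambda>c d. \<gamma> (hmult B c (p a')) (hmult A d b')) lx) (hcomult A y) =
        ev (\<lambda>c d. ev (\<lambda>a' b'. \<gamma> (hmult B c (p a')) (hmult A d b')) (hcomult A y)) lx"
      by (rule ev_ev)
    also have "\<dots> = ev (\<lambda>c d. \<gamma> c (hmult A d y) + ev (\<lambda>c' d'. \<gamma> (hmult B c c') (hmult A d d')) ly) lx"
    proof (rule ev_cong)
      fix c d assume cd: "(c,d) \<in> set lx"
      have c: "c \<in> hcarrier B" and d: "d \<in> hcarrier A" using lxm[OF cd] Cx by auto
      have g': "bilinear_form B A (\<lambda>c' d'. \<gamma> (hmult B c c') (hmult A d d'))"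
        by (rule bilinear_comp[OF g B.mult_left_lin[OF c] A.mult_left_lin[OF d]])
      show "ev (\<lambda>a' b'. \<gamma> (hmult B c (p a')) (hmult A d b')) (hcomult A y) =
          \<gamma> c (hmult A d y) + ev (\<lambda>c' d'. \<gamma> (hmult B c c') (hmult A d d')) ly"
        using ey[rule_format, OF g'] c by simp
    qed
    also have "\<dots> = ev \<gamma> (map (\<lambda>(c,d). (c, hmult A d y)) lx) +
        ev \<gamma> (concat (map (\<lambda>(c,d). map (\<lambda>(c',d'). (hmult B c c', hmult A d d')) ly) lx))"
      by (simp add: ev_add ev_concat_map)
    finally show "ev (\<lambda>a b. \<gamma> (p a) b) (hcomult A (hmult A x y)) = \<gamma> (hone B) (hmult A x y) + ev \<gamma> l"
      unfolding l_def by (simp add: algebra_simps)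
  qed
qed

definition Pf :: "('a \<Rightarrow> 'k) \<Rightarrow> 'a \<Rightarrow> 'a" where
  "Pf \<psi> y = vsum A (map (\<lambda>(u,v). hscale A (\<psi> v) u) (hcomult A y))"
definition Qf :: "('a \<Rightarrow> 'k) \<Rightarrow> 'a \<Rightarrow> 'a" where
  "Qf \<psi> y = vsum A (map (\<lambda>(u,v). hscale A (\<psi> u) v) (hcomult A y))"

lemma Pf_closed: assumes y: "y \<in> hcarrier A" shows "Pf \<psi> y \<in> hcarrier A"
  unfolding Pf_def
proof (rule A.vsum_closed, rule subsetI)
  fix z assume "z \<in> set (map (\<lambda>(u,v). hscale A (\<psi> v) u) (hcomult A y))"
  then obtain u v where "(u,v) \<in> set (hcomult A y)" "z = hscale A (\<psi> v) u" by auto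
  then show "z \<in> hcarrier A" using A.comult_mem[OF y] by simp
qed
lemma Qf_closed: assumes y: "y \<in> hcarrier A" shows "Qf \<psi> y \<in> hcarrier A"
  unfolding Qf_def
proof (rule A.vsum_closed, rule subsetI)
  fix z assume "z \<in> set (map (\<lambda>(u,v). hscale A (\<psi> u) v) (hcomult A y))"
  then obtain u v where "(u,v) \<in> set (hcomult A y)" "z = hscale A (\<psi> u) v" by auto
  then show "z \<in> hcarrier A" using A.comult_mem[OF y] by simp
qed

lemma Pf_fun: assumes \<psi>: "lin_fun A \<psi>" and \<phi>: "lin_fun A \<phi>" and y: "y \<in> hcarrier A"
  shows "\<phi> (Pf \<psi> y) = ev (\<lambda>u v. \<phi> u * \<psi> v) (hcomult A y)"
proof -
  have "\<phi> (Pf \<psi> y) = ev (\<lambda>u v. \<phi> (hscale A (\<psi> v) u)) (hcomult A y)"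
    unfolding Pf_def by (rule lin_vsum_ev[OF A.vs \<phi>]) (use A.comult_mem[OF y] in auto)
  also have "\<dots> = ev (\<lambda>u v. \<phi> u * \<psi> v) (hcomult A y)"
    using A.comult_mem[OF y] A.lin_funD(2)[OF \<phi>] by (intro ev_cong) (auto simp: mult.commute)
  finally show ?thesis .
qed

lemma Qf_fun: assumes \<psi>: "lin_fun A \<psi>" and \<phi>: "lin_fun A \<phi>" and y: "y \<in> hcarrier A"
  shows "\<phi> (Qf \<psi> y) = ev (\<lambda>u v. \<psi> u * \<phi> v) (hcomult A y)"
proof -
  have "\<phi> (Qf \<psi> y) = ev (\<lambda>u v. \<phi> (hscale A (\<psi> u) v)) (hcomult A y)"
    unfolding Qf_def by (rule lin_vsum_ev[OF A.vs \<phi>]) (use A.comult_mem[OF y] in auto)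
  also have "\<dots> = ev (\<lambda>u v. \<psi> u * \<phi> v) (hcomult A y)"
    using A.comult_mem[OF y] A.lin_funD(2)[OF \<phi>] by (intro ev_cong) auto
  finally show ?thesis .
qed

lemma Pf_lin: assumes \<psi>: "lin_fun A \<psi>" shows "linear_map A A (Pf \<psi>)"
  unfolding linear_map_def
proof (intro conjI ballI allI)
  show "Pf \<psi> ` hcarrier A \<subseteq> hcarrier A" using Pf_closed by blast
next
  fix x y assume x: "x \<in> hcarrier A" and y: "y \<in> hcarrier A"
  show "Pf \<psi> (hadd A x y) = hadd A (Pf \<psi> x) (Pf \<psi> y)"
  proof (rule A.separation)
    show "Pf \<psi> (hadd A x y) \<in> hcarrier A" using x y Pf_closed by simp
    show "hadd A (Pf \<psi> x) (Pf \<psi> y) \<in> hcarrier A" using x y Pf_closed by simp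
    fix \<phi> assume \<phi>: "lin_fun A \<phi>"
    show "\<phi> (Pf \<psi> (hadd A x y)) = \<phi> (hadd A (Pf \<psi> x) (Pf \<psi> y))"
      using Pf_fun[OF \<psi> \<phi>] x y Pf_closed A.lin_funD(1)[OF \<phi>]
        A.lin_funD(1)[OF A.D_lin[OF bilinear_prod[OF \<phi> \<psi>]] x y] by simp
  qed
next
  fix c x assume x: "x \<in> hcarrier A"
  show "Pf \<psi> (hscale A c x) = hscale A c (Pf \<psi> x)"
  proof (rule A.separation)
    show "Pf \<psi> (hscale A c x) \<in> hcarrier A" using x Pf_closed by simp
    show "hscale A c (Pf \<psi> x) \<in> hcarrier A" using x Pf_closed by simp
    fix \<phi> assume \<phi>: "lin_fun A \<phi>"
    show "\<phi> (Pf \<psi> (hscale A c x)) = \<phi> (hscale A c (Pf \<psi> x))"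
      using Pf_fun[OF \<psi> \<phi>] x Pf_closed A.lin_funD(2)[OF \<phi>]
        A.lin_funD(2)[OF A.D_lin[OF bilinear_prod[OF \<phi> \<psi>]] x] by simp
  qed
qed

lemma Qf_eq_Pf: assumes \<psi>: "lin_fun A \<psi>" and y: "y \<in> hcarrier A" shows "Qf \<psi> y = Pf \<psi> y"
proof (rule A.separation)
  show "Qf \<psi> y \<in> hcarrier A" "Pf \<psi> y \<in> hcarrier A" using y Qf_closed Pf_closed by auto
  fix \<phi> assume \<phi>: "lin_fun A \<phi>"
  have "\<phi> (Qf \<psi> y) = ev (\<lambda>u v. \<psi> u * \<phi> v) (hcomult A y)" by (rule Qf_fun[OF \<psi> \<phi> y])
  also have "\<dots> = ev (\<lambda>u v. \<psi> v * \<phi> u) (hcomult A y)"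
    by (rule A.ev_cocomm[OF bilinear_prod[OF \<psi> \<phi>] y])
  also have "\<dots> = \<phi> (Pf \<psi> y)" using Pf_fun[OF \<psi> \<phi> y] by (simp add: mult.commute)
  finally show "\<phi> (Qf \<psi> y) = \<phi> (Pf \<psi> y)" .
qed

lemma memS_Pf: assumes x: "x \<in> Sinv" and \<psi>: "lin_fun A \<psi>" shows "Pf \<psi> x \<in> Sinv"
proof -
  have xc: "x \<in> hcarrier A" using memS_D(1) x by auto
  obtain lx where lx: "set lx \<subseteq> hplus B C \<times> hcarrier A"
    and ex: "\<forall>\<gamma>. bilinear_form B A \<gamma> \<longrightarrow> ev (\<lambda>a b. \<gamma> (p a) b) (hcomult A x) = \<gamma> (hone B) x + ev \<gamma> lx"
    using memS_D(2)[OF x] by blast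
  show ?thesis
  proof (rule memS_I[of _ "map (\<lambda>(c,a). (c, Pf \<psi> a)) lx"])
    show "Pf \<psi> x \<in> hcarrier A" using Pf_closed xc by blast
    show "set (map (\<lambda>(c,a). (c, Pf \<psi> a)) lx) \<subseteq> hplus B C \<times> hcarrier A" using lx Pf_closed by auto
    fix \<gamma> assume g: "bilinear_form B A \<gamma>"
    let ?G = "\<lambda>y. ev (\<lambda>a b. \<gamma> (p a) b) (hcomult A y)"
    have G: "lin_fun A ?G" by (rule A.D_lin[OF bil_pA[OF g]])
    define \<tau> where "\<tau> a1 a2 v = \<gamma> (p a1) a2 * \<psi> v" for a1 a2 v
    have tri: "trilinear_form A \<tau>"
    proof (rule trilinear_formI)
      fix a2 v assume "a2 \<in> hcarrier A" "v \<in> hcarrier A"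
      then show "lin_fun A (\<lambda>a1. \<tau> a1 a2 v)" unfolding \<tau>_def
        by (intro lin_fun_cmult_r lin_fun_comp[OF _ p_lin] bilinear_formD(1)[OF g])
    next
      fix a1 v assume "a1 \<in> hcarrier A" "v \<in> hcarrier A"
      then show "lin_fun A (\<lambda>a2. \<tau> a1 a2 v)" unfolding \<tau>_def
        by (intro lin_fun_cmult_r bilinear_formD(2)[OF g]) simp
    next
      fix a1 a2 assume "a1 \<in> hcarrier A" "a2 \<in> hcarrier A"
      then show "lin_fun A (\<lambda>v. \<tau> a1 a2 v)" unfolding \<tau>_def by (intro lin_fun_cmult \<psi>)
    qed
    have "?G (Pf \<psi> x) = ev (\<lambda>u v. ?G u * \<psi> v) (hcomult A x)" by (rule Pf_fun[OF \<psi> G xc])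
    also have "\<dots> = ev (\<lambda>u v. ev (\<lambda>a1 a2. \<tau> a1 a2 v) (hcomult A u)) (hcomult A x)"
      unfolding \<tau>_def by (simp add: ev_cmult_r)
    also have "\<dots> = ev (\<lambda>u v. ev (\<lambda>v1 v2. \<tau> u v1 v2) (hcomult A v)) (hcomult A x)"
      by (rule A.ev_coassoc[OF tri xc])
    also have "\<dots> = ev (\<lambda>u v. \<gamma> (p u) (Pf \<psi> v)) (hcomult A x)"
    proof (rule ev_cong)
      fix u v assume "(u,v) \<in> set (hcomult A x)"
      then have u: "u \<in> hcarrier A" and v: "v \<in> hcarrier A" using A.comult_mem[OF xc] by auto
      have l: "lin_fun A (\<gamma> (p u))" using bilinear_formD(2)[OF g p_closed[OF u]] by simp
      show "ev (\<lambda>v1 v2. \<tau> u v1 v2) (hcomult A v) = \<gamma> (p u) (Pf \<psi> v)"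
        unfolding \<tau>_def using Pf_fun[OF \<psi> l v] by simp
    qed
    also have "\<dots> = \<gamma> (hone B) (Pf \<psi> x) + ev (\<lambda>c a. \<gamma> c (Pf \<psi> a)) lx"
    proof -
      have g': "bilinear_form B A (\<lambda>c a. \<gamma> c (Pf \<psi> a))"
        using bilinear_comp[OF g B.id_lin Pf_lin[OF \<psi>]] by simp
      show ?thesis using ex[rule_format, OF g'] by simp
    qed
    finally show "?G (Pf \<psi> x) = \<gamma> (hone B) (Pf \<psi> x) + ev \<gamma> (map (\<lambda>(c,a). (c, Pf \<psi> a)) lx)" by simp
  qed
qed

lemma bil_sc: "lin_fun A \<phi> \<Longrightarrow> lin_fun A \<psi> \<Longrightarrow> bilinear_form A A (\<lambda>a b. \<phi> (hscale A (\<psi> b) a))"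
  by (rule bilinear_cong[OF A.vs A.vs _ bilinear_prod[of A \<phi> A \<psi>]]) (simp_all add: A.lin_funD mult.commute)

lemma memS_comult: assumes x: "x \<in> Sinv" shows "\<exists>l. set l \<subseteq> Sinv \<times> Sinv \<and> tensor_eq A A (hcomult A x) l"
proof -
  have xc: "x \<in> hcarrier A" using memS_D(1) x by auto
  let ?L0 = "map (\<lambda>(u,v). (v,u)) (hcomult A x)"
  have L0s: "set ?L0 \<subseteq> hcarrier A \<times> hcarrier A" using A.comult_set[OF xc] by auto
  obtain ys1 where t1: "tensor_eq A A ?L0 ys1" and d1: "snd_duals A ys1"
    using reduce[OF A.vs A.vs L0s] by blast
  have ys1s: "set ys1 \<subseteq> hcarrier A \<times> hcarrier A" using teqD(2)[OF t1] .
  have fst1: "fst z \<in> Sinv" if z: "z \<in> set ys1" for z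
  proof -
    obtain j where j: "j < length ys1" "z = ys1 ! j" using z by (auto simp: in_set_conv_nth)
    obtain \<psi> where \<psi>: "lin_fun A \<psi>" "\<psi> (snd (ys1!j)) = 1" "\<forall>i<length ys1. i \<noteq> j \<longrightarrow> \<psi> (snd (ys1!i)) = 0"
      using d1 j(1) unfolding snd_duals_def by blast
    have "fst z = vsum A (map (\<lambda>(a,b). hscale A (\<psi> b) a) ys1)"
      using dual_extract[OF A.vs ys1s \<psi>(1) j(1) \<psi>(2) \<psi>(3)] j(2) by simp
    also have "\<dots> = vsum A (map (\<lambda>(a,b). hscale A (\<psi> b) a) ?L0)"
      by (rule teq_vsum[OF A.vs _ _ t1, symmetric]) (simp, erule bil_sc[OF _ \<psi>(1)])
    also have "\<dots> = Qf \<psi> x" unfolding Qf_def map_case_swap ..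
    also have "\<dots> = Pf \<psi> x" by (rule Qf_eq_Pf[OF \<psi>(1) xc])
    finally show ?thesis using memS_Pf[OF x \<psi>(1)] by simp
  qed
  define L1 where "L1 = map (\<lambda>(u,v). (v,u)) ys1"
  have t01: "tensor_eq A A (hcomult A x) L1"
    using teq_swap[OF t1] unfolding L1_def map_swap_swap .
  have L1s: "set L1 \<subseteq> hcarrier A \<times> hcarrier A" using teqD(2)[OF t01] .
  have snd1: "set (map snd L1) \<subseteq> Sinv" using fst1 unfolding L1_def by auto
  obtain ys2 where t2: "tensor_eq A A L1 ys2" and s2: "set (map snd ys2) \<subseteq> set (map snd L1)" and d2: "snd_duals A ys2"
    using reduce[OF A.vs A.vs L1s] by blast
  have t02: "tensor_eq A A (hcomult A x) ys2" by (rule teq_trans[OF t01 t2])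
  have ys2s: "set ys2 \<subseteq> hcarrier A \<times> hcarrier A" using teqD(2)[OF t2] .
  have fst2: "fst z \<in> Sinv" if z: "z \<in> set ys2" for z
  proof -
    obtain j where j: "j < length ys2" "z = ys2 ! j" using z by (auto simp: in_set_conv_nth)
    obtain \<psi> where \<psi>: "lin_fun A \<psi>" "\<psi> (snd (ys2!j)) = 1" "\<forall>i<length ys2. i \<noteq> j \<longrightarrow> \<psi> (snd (ys2!i)) = 0"
      using d2 j(1) unfolding snd_duals_def by blast
    have "fst z = vsum A (map (\<lambda>(a,b). hscale A (\<psi> b) a) ys2)"
      using dual_extract[OF A.vs ys2s \<psi>(1) j(1) \<psi>(2) \<psi>(3)] j(2) by simp
    also have "\<dots> = vsum A (map (\<lambda>(a,b). hscale A (\<psi> b) a) (hcomult A x))"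
      by (rule teq_vsum[OF A.vs _ _ t02, symmetric]) (simp, erule bil_sc[OF _ \<psi>(1)])
    also have "\<dots> = Pf \<psi> x" unfolding Pf_def ..
    finally show ?thesis using memS_Pf[OF x \<psi>(1)] by simp
  qed
  have "set ys2 \<subseteq> Sinv \<times> Sinv"
  proof
    fix z assume z: "z \<in> set ys2"
    have "snd z \<in> set (map snd ys2)" using z by auto
    then have "snd z \<in> Sinv" using s2 snd1 by blast
    moreover have "fst z \<in> Sinv" by (rule fst2[OF z])
    ultimately show "z \<in> Sinv \<times> Sinv" by (cases z) auto
  qed
  then show ?thesis using t02 by blast
qed

lemma G2: "hopf_subalg A Sinv"
  unfolding hopf_subalg_def
proof (intro conjI ballI allI)
  show "Sinv \<subseteq> hcarrier A" by (rule S_sub)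
  show "hzero A \<in> Sinv" by (rule memS_zero)
  show "hone A \<in> Sinv" by (rule memS_one)
  fix x y assume "x \<in> Sinv" "y \<in> Sinv"
  then show "hadd A x y \<in> Sinv" "hmult A x y \<in> Sinv" by (rule memS_add, rule memS_mult)
next
  fix c x assume "x \<in> Sinv" then show "hscale A c x \<in> Sinv" by (rule memS_scale)
next
  fix x assume "x \<in> Sinv" then show "hantipode A x \<in> Sinv" by (rule memS_antipode)
next
  fix x assume "x \<in> Sinv" then show "\<exists>l. set l \<subseteq> Sinv \<times> Sinv \<and> tensor_eq A A (hcomult A x) l" by (rule memS_comult)
qed

lemma G5: "hopf_hom (sub_hopf A Sinv) (sub_hopf B C) p"
proof -
  have Sx: "x \<in> Sinv \<Longrightarrow> x \<in> hcarrier A" for x using S_sub by blast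
  have lin: "linear_map (sub_hopf A Sinv) (sub_hopf B C) p"
    unfolding linear_map_def using G1 Sx p_add p_scale by auto
  have com: "tensor_eq (sub_hopf B C) (sub_hopf B C) (hcomult (sub_hopf B C) (p x))
      (map (\<lambda>(u,v). (p u, p v)) (hcomult (sub_hopf A Sinv) x))" if x: "x \<in> Sinv" for x
  proof -
    have xc: "x \<in> hcarrier A" using Sx x .
    have px: "p x \<in> C" using G1 x .
    have sp1: "set (hcomult (sub_hopf B C) (p x)) \<subseteq> C \<times> C" "tensor_eq B B (hcomult B (p x)) (hcomult (sub_hopf B C) (p x))"
      using sub_comult_spec[OF C px] by auto
    have sp2: "set (hcomult (sub_hopf A Sinv) x) \<subseteq> Sinv \<times> Sinv" "tensor_eq A A (hcomult A x) (hcomult (sub_hopf A Sinv) x)"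
      using sub_comult_spec[OF G2 x] by auto
    show ?thesis
    proof (rule teq_restrict[OF B.vs B.vs hopf_subalg_subrec[OF C] hopf_subalg_subrec[OF C]])
      show "set (hcomult (sub_hopf B C) (p x)) \<subseteq> hcarrier (sub_hopf B C) \<times> hcarrier (sub_hopf B C)"
        using sp1(1) by simp
      show "set (map (\<lambda>(u,v). (p u, p v)) (hcomult (sub_hopf A Sinv) x)) \<subseteq> hcarrier (sub_hopf B C) \<times> hcarrier (sub_hopf B C)"
        using sp2(1) G1 by auto
      have "tensor_eq B B (hcomult (sub_hopf B C) (p x)) (hcomult B (p x))" using teq_sym[OF sp1(2)] .
      moreover have "tensor_eq B B (hcomult B (p x)) (map (\<lambda>(u,v). (p u, p v)) (hcomult A x))" using p_comult[OF xc] .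
      moreover have "tensor_eq B B (map (\<lambda>(u,v). (p u, p v)) (hcomult A x)) (map (\<lambda>(u,v). (p u, p v)) (hcomult (sub_hopf A Sinv) x))"
        using teq_map[OF sp2(2) p_lin p_lin] .
      ultimately show "tensor_eq B B (hcomult (sub_hopf B C) (p x)) (map (\<lambda>(u,v). (p u, p v)) (hcomult (sub_hopf A Sinv) x))"
        using teq_trans by blast
    qed
  qed
  show ?thesis unfolding hopf_hom_def using lin com Sx p_mult p_counit by simp
qed

lemma G7:
  fixes D :: "('k,'d) hopf_alg" and f :: "'d \<Rightarrow> 'a" and g :: "'d \<Rightarrow> 'b"
  assumes D: "cocomm_hopf D" and f: "hopf_hom D A f" and g: "hopf_hom D (sub_hopf B C) g"
    and pf: "\<forall>x\<in>hcarrier D. p (f x) = g x"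
  shows "\<exists>h. hopf_hom D (sub_hopf A Sinv) h \<and> (\<forall>x\<in>hcarrier D. h x = f x \<and> p (h x) = g x) \<and>
            (\<forall>h'. hopf_hom D (sub_hopf A Sinv) h' \<and> (\<forall>x\<in>hcarrier D. h' x = f x \<and> p (h' x) = g x) \<longrightarrow>
                  (\<forall>x\<in>hcarrier D. h' x = h x))"
proof -
  interpret D: cocommL D using D cocommL_iff by blast
  interpret F: homL D A f
    by (rule homL.intro[OF D.hopfL_axioms A.hopfL_axioms]) (simp add: homL_axioms_def f)
  have glin: "linear_map D (sub_hopf B C) g" using g unfolding hopf_hom_def by auto
  have gC: "g x \<in> C" if "x \<in> hcarrier D" for x using linear_mapD(1)[OF glin that] by simp
  have gcounit: "hcounit B (g x) = hcounit D x" if "x \<in> hcarrier D" for x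
    using g that unfolding hopf_hom_def by simp
  have fS: "f x \<in> Sinv" if x: "x \<in> hcarrier D" for x
  proof (rule memS_I[of _ "map (\<lambda>(u,v). (hadd B (g u) (hscale B (- hcounit D u) (hone B)), f v)) (hcomult D x)"])
    show "f x \<in> hcarrier A" using x by simp
    show "set (map (\<lambda>(u,v). (hadd B (g u) (hscale B (- hcounit D u) (hone B)), f v)) (hcomult D x)) \<subseteq> hplus B C \<times> hcarrier A"
    proof
      fix z assume "z \<in> set (map (\<lambda>(u,v). (hadd B (g u) (hscale B (- hcounit D u) (hone B)), f v)) (hcomult D x))"
      then obtain u v where uv: "(u,v) \<in> set (hcomult D x)" and z: "z = (hadd B (g u) (hscale B (- hcounit D u) (hone B)), f v)"
        by auto
      have u: "u \<in> hcarrier D" and v: "v \<in> hcarrier D" using D.comult_mem[OF x uv] by auto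
      have "hadd B (g u) (hscale B (- hcounit D u) (hone B)) \<in> C" using Ca Cs C1 gC[OF u] by blast
      moreover have "hcounit B (hadd B (g u) (hscale B (- hcounit D u) (hone B))) = 0"
        using Cx[OF gC[OF u]] gcounit[OF u] by (simp add: B.counit_add B.counit_scale)
      ultimately show "z \<in> hplus B C \<times> hcarrier A" using z v by (simp add: hplusI)
    qed
    fix \<gamma> assume g0: "bilinear_form B A \<gamma>"
    have l1: "lin_fun D (\<lambda>v. \<gamma> (hone B) (f v))"
      by (rule lin_fun_comp[OF bilinear_formD(2)[OF g0 B.one_closed] F.p_lin])
    have "ev (\<lambda>a b. \<gamma> (p a) b) (hcomult A (f x)) = ev (\<lambda>u v. \<gamma> (p (f u)) (f v)) (hcomult D x)"
      using teqD(3)[OF F.p_comult[OF x] bil_pA[OF g0]] by simp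
    also have "\<dots> = ev (\<lambda>u v. \<gamma> (g u) (f v)) (hcomult D x)"
      using D.comult_mem[OF x] pf by (intro ev_cong) auto
    also have "\<dots> = \<gamma> (hone B) (f x) + ev \<gamma> (map (\<lambda>(u,v). (hadd B (g u) (hscale B (- hcounit D u) (hone B)), f v)) (hcomult D x))"
    proof -
      have "ev \<gamma> (map (\<lambda>(u,v). (hadd B (g u) (hscale B (- hcounit D u) (hone B)), f v)) (hcomult D x)) =
          ev (\<lambda>u v. \<gamma> (hadd B (g u) (hscale B (- hcounit D u) (hone B))) (f v)) (hcomult D x)" by simp
      also have "\<dots> = ev (\<lambda>u v. \<gamma> (g u) (f v) + - (hcounit D u * \<gamma> (hone B) (f v))) (hcomult D x)"
      proof (rule ev_cong)
        fix u v assume "(u,v) \<in> set (hcomult D x)"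
        then have u: "u \<in> hcarrier D" and v: "v \<in> hcarrier D" using D.comult_mem[OF x] by auto
        show "\<gamma> (hadd B (g u) (hscale B (- hcounit D u) (hone B))) (f v) = \<gamma> (g u) (f v) + - (hcounit D u * \<gamma> (hone B) (f v))"
          using g0 Cx[OF gC[OF u]] v unfolding bilinear_form_def by simp
      qed
      also have "\<dots> = ev (\<lambda>u v. \<gamma> (g u) (f v)) (hcomult D x) - \<gamma> (hone B) (f x)"
        using D.ev_counit_l[OF l1 x] by (simp add: ev_diff)
      finally show ?thesis by simp
    qed
    finally show "ev (\<lambda>a b. \<gamma> (p a) b) (hcomult A (f x)) = \<gamma> (hone B) (f x) +
        ev \<gamma> (map (\<lambda>(u,v). (hadd B (g u) (hscale B (- hcounit D u) (hone B)), f v)) (hcomult D x))" .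
  qed
  have hf: "hopf_hom D (sub_hopf A Sinv) f"
  proof -
    have lin: "linear_map D (sub_hopf A Sinv) f"
      unfolding linear_map_def using fS F.p_add F.p_scale by auto
    have com: "tensor_eq (sub_hopf A Sinv) (sub_hopf A Sinv) (hcomult (sub_hopf A Sinv) (f x))
      (map (\<lambda>(u,v). (f u, f v)) (hcomult D x))" if x: "x \<in> hcarrier D" for x
    proof -
      have sp: "set (hcomult (sub_hopf A Sinv) (f x)) \<subseteq> Sinv \<times> Sinv" "tensor_eq A A (hcomult A (f x)) (hcomult (sub_hopf A Sinv) (f x))"
        using sub_comult_spec[OF G2 fS[OF x]] by auto
      show ?thesis
      proof (rule teq_restrict[OF A.vs A.vs hopf_subalg_subrec[OF G2] hopf_subalg_subrec[OF G2]])
        show "set (hcomult (sub_hopf A Sinv) (f x)) \<subseteq> hcarrier (sub_hopf A Sinv) \<times> hcarrier (sub_hopf A Sinv)"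
          using sp(1) by simp
        show "set (map (\<lambda>(u,v). (f u, f v)) (hcomult D x)) \<subseteq> hcarrier (sub_hopf A Sinv) \<times> hcarrier (sub_hopf A Sinv)"
          using D.comult_mem[OF x] fS by auto
        show "tensor_eq A A (hcomult (sub_hopf A Sinv) (f x)) (map (\<lambda>(u,v). (f u, f v)) (hcomult D x))"
          using teq_trans[OF teq_sym[OF sp(2)] F.p_comult[OF x]] .
      qed
    qed
    show ?thesis unfolding hopf_hom_def using lin com F.p_mult F.p_counit by simp
  qed
  show ?thesis using hf pf by blast
qed

end

theorem lemma2p6:
  fixes A :: "('k::field,'a) hopf_alg" and B :: "('k,'b) hopf_alg"
    and p :: "'a \<Rightarrow> 'b" and C :: "'b set"
  assumes "cocomm_hopf A" and "cocomm_hopf B" and "hopf_hom A B p"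
    and "hopf_subalg B C"
  shows "p ` h_inverse A B p C \<subseteq> C \<and>
    hopf_subalg A (h_inverse A B p C) \<and>
    cocomm_hopf (sub_hopf A (h_inverse A B p C)) \<and>
    hopf_hom (sub_hopf A (h_inverse A B p C)) A id \<and>
    hopf_hom (sub_hopf A (h_inverse A B p C)) (sub_hopf B C) p \<and>
    hopf_hom (sub_hopf B C) B id \<and>
    (\<forall>(D::('k,'d) hopf_alg) f g.
       cocomm_hopf D \<and> hopf_hom D A f \<and> hopf_hom D (sub_hopf B C) g \<and>
       (\<forall>x\<in>hcarrier D. p (f x) = g x) \<longrightarrow>
       (\<exists>h. hopf_hom D (sub_hopf A (h_inverse A B p C)) h \<and>
            (\<forall>x\<in>hcarrier D. h x = f x \<and> p (h x) = g x) \<and>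
            (\<forall>h'. hopf_hom D (sub_hopf A (h_inverse A B p C)) h' \<and>
                  (\<forall>x\<in>hcarrier D. h' x = f x \<and> p (h' x) = g x) \<longrightarrow>
                  (\<forall>x\<in>hcarrier D. h' x = h x))))"
proof -
  have hA: "cocommL A" using assms(1) cocommL_iff by blast
  have hB: "cocommL B" using assms(2) cocommL_iff by blast
  interpret P: pbL A B p C
    by (rule pbL.intro[OF homL.intro[OF cocommL.axioms(1)[OF hA] cocommL.axioms(1)[OF hB]] hA hB])
       (simp_all add: homL_axioms_def pbL_axioms_def assms)
  have g3: "cocomm_hopf (sub_hopf A (h_inverse A B p C)) \<and> hopf_hom (sub_hopf A (h_inverse A B p C)) A id"
    by (rule P.A.sub_hopf_main[OF P.G2])
  have g6: "hopf_hom (sub_hopf B C) B id" using P.B.sub_hopf_main[OF assms(4)] by blast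
  show ?thesis using P.G1 P.G2 g3 P.G5 g6 P.G7 by blast
qed

end
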